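(* Let $\mathsf H$ be a horizontal connection on $\mathsf q_M$. Then for every $m\in M$, $\mathsf H(\mathsf d(m))$ lies in the image of $j_{\Omega(A)}\otimes_Aj_M:\Omega(A)\otimes_AM\to\mathsf T(A)\otimes_A\mathsf S_A(M)$; equivalently $(j_{\Omega(A)}\otimes_Aj_M)\circ(p_{\Omega(A)}\otimes_Ap_M)\circ\mathsf H\circ\mathsf d=\mathsf H\circ\mathsf d$ on $M$.
   Context: Fix a commutative ring $R$, a commutative $R$-algebra $A$ and an $A$-module $M$. "Algebra" means commutative $R$-algebra and "algebra map" means $R$-algebra homomorphism. $\Omega(A)$ is the $A$-module of Kähler differentials of $A$ over $R$, with universal derivation $\mathsf d:A\to\Omega(A)$. Tangent algebras: for an algebra $B$, $\mathsf T(B):=\mathrm{Sym}_B(\Omega(B))$, i.e. the $B$-algebra generated by symbols $\mathsf d(b)$ ($b\in B$) subject to $\mathsf d(b+b')=\mathsf d(b)+\mathsf d(b')$, $\mathsf d(bb')=b\,\mathsf d(b')+b'\,\mathsf d(b)$, $\mathsf d(r1)=0$ ($r\in R$). An algebra map out of $\mathsf T(B)$ is determined by its values on the generators $b$, $\mathsf d(b)$. Write $\mathsf T^2(B)=\mathsf T(\mathsf T(B))$ and denote the universal derivation $\mathsf T(B)\to\mathsf T^2(B)$ by $\mathsf d'$; so $\mathsf T^2(B)$ is generated over $B$ by $\mathsf d(b),\mathsf d'(b),\mathsf d'\mathsf d(b)$. For an algebra map $h:X\to Y$, $\mathsf T(h):\mathsf T(X)\to\mathsf T(Y)$ sends $x\mapsto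 h(x)$ and $\delta_X(x)\mapsto\delta_Y(h(x))$, where $\delta$ denotes the relevant universal derivation ($\mathsf d$ for $B\to\mathsf T(B)$, $\mathsf d'$ for $\mathsf T(B)\to\mathsf T^2(B)$). Algebra maps defined on generators $b\in B$: $\mathsf p_B:B\to\mathsf T(B)$ the inclusion; $0_B:\mathsf T(B)\to B$, $b\mapsto b$, $\mathsf d(b)\mapsto 0$; $\ell_B:\mathsf T^2(B)\to\mathsf T(B)$, $b\mapsto b$, $\mathsf d(b)\mapsto 0$, $\mathsf d'(b)\mapsto0$, $\mathsf d'\mathsf d(b)\mapsto\mathsf d(b)$; $\mathsf c_B:\mathsf T^2(B)\to\mathsf T^2(B)$, $b\mapsto b$, $\mathsf d(b)\mapsto\mathsf d'(b)$, $\mathsf d'(b)\mapsto\mathsf d(b)$, $\mathsf d'\mathsf d(b)\mapsto\mathsf d'\mathsf d(b)$. (These are, read in algebras, the structure maps of the Rosický tangent structure on affine schemes over $R$, i.e. on the opposite of the category of commutative $R$-algebras.) Differential bundle of $M$: $\mathsf S_A(M)$ is the symmetric $A$-algebra on $M$ (generated by $a\in A$, $m\in M$). Algebra maps: $\mathsf q_M:A\to\mathsf S_A(M)$ the inclusion; $\lambda_M:\mathsf T(\mathsf S_A(M))\to\mathsf S_A(M)$, $a\mapsto a$, $m\mapsto0$, $\mathsf d(a)\mapsto 0$, $\mathsf d(m)\mapsto m$. The maps $j_{\Omega(A)}:\Omega(A)\to\mathsf T(A)$, $j_M:M\to\mathsf S_A(M)$ are the inclusions of the degree-one summands and $p_{\Omega(A)}$,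 $p_M$ the projections onto them. A horizontal connection on $\mathsf q_M$ is an algebra map $\mathsf H:\mathsf T(\mathsf S_A(M))\to\mathsf T(A)\otimes_A\mathsf S_A(M)$ such that (H1) $\mathsf H(\mathsf T(\mathsf q_M)(w))=w\otimes1$ for all $w\in\mathsf T(A)$; (H2) $\mathsf H(v)=1\otimes v$ for all $v\in\mathsf S_A(M)$; (H3) $(\ell_A\otimes0_{\mathsf S_A(M)})\circ\theta\circ\mathsf T(\mathsf H)=\mathsf H\circ\ell_{\mathsf S_A(M)}$; (H4) $(0_{\mathsf T(A)}\otimes\lambda_M)\circ\theta\circ\mathsf T(\mathsf H)=\mathsf H\circ\mathsf T(\lambda_M)\circ\mathsf c_{\mathsf S_A(M)}$. Here $\mathsf T^2(A)\otimes_{\mathsf T(A)}\mathsf T(\mathsf S_A(M))$ is formed via $\mathsf T(\mathsf p_A):\mathsf T(A)\to\mathsf T^2(A)$ ($a\mapsto a$, $\mathsf d(a)\mapsto\mathsf d'(a)$) and $\mathsf T(\mathsf q_M)$; $\theta:\mathsf T(\mathsf T(A)\otimes_A\mathsf S_A(M))\to\mathsf T^2(A)\otimes_{\mathsf T(A)}\mathsf T(\mathsf S_A(M))$ is the canonical isomorphism, $w\otimes v\mapsto w\otimes v$, $\mathsf d(w\otimes v)\mapsto\mathsf d'(w)\otimes v+w\otimes\mathsf d(v)$; the maps $\ell_A\otimes0_{\mathsf S_A(M)}$ and $0_{\mathsf T(A)}\otimes\lambda_M$ into $\mathsf T(A)\otimes_A\mathsf S_A(M)$ are induced factorwise, where $0_{\mathsf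 T(A)}:\mathsf T^2(A)\to\mathsf T(A)$ sends $a\mapsto a$, $\mathsf d(a)\mapsto\mathsf d(a)$, $\mathsf d'(a)\mapsto0$, $\mathsf d'\mathsf d(a)\mapsto0$. *)

theory Defs
  imports "HOL-Algebra.Module"
begin

section \<open>Commutative R-algebras as HOL-Algebra rings with a structure map\<close>

record ('a, 'r) ralg = "'a ring" + rmap :: "'r \<Rightarrow> 'a"

definition is_alg :: "'r ring \<Rightarrow> ('a, 'r) ralg \<Rightarrow> bool" where
  "is_alg R A \<longleftrightarrow> cring A \<and> rmap A \<in> ring_hom R A"

definition alg_hom :: "'r ring \<Rightarrow> ('a, 'r) ralg \<Rightarrow> ('b, 'r) ralg \<Rightarrow> ('a \<Rightarrow> 'b) \<Rightarrow> bool" where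
  "alg_hom R A B f \<longleftrightarrow> f \<in> ring_hom A B \<and> (\<forall>r\<in>carrier R. f (rmap A r) = rmap B r)"

text \<open>The (unique) algebra map A -> B satisfying a property P (used with P prescribing the
  values on a generating family); extensional outside the carrier to make it unique.\<close>
definition the_map :: "'r ring \<Rightarrow> ('a, 'r) ralg \<Rightarrow> ('b, 'r) ralg \<Rightarrow> (('a \<Rightarrow> 'b) \<Rightarrow> bool) \<Rightarrow> 'a \<Rightarrow> 'b" where
  "the_map R A B P = (THE f. alg_hom R A B f \<and> f \<in> extensional (carrier A) \<and> P f)"

section \<open>Presented commutative R-algebras (generators and relations)\<close>

datatype ('r, 'x) pexpr = Var 'x | Const 'r | Add "('r, 'x) pexpr" "('r, 'x) pexpr"
  | Mul "('r, 'x) pexpr" "('r, 'x) pexpr" | Neg "('r, 'x) pexpr"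

fun pvars :: "('r, 'x) pexpr \<Rightarrow> 'x set" where
  "pvars (Var x) = {x}" | "pvars (Const r) = {}" | "pvars (Add a b) = pvars a \<union> pvars b"
| "pvars (Mul a b) = pvars a \<union> pvars b" | "pvars (Neg a) = pvars a"

fun pconsts :: "('r, 'x) pexpr \<Rightarrow> 'r set" where
  "pconsts (Var x) = {}" | "pconsts (Const r) = {r}" | "pconsts (Add a b) = pconsts a \<union> pconsts b"
| "pconsts (Mul a b) = pconsts a \<union> pconsts b" | "pconsts (Neg a) = pconsts a"

definition pwf :: "'r ring \<Rightarrow> 'x set \<Rightarrow> ('r, 'x) pexpr \<Rightarrow> bool" where
  "pwf R G e \<longleftrightarrow> pvars e \<subseteq> G \<and> pconsts e \<subseteq> carrier R"

inductive peq :: "'r ring \<Rightarrow> (('r, 'x) pexpr \<times> ('r, 'x) pexpr) set \<Rightarrow> ('r, 'x) pexpr \<Rightarrow> ('r, 'x) pexpr \<Rightarrow> bool"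
  for R Rel where
  rel: "(a, b) \<in> Rel \<Longrightarrow> peq R Rel a b"
| refl: "peq R Rel a a"
| sym: "peq R Rel a b \<Longrightarrow> peq R Rel b a"
| trans: "peq R Rel a b \<Longrightarrow> peq R Rel b c \<Longrightarrow> peq R Rel a c"
| cong_add: "peq R Rel a a' \<Longrightarrow> peq R Rel b b' \<Longrightarrow> peq R Rel (Add a b) (Add a' b')"
| cong_mul: "peq R Rel a a' \<Longrightarrow> peq R Rel b b' \<Longrightarrow> peq R Rel (Mul a b) (Mul a' b')"
| cong_neg: "peq R Rel a a' \<Longrightarrow> peq R Rel (Neg a) (Neg a')"
| add_assoc: "peq R Rel (Add (Add a b) c) (Add a (Add b c))"
| add_comm: "peq R Rel (Add a b) (Add b a)"
| add_zero: "peq R Rel (Add (Const \<zero>\<^bsub>R\<^esub>) a) a"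
| add_neg: "peq R Rel (Add (Neg a) a) (Const \<zero>\<^bsub>R\<^esub>)"
| mul_assoc: "peq R Rel (Mul (Mul a b) c) (Mul a (Mul b c))"
| mul_comm: "peq R Rel (Mul a b) (Mul b a)"
| mul_one: "peq R Rel (Mul (Const \<one>\<^bsub>R\<^esub>) a) a"
| distrib: "peq R Rel (Mul a (Add b c)) (Add (Mul a b) (Mul a c))"
| const_add: "r \<in> carrier R \<Longrightarrow> s \<in> carrier R \<Longrightarrow> peq R Rel (Add (Const r) (Const s)) (Const (r \<oplus>\<^bsub>R\<^esub> s))"
| const_mul: "r \<in> carrier R \<Longrightarrow> s \<in> carrier R \<Longrightarrow> peq R Rel (Mul (Const r) (Const s)) (Const (r \<otimes>\<^bsub>R\<^esub> s))"

definition pclass :: "'r ring \<Rightarrow> 'x set \<Rightarrow> (('r, 'x) pexpr \<times> ('r, 'x) pexpr) set \<Rightarrow> ('r, 'x) pexpr \<Rightarrow> ('r, 'x) pexpr set" where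
  "pclass R G Rel e = {e'. pwf R G e' \<and> peq R Rel e e'}"

definition prep :: "('r, 'x) pexpr set \<Rightarrow> ('r, 'x) pexpr" where
  "prep X = (SOME e. e \<in> X)"

definition pres :: "'r ring \<Rightarrow> 'x set \<Rightarrow> (('r, 'x) pexpr \<times> ('r, 'x) pexpr) set \<Rightarrow> (('r, 'x) pexpr set, 'r) ralg" where
  "pres R G Rel = \<lparr> carrier = {pclass R G Rel e | e. pwf R G e},
     mult = (\<lambda>X Y. pclass R G Rel (Mul (prep X) (prep Y))),
     one = pclass R G Rel (Const \<one>\<^bsub>R\<^esub>),
     zero = pclass R G Rel (Const \<zero>\<^bsub>R\<^esub>),
     add = (\<lambda>X Y. pclass R G Rel (Add (prep X) (prep Y))),
     rmap = (\<lambda>r. pclass R G Rel (Const r)) \<rparr>"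

definition gen :: "(('r, 'x) pexpr set, 'r) ralg \<Rightarrow> 'x \<Rightarrow> ('r, 'x) pexpr set" where
  "gen P x = (THE X. X \<in> carrier P \<and> Var x \<in> X)"

text \<open>Relations saying that a family of generators g indexed by carrier B is an R-algebra map.\<close>
definition hom_rel :: "'r ring \<Rightarrow> ('b, 'r) ralg \<Rightarrow> ('b \<Rightarrow> 'x) \<Rightarrow> (('r, 'x) pexpr \<times> ('r, 'x) pexpr) set" where
  "hom_rel R B g =
     {(Var (g (b \<oplus>\<^bsub>B\<^esub> b')), Add (Var (g b)) (Var (g b'))) | b b'. b \<in> carrier B \<and> b' \<in> carrier B}
   \<union> {(Var (g (b \<otimes>\<^bsub>B\<^esub> b')), Mul (Var (g b)) (Var (g b'))) | b b'. b \<in> carrier B \<and> b' \<in> carrier B}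
   \<union> {(Var (g (rmap B r)), Const r) | r. r \<in> carrier R}"

section \<open>Tangent algebras T(B) = Sym_B(Omega(B))\<close>

datatype 'b tgen = TP 'b | TD 'b

definition tan_rel :: "'r ring \<Rightarrow> ('b, 'r) ralg \<Rightarrow> (('r, 'b tgen) pexpr \<times> ('r, 'b tgen) pexpr) set" where
  "tan_rel R B = hom_rel R B TP
   \<union> {(Var (TD (b \<oplus>\<^bsub>B\<^esub> b')), Add (Var (TD b)) (Var (TD b'))) | b b'. b \<in> carrier B \<and> b' \<in> carrier B}
   \<union> {(Var (TD (b \<otimes>\<^bsub>B\<^esub> b')), Add (Mul (Var (TP b)) (Var (TD b'))) (Mul (Var (TP b')) (Var (TD b))))
        | b b'. b \<in> carrier B \<and> b' \<in> carrier B}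
   \<union> {(Var (TD (rmap B r)), Const \<zero>\<^bsub>R\<^esub>) | r. r \<in> carrier R}"

definition Tan :: "'r ring \<Rightarrow> ('b, 'r) ralg \<Rightarrow> (('r, 'b tgen) pexpr set, 'r) ralg" where
  "Tan R B = pres R (TP ` carrier B \<union> TD ` carrier B) (tan_rel R B)"

text \<open>p_B : B -> T(B) (the element b of T(B)) and d : B -> T(B).\<close>
definition tp :: "'r ring \<Rightarrow> ('b, 'r) ralg \<Rightarrow> 'b \<Rightarrow> ('r, 'b tgen) pexpr set" where
  "tp R B b = gen (Tan R B) (TP b)"

definition td :: "'r ring \<Rightarrow> ('b, 'r) ralg \<Rightarrow> 'b \<Rightarrow> ('r, 'b tgen) pexpr set" where
  "td R B b = gen (Tan R B) (TD b)"

definition tmap_on :: "'r ring \<Rightarrow> ('b, 'r) ralg \<Rightarrow> ('c, 'r) ralg \<Rightarrow> ('b \<Rightarrow> 'c) \<Rightarrow> ('b \<Rightarrow> 'c)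
    \<Rightarrow> ('r, 'b tgen) pexpr set \<Rightarrow> 'c" where
  "tmap_on R B C fp fd = the_map R (Tan R B) C
     (\<lambda>f. \<forall>b\<in>carrier B. f (tp R B b) = fp b \<and> f (td R B b) = fd b)"

definition Tmap :: "'r ring \<Rightarrow> ('b, 'r) ralg \<Rightarrow> ('c, 'r) ralg \<Rightarrow> ('b \<Rightarrow> 'c)
    \<Rightarrow> ('r, 'b tgen) pexpr set \<Rightarrow> ('r, 'c tgen) pexpr set" where
  "Tmap R B C h = tmap_on R B (Tan R C) (\<lambda>b. tp R C (h b)) (\<lambda>b. td R C (h b))"

definition t2map_on :: "'r ring \<Rightarrow> ('b, 'r) ralg \<Rightarrow> ('c, 'r) ralg
    \<Rightarrow> ('b \<Rightarrow> 'c) \<Rightarrow> ('b \<Rightarrow> 'c) \<Rightarrow> ('b \<Rightarrow> 'c) \<Rightarrow> ('b \<Rightarrow> 'c)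
    \<Rightarrow> ('r, ('r, 'b tgen) pexpr set tgen) pexpr set \<Rightarrow> 'c" where
  "t2map_on R B C f1 f2 f3 f4 = the_map R (Tan R (Tan R B)) C
     (\<lambda>f. \<forall>b\<in>carrier B.
        f (tp R (Tan R B) (tp R B b)) = f1 b \<and>
        f (tp R (Tan R B) (td R B b)) = f2 b \<and>
        f (td R (Tan R B) (tp R B b)) = f3 b \<and>
        f (td R (Tan R B) (td R B b)) = f4 b)"

definition zmap :: "'r ring \<Rightarrow> ('b, 'r) ralg \<Rightarrow> ('r, 'b tgen) pexpr set \<Rightarrow> 'b" where
  "zmap R B = tmap_on R B B (\<lambda>b. b) (\<lambda>b. \<zero>\<^bsub>B\<^esub>)"

definition lift :: "'r ring \<Rightarrow> ('b, 'r) ralg \<Rightarrow> ('r, ('r, 'b tgen) pexpr set tgen) pexpr set \<Rightarrow> ('r, 'b tgen) pexpr set" where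
  "lift R B = t2map_on R B (Tan R B) (tp R B) (\<lambda>b. \<zero>\<^bsub>Tan R B\<^esub>) (\<lambda>b. \<zero>\<^bsub>Tan R B\<^esub>) (td R B)"

definition canflip :: "'r ring \<Rightarrow> ('b, 'r) ralg \<Rightarrow> ('r, ('r, 'b tgen) pexpr set tgen) pexpr set
    \<Rightarrow> ('r, ('r, 'b tgen) pexpr set tgen) pexpr set" where
  "canflip R B = t2map_on R B (Tan R (Tan R B))
     (\<lambda>b. tp R (Tan R B) (tp R B b)) (\<lambda>b. td R (Tan R B) (tp R B b))
     (\<lambda>b. tp R (Tan R B) (td R B b)) (\<lambda>b. td R (Tan R B) (td R B b))"

definition zmapT :: "'r ring \<Rightarrow> ('b, 'r) ralg \<Rightarrow> ('r, ('r, 'b tgen) pexpr set tgen) pexpr set \<Rightarrow> ('r, 'b tgen) pexpr set" where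
  "zmapT R B = t2map_on R B (Tan R B) (tp R B) (td R B) (\<lambda>b. \<zero>\<^bsub>Tan R B\<^esub>) (\<lambda>b. \<zero>\<^bsub>Tan R B\<^esub>)"

section \<open>Symmetric algebra S_A(M)\<close>

datatype ('a, 'm) sgen = SA 'a | SM 'm

definition sym_rel :: "'r ring \<Rightarrow> ('a, 'r) ralg \<Rightarrow> ('a, 'm) module \<Rightarrow> (('r, ('a, 'm) sgen) pexpr \<times> ('r, ('a, 'm) sgen) pexpr) set" where
  "sym_rel R A M = hom_rel R A SA
   \<union> {(Var (SM (m \<oplus>\<^bsub>M\<^esub> m')), Add (Var (SM m)) (Var (SM m'))) | m m'. m \<in> carrier M \<and> m' \<in> carrier M}
   \<union> {(Var (SM (a \<odot>\<^bsub>M\<^esub> m)), Mul (Var (SA a)) (Var (SM m))) | a m. a \<in> carrier A \<and> m \<in> carrier M}"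

definition Sym :: "'r ring \<Rightarrow> ('a, 'r) ralg \<Rightarrow> ('a, 'm) module \<Rightarrow> (('r, ('a, 'm) sgen) pexpr set, 'r) ralg" where
  "Sym R A M = pres R (SA ` carrier A \<union> SM ` carrier M) (sym_rel R A M)"

text \<open>q_M : A -> S_A(M) and j_M : M -> S_A(M).\<close>
definition sq :: "'r ring \<Rightarrow> ('a, 'r) ralg \<Rightarrow> ('a, 'm) module \<Rightarrow> 'a \<Rightarrow> ('r, ('a, 'm) sgen) pexpr set" where
  "sq R A M a = gen (Sym R A M) (SA a)"

definition sj :: "'r ring \<Rightarrow> ('a, 'r) ralg \<Rightarrow> ('a, 'm) module \<Rightarrow> 'm \<Rightarrow> ('r, ('a, 'm) sgen) pexpr set" where
  "sj R A M m = gen (Sym R A M) (SM m)"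

definition lam :: "'r ring \<Rightarrow> ('a, 'r) ralg \<Rightarrow> ('a, 'm) module
    \<Rightarrow> ('r, ('r, ('a, 'm) sgen) pexpr set tgen) pexpr set \<Rightarrow> ('r, ('a, 'm) sgen) pexpr set" where
  "lam R A M = the_map R (Tan R (Sym R A M)) (Sym R A M)
     (\<lambda>f. (\<forall>a\<in>carrier A. f (tp R (Sym R A M) (sq R A M a)) = sq R A M a
                       \<and> f (td R (Sym R A M) (sq R A M a)) = \<zero>\<^bsub>Sym R A M\<^esub>)
        \<and> (\<forall>m\<in>carrier M. f (tp R (Sym R A M) (sj R A M m)) = \<zero>\<^bsub>Sym R A M\<^esub>
                       \<and> f (td R (Sym R A M) (sj R A M m)) = sj R A M m))"

section \<open>Tensor products of commutative algebras X (x)_C Y along f : C -> X, g : C -> Y\<close>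

datatype ('x, 'y) tsgen = TL 'x | TR 'y

definition tens :: "'r ring \<Rightarrow> ('x, 'r) ralg \<Rightarrow> ('y, 'r) ralg \<Rightarrow> 'c set \<Rightarrow> ('c \<Rightarrow> 'x) \<Rightarrow> ('c \<Rightarrow> 'y)
    \<Rightarrow> (('r, ('x, 'y) tsgen) pexpr set, 'r) ralg" where
  "tens R X Y C f g = pres R (TL ` carrier X \<union> TR ` carrier Y)
     (hom_rel R X TL \<union> hom_rel R Y TR \<union> {(Var (TL (f c)), Var (TR (g c))) | c. c \<in> C})"

definition etens :: "(('r, ('x, 'y) tsgen) pexpr set, 'r) ralg \<Rightarrow> 'x \<Rightarrow> 'y \<Rightarrow> ('r, ('x, 'y) tsgen) pexpr set" where
  "etens P x y = gen P (TL x) \<otimes>\<^bsub>P\<^esub> gen P (TR y)"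

definition tensmap :: "'r ring \<Rightarrow> (('r, ('x, 'y) tsgen) pexpr set, 'r) ralg \<Rightarrow> (('r, ('x', 'y') tsgen) pexpr set, 'r) ralg
    \<Rightarrow> ('x, 'r) ralg \<Rightarrow> ('y, 'r) ralg \<Rightarrow> ('x \<Rightarrow> 'x') \<Rightarrow> ('y \<Rightarrow> 'y')
    \<Rightarrow> ('r, ('x, 'y) tsgen) pexpr set \<Rightarrow> ('r, ('x', 'y') tsgen) pexpr set" where
  "tensmap R P P' X Y \<phi> \<psi> = the_map R P P'
     (\<lambda>F. (\<forall>x\<in>carrier X. F (gen P (TL x)) = gen P' (TL (\<phi> x)))
        \<and> (\<forall>y\<in>carrier Y. F (gen P (TR y)) = gen P' (TR (\<psi> y))))"

definition TE :: "'r ring \<Rightarrow> ('a, 'r) ralg \<Rightarrow> ('a, 'm) module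
    \<Rightarrow> (('r, (('r, 'a tgen) pexpr set, ('r, ('a, 'm) sgen) pexpr set) tsgen) pexpr set, 'r) ralg" where
  "TE R A M = tens R (Tan R A) (Sym R A M) (carrier A) (tp R A) (sq R A M)"

definition TF :: "'r ring \<Rightarrow> ('a, 'r) ralg \<Rightarrow> ('a, 'm) module
    \<Rightarrow> (('r, (('r, ('r, 'a tgen) pexpr set tgen) pexpr set,
              ('r, ('r, ('a, 'm) sgen) pexpr set tgen) pexpr set) tsgen) pexpr set, 'r) ralg" where
  "TF R A M = tens R (Tan R (Tan R A)) (Tan R (Sym R A M)) (carrier (Tan R A))
     (Tmap R A (Tan R A) (tp R A)) (Tmap R A (Sym R A M) (sq R A M))"

definition theta :: "'r ring \<Rightarrow> ('a, 'r) ralg \<Rightarrow> ('a, 'm) module \<Rightarrow> _" where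
  "theta R A M = the_map R (Tan R (TE R A M)) (TF R A M)
     (\<lambda>f. \<forall>w\<in>carrier (Tan R A). \<forall>v\<in>carrier (Sym R A M).
        f (tp R (TE R A M) (etens (TE R A M) w v))
          = etens (TF R A M) (tp R (Tan R A) w) (tp R (Sym R A M) v)
      \<and> f (td R (TE R A M) (etens (TE R A M) w v))
          = etens (TF R A M) (td R (Tan R A) w) (tp R (Sym R A M) v)
            \<oplus>\<^bsub>TF R A M\<^esub> etens (TF R A M) (tp R (Tan R A) w) (td R (Sym R A M) v))"

definition horizontal_connection :: "'r ring \<Rightarrow> ('a, 'r) ralg \<Rightarrow> ('a, 'm) module \<Rightarrow>
    (('r, ('r, ('a, 'm) sgen) pexpr set tgen) pexpr set
       \<Rightarrow> ('r, (('r, 'a tgen) pexpr set, ('r, ('a, 'm) sgen) pexpr set) tsgen) pexpr set) \<Rightarrow> bool" where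
  "horizontal_connection R A M H \<longleftrightarrow>
     alg_hom R (Tan R (Sym R A M)) (TE R A M) H
   \<and> (\<forall>w\<in>carrier (Tan R A). H (Tmap R A (Sym R A M) (sq R A M) w) = etens (TE R A M) w \<one>\<^bsub>Sym R A M\<^esub>)
   \<and> (\<forall>v\<in>carrier (Sym R A M). H (tp R (Sym R A M) v) = etens (TE R A M) \<one>\<^bsub>Tan R A\<^esub> v)
   \<and> (\<forall>x\<in>carrier (Tan R (Tan R (Sym R A M))).
        tensmap R (TF R A M) (TE R A M) (Tan R (Tan R A)) (Tan R (Sym R A M)) (lift R A) (zmap R (Sym R A M))
          (theta R A M (Tmap R (Tan R (Sym R A M)) (TE R A M) H x))
        = H (lift R (Sym R A M) x))
   \<and> (\<forall>x\<in>carrier (Tan R (Tan R (Sym R A M))).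
        tensmap R (TF R A M) (TE R A M) (Tan R (Tan R A)) (Tan R (Sym R A M)) (zmapT R A) (lam R A M)
          (theta R A M (Tmap R (Tan R (Sym R A M)) (TE R A M) H x))
        = H (Tmap R (Tan R (Sym R A M)) (Sym R A M) (lam R A M) (canflip R (Sym R A M) x)))"

inductive_set add_span :: "('b, 'z) ring_scheme \<Rightarrow> 'b set \<Rightarrow> 'b set" for P S where
  zero: "\<zero>\<^bsub>P\<^esub> \<in> add_span P S"
| base: "s \<in> S \<Longrightarrow> s \<in> add_span P S"
| add: "x \<in> add_span P S \<Longrightarrow> y \<in> add_span P S \<Longrightarrow> x \<oplus>\<^bsub>P\<^esub> y \<in> add_span P S"
| neg: "x \<in> add_span P S \<Longrightarrow> \<ominus>\<^bsub>P\<^esub> x \<in> add_span P S"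

text \<open>Image of j_Omega(A) (x)_A j_M : Omega(A) (x)_A M -> T(A) (x)_A S_A(M): since Omega(A) is
  spanned over A by the d(a) and a d(a') (x) m = d(a') (x) (a m), this image is the additive
  subgroup generated by the elements d(a) (x) m.\<close>
definition jj_image :: "'r ring \<Rightarrow> ('a, 'r) ralg \<Rightarrow> ('a, 'm) module \<Rightarrow> _ set" where
  "jj_image R A M = add_span (TE R A M)
     {etens (TE R A M) (td R A a) (sj R A M m) | a m. a \<in> carrier A \<and> m \<in> carrier M}"

end

theory Submission
  imports Defs
begin

fun peval :: "'r ring \<Rightarrow> ('c,'r) ralg \<Rightarrow> ('x \<Rightarrow> 'c) \<Rightarrow> ('r,'x) pexpr \<Rightarrow> 'c" where
  "peval R C \<phi> (Var x) = \<phi> x"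
| "peval R C \<phi> (Const r) = (if r \<in> carrier R then rmap C r else \<zero>\<^bsub>C\<^esub>)"
| "peval R C \<phi> (Add a b) = peval R C \<phi> a \<oplus>\<^bsub>C\<^esub> peval R C \<phi> b"
| "peval R C \<phi> (Mul a b) = peval R C \<phi> a \<otimes>\<^bsub>C\<^esub> peval R C \<phi> b"
| "peval R C \<phi> (Neg a) = \<ominus>\<^bsub>C\<^esub> peval R C \<phi> a"

fun pdeval :: "'r ring \<Rightarrow> ('c,'r) ralg \<Rightarrow> ('x \<Rightarrow> 'c) \<Rightarrow> ('x \<Rightarrow> 'c) \<Rightarrow> ('r,'x) pexpr \<Rightarrow> 'c" where
  "pdeval R C \<phi> \<psi> (Var x) = \<psi> x"
| "pdeval R C \<phi> \<psi> (Const r) = \<zero>\<^bsub>C\<^esub>"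
| "pdeval R C \<phi> \<psi> (Add a b) = pdeval R C \<phi> \<psi> a \<oplus>\<^bsub>C\<^esub> pdeval R C \<phi> \<psi> b"
| "pdeval R C \<phi> \<psi> (Mul a b) = peval R C \<phi> a \<otimes>\<^bsub>C\<^esub> pdeval R C \<phi> \<psi> b \<oplus>\<^bsub>C\<^esub> peval R C \<phi> b \<otimes>\<^bsub>C\<^esub> pdeval R C \<phi> \<psi> a"
| "pdeval R C \<phi> \<psi> (Neg a) = \<ominus>\<^bsub>C\<^esub> pdeval R C \<phi> \<psi> a"

lemma is_algD:
  assumes "is_alg R C"
  shows "cring C" "rmap C \<in> ring_hom R C"
  using assms unfolding is_alg_def by auto

lemma peval_closed:
  assumes "is_alg R C" "\<And>x. \<phi> x \<in> carrier C"
  shows "peval R C \<phi> e \<in> carrier C"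
proof -
  interpret C: cring C using is_algD[OF assms(1)] by simp
  show ?thesis
    by (induction e) (auto simp: assms(2) ring_hom_closed[OF is_algD(2)[OF assms(1)]])
qed

lemma pdeval_closed:
  assumes "is_alg R C" "\<And>x. \<phi> x \<in> carrier C" "\<And>x. \<psi> x \<in> carrier C"
  shows "pdeval R C \<phi> \<psi> e \<in> carrier C"
proof -
  interpret C: cring C using is_algD[OF assms(1)] by simp
  show ?thesis
    by (induction e) (auto simp: assms peval_closed[OF assms(1,2)])
qed

lemma peq_peval:
  assumes "peq R Rel a b" "cring R" "is_alg R C" "\<And>x. \<phi> x \<in> carrier C"
    and rel: "\<And>p q. (p, q) \<in> Rel \<Longrightarrow> peval R C \<phi> p = peval R C \<phi> q"
  shows "peval R C \<phi> a = peval R C \<phi> b"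
  using assms(1)
proof (induction rule: peq.induct)
  interpret R: cring R by fact
  interpret C: cring C using is_algD[OF assms(3)] by simp
  interpret h: ring_hom_cring R C "rmap C" using is_algD[OF assms(3)]
    by (simp add: ring_hom_cring_def ring_hom_cring_axioms_def R.is_cring C.is_cring)
  have cl[simp]: "\<And>e. peval R C \<phi> e \<in> carrier C" by (rule peval_closed[OF assms(3,4)])
  {
    case (rel a b) then show ?case by (rule assms(5))
  next case (refl a) then show ?case by simp
  next case (sym a b) then show ?case by simp
  next case (trans a b c) then show ?case by simp
  next case (cong_add a a' b b') then show ?case by simp
  next case (cong_mul a a' b b') then show ?case by simp
  next case (cong_neg a a') then show ?case by simp
  next case (add_assoc a b c) then show ?case by (simp add: C.a_ac)
  next case (add_comm a b) then show ?case by (simp add: C.a_ac)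
  next case (add_zero a) then show ?case by simp
  next case (add_neg a) then show ?case by (simp add: C.l_neg)
  next case (mul_assoc a b c) then show ?case by (simp add: C.m_ac)
  next case (mul_comm a b) then show ?case by (simp add: C.m_ac)
  next case (mul_one a) then show ?case by simp
  next case (distrib a b c) then show ?case by (simp add: C.r_distr)
  next case (const_add r s) then show ?case by simp
  next case (const_mul r s) then show ?case by simp
  }
qed

lemma pwf_simps[simp]:
  "pwf R G (Var x) \<longleftrightarrow> x \<in> G"
  "pwf R G (Const r) \<longleftrightarrow> r \<in> carrier R"
  "pwf R G (Add a b) \<longleftrightarrow> pwf R G a \<and> pwf R G b"
  "pwf R G (Mul a b) \<longleftrightarrow> pwf R G a \<and> pwf R G b"
  "pwf R G (Neg a) \<longleftrightarrow> pwf R G a"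
  by (auto simp: pwf_def)

lemma pclass_refl: "pwf R G e \<Longrightarrow> e \<in> pclass R G Rel e"
  by (simp add: pclass_def peq.refl)

lemma pclass_eq_iff:
  assumes "pwf R G a" "pwf R G b"
  shows "pclass R G Rel a = pclass R G Rel b \<longleftrightarrow> peq R Rel a b"
proof
  assume "pclass R G Rel a = pclass R G Rel b"
  then have "b \<in> pclass R G Rel a" using pclass_refl[OF assms(2)] by simp
  then show "peq R Rel a b" by (simp add: pclass_def)
next
  assume ab: "peq R Rel a b"
  show "pclass R G Rel a = pclass R G Rel b"
    unfolding pclass_def using ab by (auto intro: peq.trans peq.sym)
qed

lemma prep_pclass:
  assumes "pwf R G e"
  shows "pwf R G (prep (pclass R G Rel e))" "peq R Rel e (prep (pclass R G Rel e))"
proof -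
  have "prep (pclass R G Rel e) \<in> pclass R G Rel e"
    unfolding prep_def by (rule someI[of _ e]) (rule pclass_refl[OF assms])
  then show "pwf R G (prep (pclass R G Rel e))" "peq R Rel e (prep (pclass R G Rel e))"
    by (auto simp: pclass_def)
qed

lemma pclass_prep:
  assumes "pwf R G e"
  shows "pclass R G Rel (prep (pclass R G Rel e)) = pclass R G Rel e"
  using prep_pclass[OF assms] pclass_eq_iff assms peq.sym by metis

lemma pres_carrier: "carrier (pres R G Rel) = {pclass R G Rel e | e. pwf R G e}"
  by (simp add: pres_def)

lemma pres_carrierE:
  assumes "X \<in> carrier (pres R G Rel)"
  obtains e where "pwf R G e" "X = pclass R G Rel e"
  using assms by (auto simp: pres_carrier)

lemma pclass_in_carrier: "pwf R G e \<Longrightarrow> pclass R G Rel e \<in> carrier (pres R G Rel)"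
  by (auto simp: pres_carrier)

lemma pres_add:
  assumes "pwf R G a" "pwf R G b"
  shows "pclass R G Rel a \<oplus>\<^bsub>pres R G Rel\<^esub> pclass R G Rel b = pclass R G Rel (Add a b)"
proof -
  have "pclass R G Rel (Add (prep (pclass R G Rel a)) (prep (pclass R G Rel b))) = pclass R G Rel (Add a b)"
    using prep_pclass[OF assms(1), of Rel] prep_pclass[OF assms(2), of Rel] assms
    by (subst pclass_eq_iff) (auto intro: peq.cong_add peq.sym)
  then show ?thesis by (simp add: pres_def)
qed

lemma pres_mult:
  assumes "pwf R G a" "pwf R G b"
  shows "pclass R G Rel a \<otimes>\<^bsub>pres R G Rel\<^esub> pclass R G Rel b = pclass R G Rel (Mul a b)"
proof -
  have "pclass R G Rel (Mul (prep (pclass R G Rel a)) (prep (pclass R G Rel b))) = pclass R G Rel (Mul a b)"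
    using prep_pclass[OF assms(1), of Rel] prep_pclass[OF assms(2), of Rel] assms
    by (subst pclass_eq_iff) (auto intro: peq.cong_mul peq.sym)
  then show ?thesis by (simp add: pres_def)
qed

lemma pres_zero: "\<zero>\<^bsub>pres R G Rel\<^esub> = pclass R G Rel (Const \<zero>\<^bsub>R\<^esub>)"
  and pres_one: "\<one>\<^bsub>pres R G Rel\<^esub> = pclass R G Rel (Const \<one>\<^bsub>R\<^esub>)"
  and pres_rmap: "rmap (pres R G Rel) r = pclass R G Rel (Const r)"
  by (simp_all add: pres_def)

lemma pclass_peq:
  "peq R Rel a b \<Longrightarrow> pwf R G a \<Longrightarrow> pwf R G b \<Longrightarrow> pclass R G Rel a = pclass R G Rel b"
  by (simp add: pclass_eq_iff)

lemma pres_cring: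
  assumes R: "cring R"
  shows "cring (pres R G Rel)"
proof -
  interpret R: cring R by fact
  let ?P = "pres R G Rel"
  let ?c = "pclass R G Rel"
  note ops = pres_add pres_mult pres_zero pres_one
  have z: "pwf R G (Const \<zero>\<^bsub>R\<^esub>)" "pwf R G (Const \<one>\<^bsub>R\<^esub>)" by simp_all
  show ?thesis
  proof (rule cringI)
    show "abelian_group ?P"
    proof (rule abelian_groupI)
      fix x y assume "x \<in> carrier ?P" "y \<in> carrier ?P"
      then show "x \<oplus>\<^bsub>?P\<^esub> y \<in> carrier ?P"
        by (auto elim!: pres_carrierE simp: pres_add intro!: pclass_in_carrier)
    next
      show "\<zero>\<^bsub>?P\<^esub> \<in> carrier ?P" by (simp add: pres_zero pclass_in_carrier)
    next
      fix x y z assume "x \<in> carrier ?P" "y \<in> carrier ?P" "z \<in> carrier ?P"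
      then show "x \<oplus>\<^bsub>?P\<^esub> y \<oplus>\<^bsub>?P\<^esub> z = x \<oplus>\<^bsub>?P\<^esub> (y \<oplus>\<^bsub>?P\<^esub> z)"
        by (elim pres_carrierE) (simp add: pres_add pclass_eq_iff peq.add_assoc)
    next
      fix x y assume "x \<in> carrier ?P" "y \<in> carrier ?P"
      then show "x \<oplus>\<^bsub>?P\<^esub> y = y \<oplus>\<^bsub>?P\<^esub> x"
        by (elim pres_carrierE) (simp add: pres_add pclass_eq_iff peq.add_comm)
    next
      fix x assume "x \<in> carrier ?P"
      then show "\<zero>\<^bsub>?P\<^esub> \<oplus>\<^bsub>?P\<^esub> x = x"
        by (elim pres_carrierE) (simp add: pres_add pres_zero pclass_eq_iff peq.add_zero)
    next
      fix x assume "x \<in> carrier ?P"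
      then obtain e where e: "pwf R G e" "x = ?c e" by (rule pres_carrierE)
      show "\<exists>y\<in>carrier ?P. y \<oplus>\<^bsub>?P\<^esub> x = \<zero>\<^bsub>?P\<^esub>"
        by (rule bexI[of _ "?c (Neg e)"])
           (use e in \<open>auto simp: pres_add pres_zero pclass_eq_iff intro: peq.add_neg pclass_in_carrier\<close>)
    qed
  next
    show "comm_monoid ?P"
    proof (rule comm_monoidI)
      fix x y assume "x \<in> carrier ?P" "y \<in> carrier ?P"
      then show "x \<otimes>\<^bsub>?P\<^esub> y \<in> carrier ?P"
        by (auto elim!: pres_carrierE simp: pres_mult intro!: pclass_in_carrier)
    next
      show "\<one>\<^bsub>?P\<^esub> \<in> carrier ?P" by (simp add: pres_one pclass_in_carrier)
    next
      fix x y z assume "x \<in> carrier ?P" "y \<in> carrier ?P" "z \<in> carrier ?P"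
      then show "x \<otimes>\<^bsub>?P\<^esub> y \<otimes>\<^bsub>?P\<^esub> z = x \<otimes>\<^bsub>?P\<^esub> (y \<otimes>\<^bsub>?P\<^esub> z)"
        by (elim pres_carrierE) (simp add: pres_mult pclass_eq_iff peq.mul_assoc)
    next
      fix x assume "x \<in> carrier ?P"
      then show "\<one>\<^bsub>?P\<^esub> \<otimes>\<^bsub>?P\<^esub> x = x"
        by (elim pres_carrierE) (simp add: pres_mult pres_one pclass_eq_iff peq.mul_one)
    next
      fix x y assume "x \<in> carrier ?P" "y \<in> carrier ?P"
      then show "x \<otimes>\<^bsub>?P\<^esub> y = y \<otimes>\<^bsub>?P\<^esub> x"
        by (elim pres_carrierE) (simp add: pres_mult pclass_eq_iff peq.mul_comm)
    qed
  next
    fix x y z assume "x \<in> carrier ?P" "y \<in> carrier ?P" "z \<in> carrier ?P"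
    then show "(x \<oplus>\<^bsub>?P\<^esub> y) \<otimes>\<^bsub>?P\<^esub> z = x \<otimes>\<^bsub>?P\<^esub> z \<oplus>\<^bsub>?P\<^esub> y \<otimes>\<^bsub>?P\<^esub> z"
      by (elim pres_carrierE) (simp add: pres_mult pres_add pclass_eq_iff
          peq.trans[OF peq.mul_comm peq.trans[OF peq.distrib peq.cong_add[OF peq.mul_comm peq.mul_comm]]])
  qed
qed

lemma pres_is_alg:
  assumes R: "cring R"
  shows "is_alg R (pres R G Rel)"
proof -
  interpret R: cring R by fact
  have "rmap (pres R G Rel) \<in> ring_hom R (pres R G Rel)"
    by (rule ring_hom_memI)
       (auto simp: pres_rmap pres_add pres_mult pres_one pclass_in_carrier pclass_eq_iff
         intro: peq.sym[OF peq.const_add] peq.sym[OF peq.const_mul])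
  then show ?thesis using pres_cring[OF R] by (simp add: is_alg_def)
qed

lemma pres_neg:
  assumes R: "cring R" and "pwf R G a"
  shows "\<ominus>\<^bsub>pres R G Rel\<^esub> pclass R G Rel a = pclass R G Rel (Neg a)"
proof -
  interpret P: cring "pres R G Rel" by (rule pres_cring[OF R])
  interpret R: cring R by fact
  show ?thesis
    by (rule P.minus_equality)
       (use assms in \<open>auto simp: pres_add pres_zero pclass_eq_iff intro: peq.add_neg pclass_in_carrier\<close>)
qed

lemma gen_eq:
  assumes "x \<in> G"
  shows "gen (pres R G Rel) x = pclass R G Rel (Var x)"
  unfolding gen_def
proof (rule the_equality)
  show "pclass R G Rel (Var x) \<in> carrier (pres R G Rel) \<and> Var x \<in> pclass R G Rel (Var x)"
    using assms by (auto intro: pclass_in_carrier pclass_refl)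
next
  fix X assume "X \<in> carrier (pres R G Rel) \<and> Var x \<in> X"
  then obtain e where e: "pwf R G e" "X = pclass R G Rel e" "Var x \<in> pclass R G Rel e"
    by (auto elim: pres_carrierE)
  then have "peq R Rel e (Var x)" by (simp add: pclass_def)
  then show "X = pclass R G Rel (Var x)" using e assms by (simp add: pclass_eq_iff)
qed

lemma gen_in_carrier: "x \<in> G \<Longrightarrow> gen (pres R G Rel) x \<in> carrier (pres R G Rel)"
  by (simp add: gen_eq pclass_in_carrier)

lemma pres_rel:
  assumes "(a, b) \<in> Rel" "pwf R G a" "pwf R G b"
  shows "pclass R G Rel a = pclass R G Rel b"
  using assms by (simp add: pclass_eq_iff peq.rel)

lemma pclass_peval:
  assumes R: "cring R" and "pwf R G e"
  shows "peval R (pres R G Rel) (\<lambda>x. if x \<in> G then gen (pres R G Rel) x else \<zero>\<^bsub>pres R G Rel\<^esub>) e = pclass R G Rel e"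
  using assms(2)
  by (induction e) (auto simp: gen_eq pres_rmap pres_add pres_mult pres_neg[OF R])

lemma pres_induct[consumes 2, case_names gen rmap add mult neg]:
  assumes R: "cring R" and X: "X \<in> carrier (pres R G Rel)"
    and gen: "\<And>x. x \<in> G \<Longrightarrow> Q (gen (pres R G Rel) x)"
    and rm: "\<And>r. r \<in> carrier R \<Longrightarrow> Q (rmap (pres R G Rel) r)"
    and add: "\<And>X Y. X \<in> carrier (pres R G Rel) \<Longrightarrow> Y \<in> carrier (pres R G Rel) \<Longrightarrow> Q X \<Longrightarrow> Q Y
        \<Longrightarrow> Q (X \<oplus>\<^bsub>pres R G Rel\<^esub> Y)"
    and mult: "\<And>X Y. X \<in> carrier (pres R G Rel) \<Longrightarrow> Y \<in> carrier (pres R G Rel) \<Longrightarrow> Q X \<Longrightarrow> Q Y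
        \<Longrightarrow> Q (X \<otimes>\<^bsub>pres R G Rel\<^esub> Y)"
    and neg: "\<And>X. X \<in> carrier (pres R G Rel) \<Longrightarrow> Q X \<Longrightarrow> Q (\<ominus>\<^bsub>pres R G Rel\<^esub> X)"
  shows "Q X"
proof -
  obtain e where e: "pwf R G e" "X = pclass R G Rel e" using X by (rule pres_carrierE)
  have "Q (pclass R G Rel e)" using e(1)
  proof (induction e)
    case (Var x) then show ?case using gen[of x] by (simp add: gen_eq)
  next
    case (Const r) then show ?case using rm[of r] by (simp add: pres_rmap)
  next
    case (Add a b) then show ?case using add[of "pclass R G Rel a" "pclass R G Rel b"]
      by (simp add: pres_add pclass_in_carrier)
  next
    case (Mul a b) then show ?case using mult[of "pclass R G Rel a" "pclass R G Rel b"]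
      by (simp add: pres_mult pclass_in_carrier)
  next
    case (Neg a) then show ?case using neg[of "pclass R G Rel a"]
      by (simp add: pres_neg[OF R] pclass_in_carrier)
  qed
  then show ?thesis using e by simp
qed

lemma alg_homD:
  assumes "alg_hom R A B f"
  shows "f \<in> ring_hom A B" "\<And>r. r \<in> carrier R \<Longrightarrow> f (rmap A r) = rmap B r"
  using assms by (auto simp: alg_hom_def)

lemma alg_hom_closed: "alg_hom R A B f \<Longrightarrow> x \<in> carrier A \<Longrightarrow> f x \<in> carrier B"
  by (auto simp: alg_hom_def ring_hom_closed)

lemma alg_hom_add: "alg_hom R A B f \<Longrightarrow> x \<in> carrier A \<Longrightarrow> y \<in> carrier A \<Longrightarrow> f (x \<oplus>\<^bsub>A\<^esub> y) = f x \<oplus>\<^bsub>B\<^esub> f y"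
  by (auto simp: alg_hom_def ring_hom_add)

lemma alg_hom_mult: "alg_hom R A B f \<Longrightarrow> x \<in> carrier A \<Longrightarrow> y \<in> carrier A \<Longrightarrow> f (x \<otimes>\<^bsub>A\<^esub> y) = f x \<otimes>\<^bsub>B\<^esub> f y"
  by (auto simp: alg_hom_def ring_hom_mult)

lemma alg_hom_one: "alg_hom R A B f \<Longrightarrow> f \<one>\<^bsub>A\<^esub> = \<one>\<^bsub>B\<^esub>"
  by (auto simp: alg_hom_def ring_hom_one)

lemma alg_hom_rmap: "alg_hom R A B f \<Longrightarrow> r \<in> carrier R \<Longrightarrow> f (rmap A r) = rmap B r"
  by (auto simp: alg_hom_def)

lemma alg_hom_cring:
  assumes "is_alg R A" "is_alg R B" "alg_hom R A B f"
  shows "ring_hom_cring A B f"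
  using assms by (simp add: ring_hom_cring_def ring_hom_cring_axioms_def is_alg_def alg_hom_def)

lemma alg_hom_zero: "is_alg R A \<Longrightarrow> is_alg R B \<Longrightarrow> alg_hom R A B f \<Longrightarrow> f \<zero>\<^bsub>A\<^esub> = \<zero>\<^bsub>B\<^esub>"
  using ring_hom_cring.hom_zero[OF alg_hom_cring] .

lemma alg_hom_neg: "is_alg R A \<Longrightarrow> is_alg R B \<Longrightarrow> alg_hom R A B f \<Longrightarrow> x \<in> carrier A \<Longrightarrow> f (\<ominus>\<^bsub>A\<^esub> x) = \<ominus>\<^bsub>B\<^esub> f x"
  using ring_hom_cring.hom_a_inv[OF alg_hom_cring] .

lemma alg_hom_comp:
  assumes "alg_hom R A B f" "alg_hom R B C g"
  shows "alg_hom R A C (g \<circ> f)"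
  using assms by (auto simp: alg_hom_def ring_hom_trans ring_hom_closed intro: ring_hom_trans)

lemma alg_hom_comp':
  assumes "alg_hom R A B f" "alg_hom R B C g"
  shows "alg_hom R A C (\<lambda>x. g (f x))"
  using alg_hom_comp[OF assms] by (simp add: comp_def)

lemma alg_hom_id: "alg_hom R A A (\<lambda>x. x)"
  by (auto simp: alg_hom_def intro!: ring_hom_memI)

lemma is_alg_rmap_closed: "is_alg R A \<Longrightarrow> r \<in> carrier R \<Longrightarrow> rmap A r \<in> carrier A"
  by (auto simp: is_alg_def ring_hom_closed)

lemma is_alg_zero: "cring R \<Longrightarrow> is_alg R A \<Longrightarrow> rmap A \<zero>\<^bsub>R\<^esub> = \<zero>\<^bsub>A\<^esub>"
  by (metis alg_hom_cring alg_hom_def alg_hom_id is_alg_def ring_hom_cring.hom_zero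
      ring_hom_cring_axioms_def ring_hom_cring_def)

lemma is_alg_one: "is_alg R A \<Longrightarrow> rmap A \<one>\<^bsub>R\<^esub> = \<one>\<^bsub>A\<^esub>"
  by (auto simp: is_alg_def ring_hom_one)

lemma the_map_eq:
  assumes "alg_hom R A B f" "f \<in> extensional (carrier A)" "P f"
    and "\<And>g. alg_hom R A B g \<Longrightarrow> g \<in> extensional (carrier A) \<Longrightarrow> P g \<Longrightarrow> \<forall>x\<in>carrier A. g x = f x"
  shows "the_map R A B P = f"
  unfolding the_map_def
proof (rule the_equality)
  show "alg_hom R A B f \<and> f \<in> extensional (carrier A) \<and> P f" using assms by simp
next
  fix g assume "alg_hom R A B g \<and> g \<in> extensional (carrier A) \<and> P g"
  then show "g = f" using assms(2,4) by (auto intro: extensionalityI)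
qed

lemma pres_univ:
  assumes R: "cring R" and C: "is_alg R C" and phi: "\<And>x. \<phi> x \<in> carrier C"
    and rel: "\<And>p q. (p, q) \<in> Rel \<Longrightarrow> peval R C \<phi> p = peval R C \<phi> q"
  shows "\<exists>f. alg_hom R (pres R G Rel) C f \<and> f \<in> extensional (carrier (pres R G Rel))
     \<and> (\<forall>e. pwf R G e \<longrightarrow> f (pclass R G Rel e) = peval R C \<phi> e)"
proof -
  let ?P = "pres R G Rel"
  define f where "f X = (if X \<in> carrier ?P then peval R C \<phi> (prep X) else undefined)" for X
  have fe: "f (pclass R G Rel e) = peval R C \<phi> e" if "pwf R G e" for e
    using that prep_pclass[OF that, of Rel] peq_peval[OF _ R C phi rel]
    by (simp add: f_def pclass_in_carrier)
  interpret C: cring C using is_algD[OF C] by simp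
  interpret R: cring R by fact
  have "alg_hom R ?P C f"
    unfolding alg_hom_def
  proof (intro conjI ballI)
    show "f \<in> ring_hom ?P C"
      by (rule ring_hom_memI)
         (auto elim!: pres_carrierE simp: fe pres_add pres_mult pres_one peval_closed[OF C phi]
           is_alg_one[OF C])
  next
    fix r assume "r \<in> carrier R" then show "f (rmap ?P r) = rmap C r"
      by (simp add: pres_rmap fe)
  qed
  moreover have "f \<in> extensional (carrier ?P)" by (simp add: f_def extensional_def)
  ultimately show ?thesis using fe by blast
qed

lemma pres_hom_eq:
  assumes R: "cring R" and C: "is_alg R C"
    and f1: "alg_hom R (pres R G Rel) C f1" and f2: "alg_hom R (pres R G Rel) C f2"
    and eq: "\<And>x. x \<in> G \<Longrightarrow> f1 (gen (pres R G Rel) x) = f2 (gen (pres R G Rel) x)"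
    and X: "X \<in> carrier (pres R G Rel)"
  shows "f1 X = f2 X"
  using R X
proof (induction rule: pres_induct)
  case (gen x) then show ?case by (rule eq)
next
  case (rmap r) then show ?case using f1 f2 by (simp add: alg_hom_rmap)
next
  case (add X Y) then show ?case using f1 f2 by (simp add: alg_hom_add)
next
  case (mult X Y) then show ?case using f1 f2 by (simp add: alg_hom_mult)
next
  case (neg X) then show ?case using alg_hom_neg[OF pres_is_alg[OF R] C f1 neg(1)] alg_hom_neg[OF pres_is_alg[OF R] C f2 neg(1)] by simp
qed

lemma pres_hom_ext:
  assumes R: "cring R" and C: "is_alg R C"
    and f1: "alg_hom R (pres R G Rel) C f1" and f2: "alg_hom R (pres R G Rel) C f2"
    and "f1 \<in> extensional (carrier (pres R G Rel))" "f2 \<in> extensional (carrier (pres R G Rel))"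
    and eq: "\<And>x. x \<in> G \<Longrightarrow> f1 (gen (pres R G Rel) x) = f2 (gen (pres R G Rel) x)"
  shows "f1 = f2"
  using pres_hom_eq[OF R C f1 f2 eq] assms(5,6) by (auto intro: extensionalityI)

definition rderiv :: "'r ring \<Rightarrow> ('a, 'r) ralg \<Rightarrow> ('c, 'r) ralg \<Rightarrow> ('a \<Rightarrow> 'c) \<Rightarrow> ('a \<Rightarrow> 'c) \<Rightarrow> bool" where
  "rderiv R B C g \<delta> \<longleftrightarrow> (\<forall>x\<in>carrier B. \<delta> x \<in> carrier C)
    \<and> (\<forall>x\<in>carrier B. \<forall>y\<in>carrier B. \<delta> (x \<oplus>\<^bsub>B\<^esub> y) = \<delta> x \<oplus>\<^bsub>C\<^esub> \<delta> y
         \<and> \<delta> (x \<otimes>\<^bsub>B\<^esub> y) = g x \<otimes>\<^bsub>C\<^esub> \<delta> y \<oplus>\<^bsub>C\<^esub> g y \<otimes>\<^bsub>C\<^esub> \<delta> x)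
    \<and> (\<forall>r\<in>carrier R. \<delta> (rmap B r) = \<zero>\<^bsub>C\<^esub>)"

lemma rderivI:
  assumes "\<And>x. x \<in> carrier B \<Longrightarrow> \<delta> x \<in> carrier C"
    "\<And>x y. x \<in> carrier B \<Longrightarrow> y \<in> carrier B \<Longrightarrow> \<delta> (x \<oplus>\<^bsub>B\<^esub> y) = \<delta> x \<oplus>\<^bsub>C\<^esub> \<delta> y"
    "\<And>x y. x \<in> carrier B \<Longrightarrow> y \<in> carrier B \<Longrightarrow> \<delta> (x \<otimes>\<^bsub>B\<^esub> y) = g x \<otimes>\<^bsub>C\<^esub> \<delta> y \<oplus>\<^bsub>C\<^esub> g y \<otimes>\<^bsub>C\<^esub> \<delta> x"
    "\<And>r. r \<in> carrier R \<Longrightarrow> \<delta> (rmap B r) = \<zero>\<^bsub>C\<^esub>"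
  shows "rderiv R B C g \<delta>"
  using assms by (simp add: rderiv_def)

lemma rderiv_closed: "rderiv R B C g \<delta> \<Longrightarrow> x \<in> carrier B \<Longrightarrow> \<delta> x \<in> carrier C"
  and rderiv_add: "rderiv R B C g \<delta> \<Longrightarrow> x \<in> carrier B \<Longrightarrow> y \<in> carrier B \<Longrightarrow> \<delta> (x \<oplus>\<^bsub>B\<^esub> y) = \<delta> x \<oplus>\<^bsub>C\<^esub> \<delta> y"
  and rderiv_mult: "rderiv R B C g \<delta> \<Longrightarrow> x \<in> carrier B \<Longrightarrow> y \<in> carrier B \<Longrightarrow> \<delta> (x \<otimes>\<^bsub>B\<^esub> y) = g x \<otimes>\<^bsub>C\<^esub> \<delta> y \<oplus>\<^bsub>C\<^esub> g y \<otimes>\<^bsub>C\<^esub> \<delta> x"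
  and rderiv_rmap: "rderiv R B C g \<delta> \<Longrightarrow> r \<in> carrier R \<Longrightarrow> \<delta> (rmap B r) = \<zero>\<^bsub>C\<^esub>"
  by (simp_all add: rderiv_def)

lemma rderiv_zero:
  assumes "cring R" "is_alg R B" "rderiv R B C g \<delta>"
  shows "\<delta> \<zero>\<^bsub>B\<^esub> = \<zero>\<^bsub>C\<^esub>"
  using rderiv_rmap[OF assms(3), of "\<zero>\<^bsub>R\<^esub>"] is_alg_zero[OF assms(1,2)] assms(1)
  by (simp add: cring.axioms(1) ring.ring_simprules(2))

lemma rderiv_neg:
  assumes "cring R" "is_alg R B" "is_alg R C" "rderiv R B C g \<delta>" "x \<in> carrier B"
  shows "\<delta> (\<ominus>\<^bsub>B\<^esub> x) = \<ominus>\<^bsub>C\<^esub> \<delta> x"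
proof -
  interpret B: cring B using is_algD[OF assms(2)] by simp
  interpret C: cring C using is_algD[OF assms(3)] by simp
  have "\<delta> (\<ominus>\<^bsub>B\<^esub> x) \<oplus>\<^bsub>C\<^esub> \<delta> x = \<delta> (\<ominus>\<^bsub>B\<^esub> x \<oplus>\<^bsub>B\<^esub> x)"
    using rderiv_add[OF assms(4)] assms(5) by simp
  also have "\<dots> = \<zero>\<^bsub>C\<^esub>" using assms(5) rderiv_zero[OF assms(1,2,4)] by (simp add: B.l_neg)
  finally show ?thesis
    using C.minus_equality rderiv_closed[OF assms(4)] assms(5) by (metis B.a_inv_closed)
qed

lemma rderiv_comp_hom:
  assumes "rderiv R B C g \<delta>" "alg_hom R A B h"
  shows "rderiv R A C (\<lambda>x. g (h x)) (\<lambda>x. \<delta> (h x))"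
  using assms
  by (auto intro!: rderivI simp: rderiv_closed alg_hom_closed alg_hom_add alg_hom_mult alg_hom_rmap
      rderiv_add rderiv_mult rderiv_rmap)

lemma hom_comp_rderiv:
  assumes "rderiv R B C g \<delta>" "alg_hom R C D k" "is_alg R C" "is_alg R D"
    and g: "\<And>x. x \<in> carrier B \<Longrightarrow> g x \<in> carrier C"
  shows "rderiv R B D (\<lambda>x. k (g x)) (\<lambda>x. k (\<delta> x))"
  using assms
  by (auto intro!: rderivI simp: rderiv_closed alg_hom_closed alg_hom_add alg_hom_mult alg_hom_zero
      rderiv_add rderiv_mult rderiv_rmap is_alg_def cring.cring_simprules)

lemma rderiv_zero_fun:
  assumes "is_alg R C" "\<And>x. x \<in> carrier B \<Longrightarrow> g x \<in> carrier C"
  shows "rderiv R B C g (\<lambda>x. \<zero>\<^bsub>C\<^esub>)"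
  using assms by (auto intro!: rderivI simp: is_alg_def cring.cring_simprules)

lemma peval_hom:
  assumes R: "cring R" and C: "is_alg R C" and g: "alg_hom R (pres R G Rel) C g" and e: "pwf R G e"
  shows "peval R C (\<lambda>x. if x \<in> G then g (gen (pres R G Rel) x) else \<zero>\<^bsub>C\<^esub>) e = g (pclass R G Rel e)"
  using e
proof (induction e)
  case (Var x) then show ?case by (simp add: gen_eq)
next
  case (Const r) then show ?case using g by (simp add: pres_rmap[symmetric] alg_hom_rmap)
next
  case (Add a b) then show ?case using g by (simp add: alg_hom_add pclass_in_carrier pres_add[symmetric])
next
  case (Mul a b) then show ?case using g by (simp add: alg_hom_mult pclass_in_carrier pres_mult[symmetric])
next
  case (Neg a) then show ?case using g alg_hom_neg[OF pres_is_alg[OF R] C g]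
    by (simp add: pclass_in_carrier pres_neg[OF R, symmetric])
qed

lemma peq_pdeval:
  assumes "peq R Rel a b" "cring R" "is_alg R C" "\<And>x. \<phi> x \<in> carrier C" "\<And>x. \<psi> x \<in> carrier C"
    and ev: "\<And>a b. peq R Rel a b \<Longrightarrow> peval R C \<phi> a = peval R C \<phi> b"
    and rel: "\<And>p q. (p, q) \<in> Rel \<Longrightarrow> pdeval R C \<phi> \<psi> p = pdeval R C \<phi> \<psi> q"
  shows "pdeval R C \<phi> \<psi> a = pdeval R C \<phi> \<psi> b"
  using assms(1)
proof (induction rule: peq.induct)
  interpret R: cring R by fact
  interpret C: cring C using is_algD[OF assms(3)] by simp
  have cl[simp]: "\<And>e. peval R C \<phi> e \<in> carrier C" by (rule peval_closed[OF assms(3,4)])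
  have cl2[simp]: "\<And>e. pdeval R C \<phi> \<psi> e \<in> carrier C" by (rule pdeval_closed[OF assms(3,4,5)])
  have rc[simp]: "\<And>r. r \<in> carrier R \<Longrightarrow> rmap C r \<in> carrier C" by (rule is_alg_rmap_closed[OF assms(3)])
  {
    case (rel a b) then show ?case by (rule assms(7))
  next case (refl a) then show ?case by simp
  next case (sym a b) then show ?case by simp
  next case (trans a b c) then show ?case by simp
  next case (cong_add a a' b b') then show ?case by simp
  next case (cong_mul a a' b b') then show ?case using ev by simp
  next case (cong_neg a a') then show ?case by simp
  next case (add_assoc a b c) then show ?case by (simp add: C.a_ac)
  next case (add_comm a b) then show ?case by (simp add: C.a_ac)
  next case (add_zero a) then show ?case by simp
  next case (add_neg a) then show ?case by (simp add: C.l_neg)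
  next case (mul_assoc a b c) then show ?case by (simp add: C.m_ac C.a_ac C.r_distr)
  next case (mul_comm a b) then show ?case by (simp add: C.m_ac C.a_ac)
  next case (mul_one a) then show ?case by (simp add: is_alg_one[OF assms(3)])
  next case (distrib a b c) then show ?case by (simp add: C.r_distr C.l_distr C.m_ac C.a_ac)
  next case (const_add r s) then show ?case by simp
  next case (const_mul r s) then show ?case by simp
  }
qed

lemma pres_deriv:
  assumes R: "cring R" and C: "is_alg R C" and g: "alg_hom R (pres R G Rel) C g"
    and psi: "\<And>x. \<psi> x \<in> carrier C"
    and relwf: "\<And>p q. (p, q) \<in> Rel \<Longrightarrow> pwf R G p \<and> pwf R G q"
    and rel: "\<And>p q. (p, q) \<in> Rel \<Longrightarrow>
        pdeval R C (\<lambda>x. if x \<in> G then g (gen (pres R G Rel) x) else \<zero>\<^bsub>C\<^esub>) \<psi> p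
      = pdeval R C (\<lambda>x. if x \<in> G then g (gen (pres R G Rel) x) else \<zero>\<^bsub>C\<^esub>) \<psi> q"
  shows "\<exists>\<delta>. rderiv R (pres R G Rel) C g \<delta>
     \<and> (\<forall>e. pwf R G e \<longrightarrow> \<delta> (pclass R G Rel e) =
          pdeval R C (\<lambda>x. if x \<in> G then g (gen (pres R G Rel) x) else \<zero>\<^bsub>C\<^esub>) \<psi> e)"
proof -
  let ?P = "pres R G Rel"
  let ?\<phi> = "\<lambda>x. if x \<in> G then g (gen (pres R G Rel) x) else \<zero>\<^bsub>C\<^esub>"
  interpret C: cring C using is_algD[OF C] by simp
  have phi: "\<And>x. ?\<phi> x \<in> carrier C" using g by (auto simp: alg_hom_closed gen_in_carrier)
  have ev: "peval R C ?\<phi> a = peval R C ?\<phi> b" if "peq R Rel a b" for a b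
  proof (rule peq_peval[OF that R C phi])
    fix p q assume pq: "(p, q) \<in> Rel"
    then show "peval R C ?\<phi> p = peval R C ?\<phi> q"
      using relwf[OF pq] peval_hom[OF R C g] pres_rel[OF pq] by simp
  qed
  define \<delta> where "\<delta> X = (if X \<in> carrier ?P then pdeval R C ?\<phi> \<psi> (prep X) else undefined)" for X
  have de: "\<delta> (pclass R G Rel e) = pdeval R C ?\<phi> \<psi> e" if "pwf R G e" for e
    using that prep_pclass[OF that, of Rel] peq_pdeval[OF _ R C phi psi ev rel]
    by (simp add: \<delta>_def pclass_in_carrier)
  have "rderiv R ?P C g \<delta>"
  proof (rule rderivI)
    fix x assume "x \<in> carrier ?P" then show "\<delta> x \<in> carrier C"
      by (auto elim!: pres_carrierE simp: de pdeval_closed[OF C phi psi])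
  next
    fix x y assume "x \<in> carrier ?P" "y \<in> carrier ?P" then show "\<delta> (x \<oplus>\<^bsub>?P\<^esub> y) = \<delta> x \<oplus>\<^bsub>C\<^esub> \<delta> y"
      by (auto elim!: pres_carrierE simp: de pres_add)
  next
    fix x y assume "x \<in> carrier ?P" "y \<in> carrier ?P"
    then show "\<delta> (x \<otimes>\<^bsub>?P\<^esub> y) = g x \<otimes>\<^bsub>C\<^esub> \<delta> y \<oplus>\<^bsub>C\<^esub> g y \<otimes>\<^bsub>C\<^esub> \<delta> x"
      by (auto elim!: pres_carrierE simp: de pres_mult peval_hom[OF R C g])
  next
    fix r assume "r \<in> carrier R" then show "\<delta> (rmap ?P r) = \<zero>\<^bsub>C\<^esub>"
      by (simp add: pres_rmap de)
  qed
  then show ?thesis using de by blast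
qed

lemma pres_deriv_eq:
  assumes R: "cring R" and C: "is_alg R C" and g: "alg_hom R (pres R G Rel) C g"
    and d1: "rderiv R (pres R G Rel) C g d1" and d2: "rderiv R (pres R G Rel) C g d2"
    and eq: "\<And>x. x \<in> G \<Longrightarrow> d1 (gen (pres R G Rel) x) = d2 (gen (pres R G Rel) x)"
    and X: "X \<in> carrier (pres R G Rel)"
  shows "d1 X = d2 X"
  using R X
proof (induction rule: pres_induct)
  case (gen x) then show ?case by (rule eq)
next
  case (rmap r) then show ?case using d1 d2 by (simp add: rderiv_rmap)
next
  case (add X Y) then show ?case using d1 d2 by (simp add: rderiv_add)
next
  case (mult X Y) then show ?case using d1 d2 by (simp add: rderiv_mult)
next
  case (neg X) then show ?case using rderiv_neg[OF R pres_is_alg[OF R] C d1 neg(1)] rderiv_neg[OF R pres_is_alg[OF R] C d2 neg(1)]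
    by simp
qed

definition tgens :: "('b, 'r) ralg \<Rightarrow> 'b tgen set" where
  "tgens B = TP ` carrier B \<union> TD ` carrier B"

lemma Tan_eq: "Tan R B = pres R (tgens B) (tan_rel R B)"
  by (simp add: Tan_def tgens_def)

lemma tgens_simps[simp]: "TP b \<in> tgens B \<longleftrightarrow> b \<in> carrier B" "TD b \<in> tgens B \<longleftrightarrow> b \<in> carrier B"
  by (auto simp: tgens_def)

lemma Tan_is_alg: "cring R \<Longrightarrow> is_alg R (Tan R B)"
  by (simp add: Tan_eq pres_is_alg)

lemma Tan_cring: "cring R \<Longrightarrow> cring (Tan R B)"
  by (simp add: Tan_eq pres_cring)

lemma tp_eq: "b \<in> carrier B \<Longrightarrow> tp R B b = pclass R (tgens B) (tan_rel R B) (Var (TP b))"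
  by (simp add: tp_def Tan_eq gen_eq)

lemma td_eq: "b \<in> carrier B \<Longrightarrow> td R B b = pclass R (tgens B) (tan_rel R B) (Var (TD b))"
  by (simp add: td_def Tan_eq gen_eq)

lemma tp_closed: "b \<in> carrier B \<Longrightarrow> tp R B b \<in> carrier (Tan R B)"
  by (simp add: tp_eq Tan_eq pclass_in_carrier)

lemma td_closed: "b \<in> carrier B \<Longrightarrow> td R B b \<in> carrier (Tan R B)"
  by (simp add: td_eq Tan_eq pclass_in_carrier)

lemma tan_rel_mem:
  assumes "(p, q) \<in> tan_rel R B"
  shows "(\<exists>b b'. b \<in> carrier B \<and> b' \<in> carrier B \<and> p = Var (TP (b \<oplus>\<^bsub>B\<^esub> b')) \<and> q = Add (Var (TP b)) (Var (TP b')))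
   \<or> (\<exists>b b'. b \<in> carrier B \<and> b' \<in> carrier B \<and> p = Var (TP (b \<otimes>\<^bsub>B\<^esub> b')) \<and> q = Mul (Var (TP b)) (Var (TP b')))
   \<or> (\<exists>r. r \<in> carrier R \<and> p = Var (TP (rmap B r)) \<and> q = Const r)
   \<or> (\<exists>b b'. b \<in> carrier B \<and> b' \<in> carrier B \<and> p = Var (TD (b \<oplus>\<^bsub>B\<^esub> b')) \<and> q = Add (Var (TD b)) (Var (TD b')))
   \<or> (\<exists>b b'. b \<in> carrier B \<and> b' \<in> carrier B \<and> p = Var (TD (b \<otimes>\<^bsub>B\<^esub> b'))
        \<and> q = Add (Mul (Var (TP b)) (Var (TD b'))) (Mul (Var (TP b')) (Var (TD b))))
   \<or> (\<exists>r. r \<in> carrier R \<and> p = Var (TD (rmap B r)) \<and> q = Const \<zero>\<^bsub>R\<^esub>)"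
  using assms unfolding tan_rel_def hom_rel_def by blast

lemma tan_rel_wf:
  assumes R: "cring R" and B: "is_alg R B" and pq: "(p, q) \<in> tan_rel R B"
  shows "pwf R (tgens B) p \<and> pwf R (tgens B) q"
proof -
  interpret B: cring B using is_algD[OF B] by simp
  interpret R: cring R by fact
  show ?thesis using tan_rel_mem[OF pq] by (auto simp: is_alg_rmap_closed[OF B])
qed

lemma tan_rel_eq:
  assumes R: "cring R" and B: "is_alg R B" and pq: "(p, q) \<in> tan_rel R B"
  shows "pclass R (tgens B) (tan_rel R B) p = pclass R (tgens B) (tan_rel R B) q"
  using pres_rel[OF pq] tan_rel_wf[OF R B pq] by simp

lemma tp_hom:
  assumes R: "cring R" and B: "is_alg R B"
  shows "alg_hom R B (Tan R B) (tp R B)"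
proof -
  interpret B: cring B using is_algD[OF B] by simp
  interpret R: cring R by fact
  let ?c = "pclass R (tgens B) (tan_rel R B)"
  have rm: "tp R B (rmap B r) = rmap (Tan R B) r" if "r \<in> carrier R" for r
  proof -
    have "tp R B (rmap B r) = ?c (Var (TP (rmap B r)))" by (simp add: tp_eq is_alg_rmap_closed[OF B] that)
    also have "\<dots> = ?c (Const r)"
      by (rule tan_rel_eq[OF R B]) (auto simp: tan_rel_def hom_rel_def that)
    finally show ?thesis by (simp add: Tan_eq pres_rmap)
  qed
  show ?thesis unfolding alg_hom_def
  proof (intro conjI ballI rm)
    show "tp R B \<in> ring_hom B (Tan R B)"
    proof (rule ring_hom_memI)
      fix x y assume xy: "x \<in> carrier B" "y \<in> carrier B"
      have "?c (Var (TP (x \<otimes>\<^bsub>B\<^esub> y))) = ?c (Mul (Var (TP x)) (Var (TP y)))"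
        by (rule tan_rel_eq[OF R B]) (auto simp: tan_rel_def hom_rel_def xy)
      then show "tp R B (x \<otimes>\<^bsub>B\<^esub> y) = tp R B x \<otimes>\<^bsub>Tan R B\<^esub> tp R B y"
        using xy by (simp add: tp_eq Tan_eq pres_mult)
      have "?c (Var (TP (x \<oplus>\<^bsub>B\<^esub> y))) = ?c (Add (Var (TP x)) (Var (TP y)))"
        by (rule tan_rel_eq[OF R B]) (auto simp: tan_rel_def hom_rel_def xy)
      then show "tp R B (x \<oplus>\<^bsub>B\<^esub> y) = tp R B x \<oplus>\<^bsub>Tan R B\<^esub> tp R B y"
        using xy by (simp add: tp_eq Tan_eq pres_add)
    next
      show "tp R B \<one>\<^bsub>B\<^esub> = \<one>\<^bsub>Tan R B\<^esub>"
        using rm[of "\<one>\<^bsub>R\<^esub>"] is_alg_one[OF B] is_alg_one[OF Tan_is_alg[OF R]] by simp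
    qed (simp add: tp_closed)
  qed
qed

lemma td_deriv:
  assumes R: "cring R" and B: "is_alg R B"
  shows "rderiv R B (Tan R B) (tp R B) (td R B)"
proof -
  interpret B: cring B using is_algD[OF B] by simp
  interpret R: cring R by fact
  let ?c = "pclass R (tgens B) (tan_rel R B)"
  show ?thesis
  proof (rule rderivI)
    fix x y assume xy: "x \<in> carrier B" "y \<in> carrier B"
    have "?c (Var (TD (x \<otimes>\<^bsub>B\<^esub> y))) = ?c (Add (Mul (Var (TP x)) (Var (TD y))) (Mul (Var (TP y)) (Var (TD x))))"
      by (rule tan_rel_eq[OF R B]) (auto simp: tan_rel_def hom_rel_def xy)
    then show "td R B (x \<otimes>\<^bsub>B\<^esub> y) = tp R B x \<otimes>\<^bsub>Tan R B\<^esub> td R B y \<oplus>\<^bsub>Tan R B\<^esub> tp R B y \<otimes>\<^bsub>Tan R B\<^esub> td R B x"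
      using xy by (simp add: tp_eq td_eq Tan_eq pres_mult pres_add)
    have "?c (Var (TD (x \<oplus>\<^bsub>B\<^esub> y))) = ?c (Add (Var (TD x)) (Var (TD y)))"
      by (rule tan_rel_eq[OF R B]) (auto simp: tan_rel_def hom_rel_def xy)
    then show "td R B (x \<oplus>\<^bsub>B\<^esub> y) = td R B x \<oplus>\<^bsub>Tan R B\<^esub> td R B y"
      using xy by (simp add: td_eq Tan_eq pres_add)
  next
    fix r assume r: "r \<in> carrier R"
    have "?c (Var (TD (rmap B r))) = ?c (Const \<zero>\<^bsub>R\<^esub>)"
      by (rule tan_rel_eq[OF R B]) (auto simp: tan_rel_def hom_rel_def r)
    then show "td R B (rmap B r) = \<zero>\<^bsub>Tan R B\<^esub>"
      using r by (simp add: td_eq Tan_eq pres_zero is_alg_rmap_closed[OF B])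
  qed (simp add: td_closed)
qed

lemma Tan_induct[consumes 2, case_names tp td rmap add mult neg]:
  assumes R: "cring R" and X: "X \<in> carrier (Tan R B)"
    and tp: "\<And>b. b \<in> carrier B \<Longrightarrow> Q (tp R B b)"
    and td: "\<And>b. b \<in> carrier B \<Longrightarrow> Q (td R B b)"
    and rm: "\<And>r. r \<in> carrier R \<Longrightarrow> Q (rmap (Tan R B) r)"
    and add: "\<And>X Y. X \<in> carrier (Tan R B) \<Longrightarrow> Y \<in> carrier (Tan R B) \<Longrightarrow> Q X \<Longrightarrow> Q Y
        \<Longrightarrow> Q (X \<oplus>\<^bsub>Tan R B\<^esub> Y)"
    and mult: "\<And>X Y. X \<in> carrier (Tan R B) \<Longrightarrow> Y \<in> carrier (Tan R B) \<Longrightarrow> Q X \<Longrightarrow> Q Y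
        \<Longrightarrow> Q (X \<otimes>\<^bsub>Tan R B\<^esub> Y)"
    and neg: "\<And>X. X \<in> carrier (Tan R B) \<Longrightarrow> Q X \<Longrightarrow> Q (\<ominus>\<^bsub>Tan R B\<^esub> X)"
  shows "Q X"
proof -
  have X': "X \<in> carrier (pres R (tgens B) (tan_rel R B))" using X by (simp add: Tan_eq)
  show ?thesis using R X'
  proof (induction rule: pres_induct)
    case (gen x) then show ?case using tp td
      by (auto simp: tgens_def tp_def td_def Tan_eq)
  qed (use rm add mult neg in \<open>simp_all add: Tan_eq\<close>)
qed

lemma tan_hom_eq:
  assumes R: "cring R" and C: "is_alg R C"
    and f1: "alg_hom R (Tan R B) C f1" and f2: "alg_hom R (Tan R B) C f2"
    and eq: "\<And>b. b \<in> carrier B \<Longrightarrow> f1 (tp R B b) = f2 (tp R B b) \<and> f1 (td R B b) = f2 (td R B b)"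
    and X: "X \<in> carrier (Tan R B)"
  shows "f1 X = f2 X"
  using pres_hom_eq[OF R C f1[unfolded Tan_eq] f2[unfolded Tan_eq], of X] eq X
  by (auto simp: tgens_def tp_def td_def Tan_eq)

lemma tan_deriv_eq:
  assumes R: "cring R" and C: "is_alg R C" and g: "alg_hom R (Tan R B) C g"
    and d1: "rderiv R (Tan R B) C g d1" and d2: "rderiv R (Tan R B) C g d2"
    and eq: "\<And>b. b \<in> carrier B \<Longrightarrow> d1 (tp R B b) = d2 (tp R B b) \<and> d1 (td R B b) = d2 (td R B b)"
    and X: "X \<in> carrier (Tan R B)"
  shows "d1 X = d2 X"
  using pres_deriv_eq[OF R C g[unfolded Tan_eq] d1[unfolded Tan_eq] d2[unfolded Tan_eq], of X] eq X
  by (auto simp: tgens_def tp_def td_def Tan_eq)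

lemma T_univ:
  assumes R: "cring R" and B: "is_alg R B" and C: "is_alg R C"
    and g: "alg_hom R B C g" and d: "rderiv R B C g \<delta>"
  shows "\<exists>f. alg_hom R (Tan R B) C f \<and> f \<in> extensional (carrier (Tan R B))
     \<and> (\<forall>b\<in>carrier B. f (tp R B b) = g b \<and> f (td R B b) = \<delta> b)"
proof -
  interpret B: cring B using is_algD[OF B] by simp
  interpret C: cring C using is_algD[OF C] by simp
  interpret R: cring R by fact
  define \<phi> where "\<phi> x = (if x \<in> tgens B then (case x of TP b \<Rightarrow> g b | TD b \<Rightarrow> \<delta> b) else \<zero>\<^bsub>C\<^esub>)" for x
  have phi: "\<phi> x \<in> carrier C" for x
    by (cases x) (auto simp: \<phi>_def alg_hom_closed[OF g] rderiv_closed[OF d])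
  have rel: "peval R C \<phi> p = peval R C \<phi> q" if "(p, q) \<in> tan_rel R B" for p q
    using tan_rel_mem[OF that]
    by (auto simp: \<phi>_def alg_hom_add[OF g] alg_hom_mult[OF g] alg_hom_rmap[OF g] is_alg_rmap_closed[OF B]
        rderiv_add[OF d] rderiv_mult[OF d] rderiv_rmap[OF d] is_alg_zero[OF R C])
  obtain f where f: "alg_hom R (pres R (tgens B) (tan_rel R B)) C f"
    "f \<in> extensional (carrier (pres R (tgens B) (tan_rel R B)))"
    "\<forall>e. pwf R (tgens B) e \<longrightarrow> f (pclass R (tgens B) (tan_rel R B) e) = peval R C \<phi> e"
    using pres_univ[OF R C phi rel] by blast
  show ?thesis
    by (rule exI[of _ f]) (use f in \<open>auto simp: Tan_eq tp_eq td_eq \<phi>_def\<close>)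
qed

lemma tmap_on_props:
  assumes R: "cring R" and B: "is_alg R B" and C: "is_alg R C"
    and g: "alg_hom R B C g" and d: "rderiv R B C g \<delta>"
  shows "alg_hom R (Tan R B) C (tmap_on R B C g \<delta>)"
    "\<And>b. b \<in> carrier B \<Longrightarrow> tmap_on R B C g \<delta> (tp R B b) = g b"
    "\<And>b. b \<in> carrier B \<Longrightarrow> tmap_on R B C g \<delta> (td R B b) = \<delta> b"
proof -
  obtain f where f: "alg_hom R (Tan R B) C f" "f \<in> extensional (carrier (Tan R B))"
    "\<forall>b\<in>carrier B. f (tp R B b) = g b \<and> f (td R B b) = \<delta> b"
    using T_univ[OF assms] by blast
  have "tmap_on R B C g \<delta> = f"
    unfolding tmap_on_def
    by (rule the_map_eq[OF f(1,2)]) (use f(3) in \<open>auto intro: tan_hom_eq[OF R C _ f(1)]\<close>)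
  then show "alg_hom R (Tan R B) C (tmap_on R B C g \<delta>)"
    "\<And>b. b \<in> carrier B \<Longrightarrow> tmap_on R B C g \<delta> (tp R B b) = g b"
    "\<And>b. b \<in> carrier B \<Longrightarrow> tmap_on R B C g \<delta> (td R B b) = \<delta> b"
    using f by auto
qed

lemma Tmap_props:
  assumes R: "cring R" and B: "is_alg R B" and C: "is_alg R C" and h: "alg_hom R B C h"
  shows "alg_hom R (Tan R B) (Tan R C) (Tmap R B C h)"
    "\<And>b. b \<in> carrier B \<Longrightarrow> Tmap R B C h (tp R B b) = tp R C (h b)"
    "\<And>b. b \<in> carrier B \<Longrightarrow> Tmap R B C h (td R B b) = td R C (h b)"
proof -
  have g: "alg_hom R B (Tan R C) (\<lambda>b. tp R C (h b))"
    by (rule alg_hom_comp'[OF h tp_hom[OF R C]])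
  have d: "rderiv R B (Tan R C) (\<lambda>b. tp R C (h b)) (\<lambda>b. td R C (h b))"
    by (rule rderiv_comp_hom[OF td_deriv[OF R C] h])
  note * = tmap_on_props[OF R B Tan_is_alg[OF R] g d]
  show "alg_hom R (Tan R B) (Tan R C) (Tmap R B C h)"
    "\<And>b. b \<in> carrier B \<Longrightarrow> Tmap R B C h (tp R B b) = tp R C (h b)"
    "\<And>b. b \<in> carrier B \<Longrightarrow> Tmap R B C h (td R B b) = td R C (h b)"
    using * by (simp_all add: Tmap_def)
qed

lemma gen_Tan_TP: "gen (pres R (tgens B) (tan_rel R B)) (TP b) = tp R B b"
  and gen_Tan_TD: "gen (pres R (tgens B) (tan_rel R B)) (TD b) = td R B b"
  by (simp_all add: tp_def td_def Tan_eq)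

lemma gen_Tan_TP'[simp]: "gen (Tan R B) (TP b) = tp R B b"
  and gen_Tan_TD'[simp]: "gen (Tan R B) (TD b) = td R B b"
  by (simp_all add: tp_def td_def)

lemma rderiv_cong:
  assumes "rderiv R B C g \<delta>" "\<And>x. x \<in> carrier B \<Longrightarrow> g x = g' x"
  shows "rderiv R B C g' \<delta>"
  using assms by (auto simp: rderiv_def)

lemma tan_pres_hom_eq:
  assumes R: "cring R" and C: "is_alg R C" and P: "P = pres R G Rel"
    and F1: "alg_hom R (Tan R P) C F1" and F2: "alg_hom R (Tan R P) C F2"
    and eq: "\<And>x. x \<in> G \<Longrightarrow> F1 (tp R P (gen P x)) = F2 (tp R P (gen P x))
                           \<and> F1 (td R P (gen P x)) = F2 (td R P (gen P x))"
    and X: "X \<in> carrier (Tan R P)"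
  shows "F1 X = F2 X"
proof -
  have Pa: "is_alg R P" using P pres_is_alg[OF R] by simp
  have h1: "alg_hom R P C (\<lambda>x. F1 (tp R P x))" by (rule alg_hom_comp'[OF tp_hom[OF R Pa] F1])
  have h2: "alg_hom R P C (\<lambda>x. F2 (tp R P x))" by (rule alg_hom_comp'[OF tp_hom[OF R Pa] F2])
  have e1: "F1 (tp R P Y) = F2 (tp R P Y)" if "Y \<in> carrier P" for Y
    using pres_hom_eq[OF R C h1[unfolded P] h2[unfolded P]] eq that P by simp
  have d1: "rderiv R P C (\<lambda>x. F1 (tp R P x)) (\<lambda>x. F1 (td R P x))"
    by (rule hom_comp_rderiv[OF td_deriv[OF R Pa] F1 Tan_is_alg[OF R] C tp_closed])
  have d2': "rderiv R P C (\<lambda>x. F2 (tp R P x)) (\<lambda>x. F2 (td R P x))"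
    by (rule hom_comp_rderiv[OF td_deriv[OF R Pa] F2 Tan_is_alg[OF R] C tp_closed])
  have d2: "rderiv R P C (\<lambda>x. F1 (tp R P x)) (\<lambda>x. F2 (td R P x))"
    using rderiv_cong[OF d2', of "\<lambda>x. F1 (tp R P x)"] e1 by metis
  have e2: "F1 (td R P Y) = F2 (td R P Y)" if "Y \<in> carrier P" for Y
    using pres_deriv_eq[OF R C h1[unfolded P] d1[unfolded P] d2[unfolded P]] eq that P by simp
  show ?thesis by (rule tan_hom_eq[OF R C F1 F2 _ X]) (simp add: e1 e2)
qed

lemma T2_univ:
  assumes R: "cring R" and B: "is_alg R B" and C: "is_alg R C"
    and f1: "alg_hom R B C f1" and f2: "rderiv R B C f1 f2" and f3: "rderiv R B C f1 f3"
    and f4c: "\<And>b. b \<in> carrier B \<Longrightarrow> f4 b \<in> carrier C"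
    and f4a: "\<And>b b'. b \<in> carrier B \<Longrightarrow> b' \<in> carrier B \<Longrightarrow> f4 (b \<oplus>\<^bsub>B\<^esub> b') = f4 b \<oplus>\<^bsub>C\<^esub> f4 b'"
    and f4m: "\<And>b b'. b \<in> carrier B \<Longrightarrow> b' \<in> carrier B \<Longrightarrow> f4 (b \<otimes>\<^bsub>B\<^esub> b') =
        (f1 b \<otimes>\<^bsub>C\<^esub> f4 b' \<oplus>\<^bsub>C\<^esub> f2 b' \<otimes>\<^bsub>C\<^esub> f3 b) \<oplus>\<^bsub>C\<^esub> (f1 b' \<otimes>\<^bsub>C\<^esub> f4 b \<oplus>\<^bsub>C\<^esub> f2 b \<otimes>\<^bsub>C\<^esub> f3 b')"
    and f4r: "\<And>r. r \<in> carrier R \<Longrightarrow> f4 (rmap B r) = \<zero>\<^bsub>C\<^esub>"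
  shows "\<exists>F. alg_hom R (Tan R (Tan R B)) C F \<and> F \<in> extensional (carrier (Tan R (Tan R B)))
     \<and> (\<forall>b\<in>carrier B. F (tp R (Tan R B) (tp R B b)) = f1 b \<and> F (tp R (Tan R B) (td R B b)) = f2 b
          \<and> F (td R (Tan R B) (tp R B b)) = f3 b \<and> F (td R (Tan R B) (td R B b)) = f4 b)"
proof -
  interpret B: cring B using is_algD[OF B] by simp
  interpret C: cring C using is_algD[OF C] by simp
  interpret R: cring R by fact
  let ?g = "tmap_on R B C f1 f2"
  note g = tmap_on_props[OF R B C f1 f2]
  define \<psi> where "\<psi> x = (if x \<in> tgens B then (case x of TP b \<Rightarrow> f3 b | TD b \<Rightarrow> f4 b) else \<zero>\<^bsub>C\<^esub>)" for x
  have psi: "\<psi> x \<in> carrier C" for x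
    by (cases x) (auto simp: \<psi>_def f4c rderiv_closed[OF f3])
  have f1c: "\<And>b. b \<in> carrier B \<Longrightarrow> f1 b \<in> carrier C" using alg_hom_closed[OF f1] .
  have f2c: "\<And>b. b \<in> carrier B \<Longrightarrow> f2 b \<in> carrier C" using rderiv_closed[OF f2] .
  have f3c: "\<And>b. b \<in> carrier B \<Longrightarrow> f3 b \<in> carrier C" using rderiv_closed[OF f3] .
  have rel: "pdeval R C (\<lambda>x. if x \<in> tgens B then ?g (gen (pres R (tgens B) (tan_rel R B)) x) else \<zero>\<^bsub>C\<^esub>) \<psi> p
      = pdeval R C (\<lambda>x. if x \<in> tgens B then ?g (gen (pres R (tgens B) (tan_rel R B)) x) else \<zero>\<^bsub>C\<^esub>) \<psi> q"
    if "(p, q) \<in> tan_rel R B" for p q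
    using tan_rel_mem[OF that]
    by (auto simp: \<psi>_def gen_Tan_TP gen_Tan_TD g(2,3) is_alg_rmap_closed[OF B]
        rderiv_add[OF f3] rderiv_mult[OF f3] rderiv_rmap[OF f3] f4a f4m f4r f1c f2c f3c f4c C.cring_simprules)
  obtain \<delta> where d: "rderiv R (pres R (tgens B) (tan_rel R B)) C ?g \<delta>"
    "\<forall>e. pwf R (tgens B) e \<longrightarrow> \<delta> (pclass R (tgens B) (tan_rel R B) e) =
       pdeval R C (\<lambda>x. if x \<in> tgens B then ?g (gen (pres R (tgens B) (tan_rel R B)) x) else \<zero>\<^bsub>C\<^esub>) \<psi> e"
    using pres_deriv[OF R C g(1)[unfolded Tan_eq] psi tan_rel_wf[OF R B] rel] by blast
  have d1: "rderiv R (Tan R B) C ?g \<delta>" using d(1) by (simp add: Tan_eq)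
  obtain F where F: "alg_hom R (Tan R (Tan R B)) C F" "F \<in> extensional (carrier (Tan R (Tan R B)))"
    "\<forall>x\<in>carrier (Tan R B). F (tp R (Tan R B) x) = ?g x \<and> F (td R (Tan R B) x) = \<delta> x"
    using T_univ[OF R Tan_is_alg[OF R] C g(1) d1] by blast
  have "\<delta> (tp R B b) = f3 b" "\<delta> (td R B b) = f4 b" if "b \<in> carrier B" for b
    using d(2) that by (simp_all add: tp_eq td_eq \<psi>_def)
  then show ?thesis
    by (intro exI[of _ F]) (use F g in \<open>auto simp: tp_closed td_closed\<close>)
qed

lemma t2map_on_props:
  assumes R: "cring R" and B: "is_alg R B" and C: "is_alg R C"
    and f1: "alg_hom R B C f1" and f2: "rderiv R B C f1 f2" and f3: "rderiv R B C f1 f3"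
    and f4c: "\<And>b. b \<in> carrier B \<Longrightarrow> f4 b \<in> carrier C"
    and f4a: "\<And>b b'. b \<in> carrier B \<Longrightarrow> b' \<in> carrier B \<Longrightarrow> f4 (b \<oplus>\<^bsub>B\<^esub> b') = f4 b \<oplus>\<^bsub>C\<^esub> f4 b'"
    and f4m: "\<And>b b'. b \<in> carrier B \<Longrightarrow> b' \<in> carrier B \<Longrightarrow> f4 (b \<otimes>\<^bsub>B\<^esub> b') =
        (f1 b \<otimes>\<^bsub>C\<^esub> f4 b' \<oplus>\<^bsub>C\<^esub> f2 b' \<otimes>\<^bsub>C\<^esub> f3 b) \<oplus>\<^bsub>C\<^esub> (f1 b' \<otimes>\<^bsub>C\<^esub> f4 b \<oplus>\<^bsub>C\<^esub> f2 b \<otimes>\<^bsub>C\<^esub> f3 b')"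
    and f4r: "\<And>r. r \<in> carrier R \<Longrightarrow> f4 (rmap B r) = \<zero>\<^bsub>C\<^esub>"
  shows "alg_hom R (Tan R (Tan R B)) C (t2map_on R B C f1 f2 f3 f4)"
    "\<And>b. b \<in> carrier B \<Longrightarrow> t2map_on R B C f1 f2 f3 f4 (tp R (Tan R B) (tp R B b)) = f1 b"
    "\<And>b. b \<in> carrier B \<Longrightarrow> t2map_on R B C f1 f2 f3 f4 (tp R (Tan R B) (td R B b)) = f2 b"
    "\<And>b. b \<in> carrier B \<Longrightarrow> t2map_on R B C f1 f2 f3 f4 (td R (Tan R B) (tp R B b)) = f3 b"
    "\<And>b. b \<in> carrier B \<Longrightarrow> t2map_on R B C f1 f2 f3 f4 (td R (Tan R B) (td R B b)) = f4 b"
proof -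
  obtain F where F: "alg_hom R (Tan R (Tan R B)) C F" "F \<in> extensional (carrier (Tan R (Tan R B)))"
     "\<forall>b\<in>carrier B. F (tp R (Tan R B) (tp R B b)) = f1 b \<and> F (tp R (Tan R B) (td R B b)) = f2 b
          \<and> F (td R (Tan R B) (tp R B b)) = f3 b \<and> F (td R (Tan R B) (td R B b)) = f4 b"
    using T2_univ[OF assms] by blast
  have "t2map_on R B C f1 f2 f3 f4 = F"
    unfolding t2map_on_def
  proof (rule the_map_eq[OF F(1,2)])
    show "\<forall>b\<in>carrier B. F (tp R (Tan R B) (tp R B b)) = f1 b \<and> F (tp R (Tan R B) (td R B b)) = f2 b
          \<and> F (td R (Tan R B) (tp R B b)) = f3 b \<and> F (td R (Tan R B) (td R B b)) = f4 b" by (rule F(3))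
  next
    fix G assume G: "alg_hom R (Tan R (Tan R B)) C G" "G \<in> extensional (carrier (Tan R (Tan R B)))"
      "\<forall>b\<in>carrier B. G (tp R (Tan R B) (tp R B b)) = f1 b \<and> G (tp R (Tan R B) (td R B b)) = f2 b
          \<and> G (td R (Tan R B) (tp R B b)) = f3 b \<and> G (td R (Tan R B) (td R B b)) = f4 b"
    show "\<forall>x\<in>carrier (Tan R (Tan R B)). G x = F x"
    proof
      fix x assume x: "x \<in> carrier (Tan R (Tan R B))"
      show "G x = F x"
        by (rule tan_pres_hom_eq[OF R C Tan_eq G(1) F(1) _ x])
           (use F(3) G(3) in \<open>auto simp: tgens_def gen_Tan_TP gen_Tan_TD\<close>)
    qed
  qed
  then show "alg_hom R (Tan R (Tan R B)) C (t2map_on R B C f1 f2 f3 f4)"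
    "\<And>b. b \<in> carrier B \<Longrightarrow> t2map_on R B C f1 f2 f3 f4 (tp R (Tan R B) (tp R B b)) = f1 b"
    "\<And>b. b \<in> carrier B \<Longrightarrow> t2map_on R B C f1 f2 f3 f4 (tp R (Tan R B) (td R B b)) = f2 b"
    "\<And>b. b \<in> carrier B \<Longrightarrow> t2map_on R B C f1 f2 f3 f4 (td R (Tan R B) (tp R B b)) = f3 b"
    "\<And>b. b \<in> carrier B \<Longrightarrow> t2map_on R B C f1 f2 f3 f4 (td R (Tan R B) (td R B b)) = f4 b"
    using F by auto
qed

section \<open>Symmetric algebra\<close>

definition sgens :: "('a, 'r) ralg \<Rightarrow> ('a, 'm) module \<Rightarrow> ('a, 'm) sgen set" where
  "sgens A M = SA ` carrier A \<union> SM ` carrier M"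

lemma Sym_eq: "Sym R A M = pres R (sgens A M) (sym_rel R A M)"
  by (simp add: Sym_def sgens_def)

lemma sgens_simps[simp]: "SA a \<in> sgens A M \<longleftrightarrow> a \<in> carrier A" "SM m \<in> sgens A M \<longleftrightarrow> m \<in> carrier M"
  by (auto simp: sgens_def)

lemma Sym_is_alg: "cring R \<Longrightarrow> is_alg R (Sym R A M)"
  by (simp add: Sym_eq pres_is_alg)

lemma sq_eq: "a \<in> carrier A \<Longrightarrow> sq R A M a = pclass R (sgens A M) (sym_rel R A M) (Var (SA a))"
  by (simp add: sq_def Sym_eq gen_eq)

lemma sj_eq: "m \<in> carrier M \<Longrightarrow> sj R A M m = pclass R (sgens A M) (sym_rel R A M) (Var (SM m))"
  by (simp add: sj_def Sym_eq gen_eq)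

lemma sq_closed: "a \<in> carrier A \<Longrightarrow> sq R A M a \<in> carrier (Sym R A M)"
  by (simp add: sq_eq Sym_eq pclass_in_carrier)

lemma sj_closed: "m \<in> carrier M \<Longrightarrow> sj R A M m \<in> carrier (Sym R A M)"
  by (simp add: sj_eq Sym_eq pclass_in_carrier)

lemma gen_Sym_SA[simp]: "gen (pres R (sgens A M) (sym_rel R A M)) (SA a) = sq R A M a"
  and gen_Sym_SM[simp]: "gen (pres R (sgens A M) (sym_rel R A M)) (SM m) = sj R A M m"
  by (simp_all add: sq_def sj_def Sym_eq)

lemma sym_rel_mem:
  assumes "(p, q) \<in> sym_rel R A M"
  shows "(\<exists>b b'. b \<in> carrier A \<and> b' \<in> carrier A \<and> p = Var (SA (b \<oplus>\<^bsub>A\<^esub> b')) \<and> q = Add (Var (SA b)) (Var (SA b')))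
   \<or> (\<exists>b b'. b \<in> carrier A \<and> b' \<in> carrier A \<and> p = Var (SA (b \<otimes>\<^bsub>A\<^esub> b')) \<and> q = Mul (Var (SA b)) (Var (SA b')))
   \<or> (\<exists>r. r \<in> carrier R \<and> p = Var (SA (rmap A r)) \<and> q = Const r)
   \<or> (\<exists>m m'. m \<in> carrier M \<and> m' \<in> carrier M \<and> p = Var (SM (m \<oplus>\<^bsub>M\<^esub> m')) \<and> q = Add (Var (SM m)) (Var (SM m')))
   \<or> (\<exists>a m. a \<in> carrier A \<and> m \<in> carrier M \<and> p = Var (SM (a \<odot>\<^bsub>M\<^esub> m)) \<and> q = Mul (Var (SA a)) (Var (SM m)))"
  using assms unfolding sym_rel_def hom_rel_def by blast

lemma sym_rel_wf:
  assumes R: "cring R" and A: "is_alg R A" and M: "module A M" and pq: "(p, q) \<in> sym_rel R A M"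
  shows "pwf R (sgens A M) p \<and> pwf R (sgens A M) q"
proof -
  interpret M: module A M by fact
  show ?thesis using sym_rel_mem[OF pq] by (auto simp: is_alg_rmap_closed[OF A])
qed

lemma sym_rel_eq:
  assumes R: "cring R" and A: "is_alg R A" and M: "module A M" and pq: "(p, q) \<in> sym_rel R A M"
  shows "pclass R (sgens A M) (sym_rel R A M) p = pclass R (sgens A M) (sym_rel R A M) q"
  using pres_rel[OF pq] sym_rel_wf[OF R A M pq] by simp

lemma sq_hom:
  assumes R: "cring R" and A: "is_alg R A" and M: "module A M"
  shows "alg_hom R A (Sym R A M) (sq R A M)"
proof -
  interpret M: module A M by fact
  interpret R: cring R by fact
  let ?c = "pclass R (sgens A M) (sym_rel R A M)"
  have rm: "sq R A M (rmap A r) = rmap (Sym R A M) r" if "r \<in> carrier R" for r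
  proof -
    have "sq R A M (rmap A r) = ?c (Var (SA (rmap A r)))" by (simp add: sq_eq is_alg_rmap_closed[OF A] that)
    also have "\<dots> = ?c (Const r)"
      by (rule sym_rel_eq[OF R A M]) (auto simp: sym_rel_def hom_rel_def that)
    finally show ?thesis by (simp add: Sym_eq pres_rmap)
  qed
  show ?thesis unfolding alg_hom_def
  proof (intro conjI ballI rm)
    show "sq R A M \<in> ring_hom A (Sym R A M)"
    proof (rule ring_hom_memI)
      fix x y assume xy: "x \<in> carrier A" "y \<in> carrier A"
      have "?c (Var (SA (x \<otimes>\<^bsub>A\<^esub> y))) = ?c (Mul (Var (SA x)) (Var (SA y)))"
        by (rule sym_rel_eq[OF R A M]) (auto simp: sym_rel_def hom_rel_def xy)
      then show "sq R A M (x \<otimes>\<^bsub>A\<^esub> y) = sq R A M x \<otimes>\<^bsub>Sym R A M\<^esub> sq R A M y"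
        using xy by (simp add: sq_eq Sym_eq pres_mult)
      have "?c (Var (SA (x \<oplus>\<^bsub>A\<^esub> y))) = ?c (Add (Var (SA x)) (Var (SA y)))"
        by (rule sym_rel_eq[OF R A M]) (auto simp: sym_rel_def hom_rel_def xy)
      then show "sq R A M (x \<oplus>\<^bsub>A\<^esub> y) = sq R A M x \<oplus>\<^bsub>Sym R A M\<^esub> sq R A M y"
        using xy by (simp add: sq_eq Sym_eq pres_add)
    next
      show "sq R A M \<one>\<^bsub>A\<^esub> = \<one>\<^bsub>Sym R A M\<^esub>"
        using rm[of "\<one>\<^bsub>R\<^esub>"] is_alg_one[OF A] is_alg_one[OF Sym_is_alg[OF R]] by simp
    qed (simp add: sq_closed)
  qed
qed

lemma sj_add:
  assumes R: "cring R" and A: "is_alg R A" and M: "module A M" and mm: "m \<in> carrier M" "m' \<in> carrier M"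
  shows "sj R A M (m \<oplus>\<^bsub>M\<^esub> m') = sj R A M m \<oplus>\<^bsub>Sym R A M\<^esub> sj R A M m'"
proof -
  interpret M: module A M by fact
  have "pclass R (sgens A M) (sym_rel R A M) (Var (SM (m \<oplus>\<^bsub>M\<^esub> m'))) = pclass R (sgens A M) (sym_rel R A M) (Add (Var (SM m)) (Var (SM m')))"
    by (rule sym_rel_eq[OF R A M]) (auto simp: sym_rel_def mm)
  then show ?thesis using mm by (simp add: sj_eq Sym_eq pres_add)
qed

lemma sj_smult:
  assumes R: "cring R" and A: "is_alg R A" and M: "module A M" and am: "a \<in> carrier A" "m \<in> carrier M"
  shows "sj R A M (a \<odot>\<^bsub>M\<^esub> m) = sq R A M a \<otimes>\<^bsub>Sym R A M\<^esub> sj R A M m"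
proof -
  interpret M: module A M by fact
  have "pclass R (sgens A M) (sym_rel R A M) (Var (SM (a \<odot>\<^bsub>M\<^esub> m))) = pclass R (sgens A M) (sym_rel R A M) (Mul (Var (SA a)) (Var (SM m)))"
    by (rule sym_rel_eq[OF R A M]) (auto simp: sym_rel_def am)
  then show ?thesis using am by (simp add: sj_eq sq_eq Sym_eq pres_mult)
qed

lemma Sym_induct[consumes 2, case_names sq sj rmap add mult neg]:
  assumes R: "cring R" and X: "X \<in> carrier (Sym R A M)"
    and sq: "\<And>a. a \<in> carrier A \<Longrightarrow> Q (sq R A M a)"
    and sj: "\<And>m. m \<in> carrier M \<Longrightarrow> Q (sj R A M m)"
    and rm: "\<And>r. r \<in> carrier R \<Longrightarrow> Q (rmap (Sym R A M) r)"
    and add: "\<And>X Y. X \<in> carrier (Sym R A M) \<Longrightarrow> Y \<in> carrier (Sym R A M) \<Longrightarrow> Q X \<Longrightarrow> Q Y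
        \<Longrightarrow> Q (X \<oplus>\<^bsub>Sym R A M\<^esub> Y)"
    and mult: "\<And>X Y. X \<in> carrier (Sym R A M) \<Longrightarrow> Y \<in> carrier (Sym R A M) \<Longrightarrow> Q X \<Longrightarrow> Q Y
        \<Longrightarrow> Q (X \<otimes>\<^bsub>Sym R A M\<^esub> Y)"
    and neg: "\<And>X. X \<in> carrier (Sym R A M) \<Longrightarrow> Q X \<Longrightarrow> Q (\<ominus>\<^bsub>Sym R A M\<^esub> X)"
  shows "Q X"
proof -
  have X': "X \<in> carrier (pres R (sgens A M) (sym_rel R A M))" using X by (simp add: Sym_eq)
  show ?thesis using R X'
  proof (induction rule: pres_induct)
    case (gen x) then show ?case using sq sj by (cases x) auto
  qed (use rm add mult neg in \<open>simp_all add: Sym_eq\<close>)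
qed

lemma Sym_univ:
  assumes R: "cring R" and A: "is_alg R A" and M: "module A M" and C: "is_alg R C"
    and g: "alg_hom R A C g" and \<mu>c: "\<And>m. m \<in> carrier M \<Longrightarrow> \<mu> m \<in> carrier C"
    and \<mu>a: "\<And>m m'. m \<in> carrier M \<Longrightarrow> m' \<in> carrier M \<Longrightarrow> \<mu> (m \<oplus>\<^bsub>M\<^esub> m') = \<mu> m \<oplus>\<^bsub>C\<^esub> \<mu> m'"
    and \<mu>s: "\<And>a m. a \<in> carrier A \<Longrightarrow> m \<in> carrier M \<Longrightarrow> \<mu> (a \<odot>\<^bsub>M\<^esub> m) = g a \<otimes>\<^bsub>C\<^esub> \<mu> m"
  shows "\<exists>f. alg_hom R (Sym R A M) C f \<and> (\<forall>a\<in>carrier A. f (sq R A M a) = g a)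
          \<and> (\<forall>m\<in>carrier M. f (sj R A M m) = \<mu> m)"
proof -
  interpret M: module A M by fact
  interpret C: cring C using is_algD[OF C] by simp
  interpret R: cring R by fact
  define \<phi> where "\<phi> x = (if x \<in> sgens A M then (case x of SA a \<Rightarrow> g a | SM m \<Rightarrow> \<mu> m) else \<zero>\<^bsub>C\<^esub>)" for x
  have phi: "\<phi> x \<in> carrier C" for x
    by (cases x) (auto simp: \<phi>_def alg_hom_closed[OF g] \<mu>c)
  have rel: "peval R C \<phi> p = peval R C \<phi> q" if "(p, q) \<in> sym_rel R A M" for p q
    using sym_rel_mem[OF that]
    by (auto simp: \<phi>_def alg_hom_add[OF g] alg_hom_mult[OF g] alg_hom_rmap[OF g] is_alg_rmap_closed[OF A]
        \<mu>a \<mu>s)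
  obtain f where f: "alg_hom R (pres R (sgens A M) (sym_rel R A M)) C f"
    "\<forall>e. pwf R (sgens A M) e \<longrightarrow> f (pclass R (sgens A M) (sym_rel R A M) e) = peval R C \<phi> e"
    using pres_univ[OF R C phi rel] by blast
  show ?thesis
    by (rule exI[of _ f]) (use f in \<open>auto simp: Sym_eq sq_eq sj_eq \<phi>_def\<close>)
qed

lemma Sym_deriv:
  assumes R: "cring R" and A: "is_alg R A" and M: "module A M" and C: "is_alg R C"
    and g: "alg_hom R (Sym R A M) C g" and d0: "rderiv R A C (\<lambda>a. g (sq R A M a)) d0"
    and \<mu>c: "\<And>m. m \<in> carrier M \<Longrightarrow> \<mu> m \<in> carrier C"
    and \<mu>a: "\<And>m m'. m \<in> carrier M \<Longrightarrow> m' \<in> carrier M \<Longrightarrow> \<mu> (m \<oplus>\<^bsub>M\<^esub> m') = \<mu> m \<oplus>\<^bsub>C\<^esub> \<mu> m'"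
    and \<mu>s: "\<And>a m. a \<in> carrier A \<Longrightarrow> m \<in> carrier M \<Longrightarrow>
        \<mu> (a \<odot>\<^bsub>M\<^esub> m) = g (sq R A M a) \<otimes>\<^bsub>C\<^esub> \<mu> m \<oplus>\<^bsub>C\<^esub> g (sj R A M m) \<otimes>\<^bsub>C\<^esub> d0 a"
  shows "\<exists>\<delta>. rderiv R (Sym R A M) C g \<delta> \<and> (\<forall>a\<in>carrier A. \<delta> (sq R A M a) = d0 a)
          \<and> (\<forall>m\<in>carrier M. \<delta> (sj R A M m) = \<mu> m)"
proof -
  interpret M: module A M by fact
  interpret C: cring C using is_algD[OF C] by simp
  interpret R: cring R by fact
  define \<psi> where "\<psi> x = (if x \<in> sgens A M then (case x of SA a \<Rightarrow> d0 a | SM m \<Rightarrow> \<mu> m) else \<zero>\<^bsub>C\<^esub>)" for x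
  have psi: "\<psi> x \<in> carrier C" for x
    by (cases x) (auto simp: \<psi>_def rderiv_closed[OF d0] \<mu>c)
  have gc: "\<And>x. x \<in> carrier (Sym R A M) \<Longrightarrow> g x \<in> carrier C" using alg_hom_closed[OF g] .
  have rel: "pdeval R C (\<lambda>x. if x \<in> sgens A M then g (gen (pres R (sgens A M) (sym_rel R A M)) x) else \<zero>\<^bsub>C\<^esub>) \<psi> p
      = pdeval R C (\<lambda>x. if x \<in> sgens A M then g (gen (pres R (sgens A M) (sym_rel R A M)) x) else \<zero>\<^bsub>C\<^esub>) \<psi> q"
    if "(p, q) \<in> sym_rel R A M" for p q
    using sym_rel_mem[OF that]
    by (auto simp: \<psi>_def is_alg_rmap_closed[OF A] rderiv_add[OF d0] rderiv_mult[OF d0] rderiv_rmap[OF d0]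
        \<mu>a \<mu>s gc sq_closed sj_closed rderiv_closed[OF d0] \<mu>c C.cring_simprules)
  obtain \<delta> where d: "rderiv R (pres R (sgens A M) (sym_rel R A M)) C g \<delta>"
    "\<forall>e. pwf R (sgens A M) e \<longrightarrow> \<delta> (pclass R (sgens A M) (sym_rel R A M) e) =
       pdeval R C (\<lambda>x. if x \<in> sgens A M then g (gen (pres R (sgens A M) (sym_rel R A M)) x) else \<zero>\<^bsub>C\<^esub>) \<psi> e"
    using pres_deriv[OF R C g[unfolded Sym_eq] psi sym_rel_wf[OF R A M] rel] by blast
  show ?thesis
    by (rule exI[of _ \<delta>]) (use d in \<open>auto simp: Sym_eq sq_eq sj_eq \<psi>_def\<close>)
qed

lemma sym_tan_hom_eq:
  assumes R: "cring R" and C: "is_alg R C"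
    and F1: "alg_hom R (Tan R (Sym R A M)) C F1" and F2: "alg_hom R (Tan R (Sym R A M)) C F2"
    and eqa: "\<And>a. a \<in> carrier A \<Longrightarrow> F1 (tp R (Sym R A M) (sq R A M a)) = F2 (tp R (Sym R A M) (sq R A M a))
                           \<and> F1 (td R (Sym R A M) (sq R A M a)) = F2 (td R (Sym R A M) (sq R A M a))"
    and eqm: "\<And>m. m \<in> carrier M \<Longrightarrow> F1 (tp R (Sym R A M) (sj R A M m)) = F2 (tp R (Sym R A M) (sj R A M m))
                           \<and> F1 (td R (Sym R A M) (sj R A M m)) = F2 (td R (Sym R A M) (sj R A M m))"
    and X: "X \<in> carrier (Tan R (Sym R A M))"
  shows "F1 X = F2 X"
  by (rule tan_pres_hom_eq[OF R C Sym_eq F1 F2 _ X])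
     (use eqa eqm in \<open>auto simp: sgens_def sq_def[symmetric] sj_def[symmetric]\<close>)

section \<open>Tensor products\<close>

definition tsgens :: "('x, 'r) ralg \<Rightarrow> ('y, 'r) ralg \<Rightarrow> ('x, 'y) tsgen set" where
  "tsgens X Y = TL ` carrier X \<union> TR ` carrier Y"

definition tens_rel where
  "tens_rel R X Y C f g = hom_rel R X TL \<union> hom_rel R Y TR \<union> {(Var (TL (f c)), Var (TR (g c))) | c. c \<in> C}"

lemma tens_eq: "tens R X Y C f g = pres R (tsgens X Y) (tens_rel R X Y C f g)"
  by (simp add: tens_def tsgens_def tens_rel_def)

lemma tsgens_simps[simp]: "TL x \<in> tsgens X Y \<longleftrightarrow> x \<in> carrier X" "TR y \<in> tsgens X Y \<longleftrightarrow> y \<in> carrier Y"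
  by (auto simp: tsgens_def)

lemma tens_is_alg: "cring R \<Longrightarrow> is_alg R (tens R X Y C f g)"
  by (simp add: tens_eq pres_is_alg)

lemma tens_rel_mem:
  assumes "(p, q) \<in> tens_rel R X Y C f g"
  shows "(\<exists>b b'. b \<in> carrier X \<and> b' \<in> carrier X \<and> p = Var (TL (b \<oplus>\<^bsub>X\<^esub> b')) \<and> q = Add (Var (TL b)) (Var (TL b')))
   \<or> (\<exists>b b'. b \<in> carrier X \<and> b' \<in> carrier X \<and> p = Var (TL (b \<otimes>\<^bsub>X\<^esub> b')) \<and> q = Mul (Var (TL b)) (Var (TL b')))
   \<or> (\<exists>r. r \<in> carrier R \<and> p = Var (TL (rmap X r)) \<and> q = Const r)
   \<or> (\<exists>b b'. b \<in> carrier Y \<and> b' \<in> carrier Y \<and> p = Var (TR (b \<oplus>\<^bsub>Y\<^esub> b')) \<and> q = Add (Var (TR b)) (Var (TR b')))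
   \<or> (\<exists>b b'. b \<in> carrier Y \<and> b' \<in> carrier Y \<and> p = Var (TR (b \<otimes>\<^bsub>Y\<^esub> b')) \<and> q = Mul (Var (TR b)) (Var (TR b')))
   \<or> (\<exists>r. r \<in> carrier R \<and> p = Var (TR (rmap Y r)) \<and> q = Const r)
   \<or> (\<exists>c. c \<in> C \<and> p = Var (TL (f c)) \<and> q = Var (TR (g c)))"
  using assms unfolding tens_rel_def hom_rel_def by blast

lemma tens_rel_wf:
  assumes R: "cring R" and X: "is_alg R X" and Y: "is_alg R Y"
    and fg: "\<And>c. c \<in> C \<Longrightarrow> f c \<in> carrier X \<and> g c \<in> carrier Y"
    and pq: "(p, q) \<in> tens_rel R X Y C f g"
  shows "pwf R (tsgens X Y) p \<and> pwf R (tsgens X Y) q"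
proof -
  interpret X: cring X using is_algD[OF X] by simp
  interpret Y: cring Y using is_algD[OF Y] by simp
  show ?thesis using tens_rel_mem[OF pq] fg by (auto simp: is_alg_rmap_closed[OF X] is_alg_rmap_closed[OF Y])
qed

lemma gen_tens:
  "x \<in> tsgens X Y \<Longrightarrow> gen (tens R X Y C f g) x = pclass R (tsgens X Y) (tens_rel R X Y C f g) (Var x)"
  by (simp add: tens_eq gen_eq)

lemma gen_tens_closed:
  "x \<in> tsgens X Y \<Longrightarrow> gen (tens R X Y C f g) x \<in> carrier (tens R X Y C f g)"
  by (simp add: tens_eq gen_in_carrier)

lemma tens_relD:
  assumes R: "cring R" and X: "is_alg R X" and Y: "is_alg R Y"
    and fg: "\<And>c. c \<in> C \<Longrightarrow> f c \<in> carrier X \<and> g c \<in> carrier Y"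
    and pq: "(p, q) \<in> tens_rel R X Y C f g"
  shows "pclass R (tsgens X Y) (tens_rel R X Y C f g) p = pclass R (tsgens X Y) (tens_rel R X Y C f g) q"
  using pres_rel[OF pq] tens_rel_wf[where C=C and f=f and g=g, OF R X Y fg pq] by simp

lemma tl_hom:
  assumes R: "cring R" and X: "is_alg R X" and Y: "is_alg R Y"
    and fg: "\<And>c. c \<in> C \<Longrightarrow> f c \<in> carrier X \<and> g c \<in> carrier Y"
  shows "alg_hom R X (tens R X Y C f g) (\<lambda>x. gen (tens R X Y C f g) (TL x))"
proof -
  interpret X: cring X using is_algD[OF X] by simp
  interpret R: cring R by fact
  let ?c = "pclass R (tsgens X Y) (tens_rel R X Y C f g)"
  let ?P = "tens R X Y C f g"
  have rm: "gen ?P (TL (rmap X r)) = rmap ?P r" if "r \<in> carrier R" for r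
  proof -
    have "gen ?P (TL (rmap X r)) = ?c (Var (TL (rmap X r)))" by (simp add: gen_tens is_alg_rmap_closed[OF X] that)
    also have "\<dots> = ?c (Const r)"
      by (rule tens_relD[where C=C and f=f and g=g, OF R X Y fg]) (auto simp: tens_rel_def hom_rel_def that)
    finally show ?thesis by (simp add: tens_eq pres_rmap)
  qed
  show ?thesis unfolding alg_hom_def
  proof (intro conjI ballI rm)
    show "(\<lambda>x. gen ?P (TL x)) \<in> ring_hom X ?P"
    proof (rule ring_hom_memI)
      fix x y assume xy: "x \<in> carrier X" "y \<in> carrier X"
      have "?c (Var (TL (x \<otimes>\<^bsub>X\<^esub> y))) = ?c (Mul (Var (TL x)) (Var (TL y)))"
        by (rule tens_relD[where C=C and f=f and g=g, OF R X Y fg]) (auto simp: tens_rel_def hom_rel_def xy)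
      then show "gen ?P (TL (x \<otimes>\<^bsub>X\<^esub> y)) = gen ?P (TL x) \<otimes>\<^bsub>?P\<^esub> gen ?P (TL y)"
        using xy by (simp add: tens_eq gen_eq pres_mult)
      have "?c (Var (TL (x \<oplus>\<^bsub>X\<^esub> y))) = ?c (Add (Var (TL x)) (Var (TL y)))"
        by (rule tens_relD[where C=C and f=f and g=g, OF R X Y fg]) (auto simp: tens_rel_def hom_rel_def xy)
      then show "gen ?P (TL (x \<oplus>\<^bsub>X\<^esub> y)) = gen ?P (TL x) \<oplus>\<^bsub>?P\<^esub> gen ?P (TL y)"
        using xy by (simp add: tens_eq gen_eq pres_add)
    next
      show "gen ?P (TL \<one>\<^bsub>X\<^esub>) = \<one>\<^bsub>?P\<^esub>"
        using rm[of "\<one>\<^bsub>R\<^esub>"] is_alg_one[OF X] is_alg_one[OF tens_is_alg[OF R]] by simp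
    qed (simp add: gen_tens_closed)
  qed
qed

lemma tr_hom:
  assumes R: "cring R" and X: "is_alg R X" and Y: "is_alg R Y"
    and fg: "\<And>c. c \<in> C \<Longrightarrow> f c \<in> carrier X \<and> g c \<in> carrier Y"
  shows "alg_hom R Y (tens R X Y C f g) (\<lambda>y. gen (tens R X Y C f g) (TR y))"
proof -
  interpret Y: cring Y using is_algD[OF Y] by simp
  interpret R: cring R by fact
  let ?c = "pclass R (tsgens X Y) (tens_rel R X Y C f g)"
  let ?P = "tens R X Y C f g"
  have rm: "gen ?P (TR (rmap Y r)) = rmap ?P r" if "r \<in> carrier R" for r
  proof -
    have "gen ?P (TR (rmap Y r)) = ?c (Var (TR (rmap Y r)))" by (simp add: gen_tens is_alg_rmap_closed[OF Y] that)
    also have "\<dots> = ?c (Const r)"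
      by (rule tens_relD[where C=C and f=f and g=g, OF R X Y fg]) (auto simp: tens_rel_def hom_rel_def that)
    finally show ?thesis by (simp add: tens_eq pres_rmap)
  qed
  show ?thesis unfolding alg_hom_def
  proof (intro conjI ballI rm)
    show "(\<lambda>x. gen ?P (TR x)) \<in> ring_hom Y ?P"
    proof (rule ring_hom_memI)
      fix x y assume xy: "x \<in> carrier Y" "y \<in> carrier Y"
      have "?c (Var (TR (x \<otimes>\<^bsub>Y\<^esub> y))) = ?c (Mul (Var (TR x)) (Var (TR y)))"
        by (rule tens_relD[where C=C and f=f and g=g, OF R X Y fg]) (auto simp: tens_rel_def hom_rel_def xy)
      then show "gen ?P (TR (x \<otimes>\<^bsub>Y\<^esub> y)) = gen ?P (TR x) \<otimes>\<^bsub>?P\<^esub> gen ?P (TR y)"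
        using xy by (simp add: tens_eq gen_eq pres_mult)
      have "?c (Var (TR (x \<oplus>\<^bsub>Y\<^esub> y))) = ?c (Add (Var (TR x)) (Var (TR y)))"
        by (rule tens_relD[where C=C and f=f and g=g, OF R X Y fg]) (auto simp: tens_rel_def hom_rel_def xy)
      then show "gen ?P (TR (x \<oplus>\<^bsub>Y\<^esub> y)) = gen ?P (TR x) \<oplus>\<^bsub>?P\<^esub> gen ?P (TR y)"
        using xy by (simp add: tens_eq gen_eq pres_add)
    next
      show "gen ?P (TR \<one>\<^bsub>Y\<^esub>) = \<one>\<^bsub>?P\<^esub>"
        using rm[of "\<one>\<^bsub>R\<^esub>"] is_alg_one[OF Y] is_alg_one[OF tens_is_alg[OF R]] by simp
    qed (simp add: gen_tens_closed)
  qed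
qed

lemma tl_tr:
  assumes R: "cring R" and X: "is_alg R X" and Y: "is_alg R Y"
    and fg: "\<And>c. c \<in> C \<Longrightarrow> f c \<in> carrier X \<and> g c \<in> carrier Y" and c: "c \<in> C"
  shows "gen (tens R X Y C f g) (TL (f c)) = gen (tens R X Y C f g) (TR (g c))"
proof -
  have "(Var (TL (f c)), Var (TR (g c))) \<in> tens_rel R X Y C f g" using c by (auto simp: tens_rel_def)
  from tens_relD[where C=C and f=f and g=g, OF R X Y fg this] show ?thesis using fg[OF c] by (simp add: gen_tens)
qed

lemma tens_univ:
  assumes R: "cring R" and X: "is_alg R X" and Y: "is_alg R Y" and D: "is_alg R D"
    and fg: "\<And>c. c \<in> C \<Longrightarrow> f c \<in> carrier X \<and> g c \<in> carrier Y"
    and \<phi>: "alg_hom R X D \<phi>" and \<psi>: "alg_hom R Y D \<psi>"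
    and comp: "\<And>c. c \<in> C \<Longrightarrow> \<phi> (f c) = \<psi> (g c)"
  shows "\<exists>F. alg_hom R (tens R X Y C f g) D F \<and> F \<in> extensional (carrier (tens R X Y C f g))
      \<and> (\<forall>x\<in>carrier X. F (gen (tens R X Y C f g) (TL x)) = \<phi> x)
      \<and> (\<forall>y\<in>carrier Y. F (gen (tens R X Y C f g) (TR y)) = \<psi> y)"
proof -
  interpret D: cring D using is_algD[OF D] by simp
  interpret X: cring X using is_algD[OF X] by simp
  interpret Y: cring Y using is_algD[OF Y] by simp
  interpret R: cring R by fact
  define \<chi> where "\<chi> z = (if z \<in> tsgens X Y then (case z of TL x \<Rightarrow> \<phi> x | TR y \<Rightarrow> \<psi> y) else \<zero>\<^bsub>D\<^esub>)" for z
  have chi: "\<chi> z \<in> carrier D" for z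
    by (cases z) (auto simp: \<chi>_def alg_hom_closed[OF \<phi>] alg_hom_closed[OF \<psi>])
  have rel: "peval R D \<chi> p = peval R D \<chi> q" if "(p, q) \<in> tens_rel R X Y C f g" for p q
    using tens_rel_mem[OF that] fg
    apply (elim disjE exE conjE)
    by (simp_all add: \<chi>_def alg_hom_add[OF \<phi>] alg_hom_mult[OF \<phi>] alg_hom_rmap[OF \<phi>] is_alg_rmap_closed[OF X]
        alg_hom_add[OF \<psi>] alg_hom_mult[OF \<psi>] alg_hom_rmap[OF \<psi>] is_alg_rmap_closed[OF Y]
        comp is_alg_zero[OF R D])
  obtain F where F: "alg_hom R (pres R (tsgens X Y) (tens_rel R X Y C f g)) D F"
    "F \<in> extensional (carrier (pres R (tsgens X Y) (tens_rel R X Y C f g)))"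
    "\<forall>e. pwf R (tsgens X Y) e \<longrightarrow> F (pclass R (tsgens X Y) (tens_rel R X Y C f g) e) = peval R D \<chi> e"
    using pres_univ[OF R D chi rel] by blast
  show ?thesis
    by (rule exI[of _ F]) (use F in \<open>auto simp: tens_eq gen_eq \<chi>_def\<close>)
qed



lemma tens_hom_eq:
  assumes R: "cring R" and D: "is_alg R D"
    and F1: "alg_hom R (tens R X Y C f g) D F1" and F2: "alg_hom R (tens R X Y C f g) D F2"
    and eqx: "\<And>x. x \<in> carrier X \<Longrightarrow> F1 (gen (tens R X Y C f g) (TL x)) = F2 (gen (tens R X Y C f g) (TL x))"
    and eqy: "\<And>y. y \<in> carrier Y \<Longrightarrow> F1 (gen (tens R X Y C f g) (TR y)) = F2 (gen (tens R X Y C f g) (TR y))"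
    and Z: "Z \<in> carrier (tens R X Y C f g)"
  shows "F1 Z = F2 Z"
proof -
  have "F1 (gen (pres R (tsgens X Y) (tens_rel R X Y C f g)) z) = F2 (gen (pres R (tsgens X Y) (tens_rel R X Y C f g)) z)"
    if "z \<in> tsgens X Y" for z
    using that eqx eqy by (cases z) (simp_all add: tens_eq[symmetric])
  then show ?thesis using pres_hom_eq[OF R D F1[unfolded tens_eq] F2[unfolded tens_eq] _ Z[unfolded tens_eq]] by blast
qed

lemma tens_deriv:
  assumes R: "cring R" and X: "is_alg R X" and Y: "is_alg R Y" and D: "is_alg R D"
    and fg: "\<And>c. c \<in> C \<Longrightarrow> f c \<in> carrier X \<and> g c \<in> carrier Y"
    and G: "alg_hom R (tens R X Y C f g) D G"
    and d1: "rderiv R X D (\<lambda>x. G (gen (tens R X Y C f g) (TL x))) d1"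
    and d2: "rderiv R Y D (\<lambda>y. G (gen (tens R X Y C f g) (TR y))) d2"
    and comp: "\<And>c. c \<in> C \<Longrightarrow> d1 (f c) = d2 (g c)"
  shows "\<exists>\<delta>. rderiv R (tens R X Y C f g) D G \<delta>
      \<and> (\<forall>x\<in>carrier X. \<delta> (gen (tens R X Y C f g) (TL x)) = d1 x)
      \<and> (\<forall>y\<in>carrier Y. \<delta> (gen (tens R X Y C f g) (TR y)) = d2 y)"
proof -
  interpret D: cring D using is_algD[OF D] by simp
  interpret X: cring X using is_algD[OF X] by simp
  interpret Y: cring Y using is_algD[OF Y] by simp
  interpret R: cring R by fact
  let ?P = "pres R (tsgens X Y) (tens_rel R X Y C f g)"
  define \<chi> where "\<chi> z = (if z \<in> tsgens X Y then (case z of TL x \<Rightarrow> d1 x | TR y \<Rightarrow> d2 y) else \<zero>\<^bsub>D\<^esub>)" for z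
  have chi: "\<chi> z \<in> carrier D" for z
    by (cases z) (auto simp: \<chi>_def rderiv_closed[OF d1] rderiv_closed[OF d2])
  have Gc: "\<And>z. z \<in> carrier (tens R X Y C f g) \<Longrightarrow> G z \<in> carrier D" using alg_hom_closed[OF G] .
  have gP: "gen ?P z = gen (tens R X Y C f g) z" for z by (simp add: tens_eq)
  have rel: "pdeval R D (\<lambda>z. if z \<in> tsgens X Y then G (gen ?P z) else \<zero>\<^bsub>D\<^esub>) \<chi> p
      = pdeval R D (\<lambda>z. if z \<in> tsgens X Y then G (gen ?P z) else \<zero>\<^bsub>D\<^esub>) \<chi> q"
    if "(p, q) \<in> tens_rel R X Y C f g" for p q
    using tens_rel_mem[OF that] fg
    apply (elim disjE exE conjE)
    by (simp_all add: \<chi>_def gP is_alg_rmap_closed[OF X] is_alg_rmap_closed[OF Y]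
        rderiv_add[OF d1] rderiv_mult[OF d1] rderiv_rmap[OF d1]
        rderiv_add[OF d2] rderiv_mult[OF d2] rderiv_rmap[OF d2] comp)
  obtain \<delta> where d: "rderiv R ?P D G \<delta>"
    "\<forall>e. pwf R (tsgens X Y) e \<longrightarrow> \<delta> (pclass R (tsgens X Y) (tens_rel R X Y C f g) e) =
       pdeval R D (\<lambda>z. if z \<in> tsgens X Y then G (gen ?P z) else \<zero>\<^bsub>D\<^esub>) \<chi> e"
    using pres_deriv[OF R D G[unfolded tens_eq] chi tens_rel_wf[where C=C and f=f and g=g, OF R X Y fg] rel] by blast
  show ?thesis
    by (rule exI[of _ \<delta>]) (use d in \<open>auto simp: tens_eq gen_eq \<chi>_def\<close>)
qed

lemma tensmap_props:
  assumes R: "cring R" and X: "is_alg R X" and Y: "is_alg R Y"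
    and fg: "\<And>c. c \<in> C \<Longrightarrow> f c \<in> carrier X \<and> g c \<in> carrier Y"
    and X': "is_alg R X'" and Y': "is_alg R Y'"
    and fg': "\<And>c. c \<in> C' \<Longrightarrow> f' c \<in> carrier X' \<and> g' c \<in> carrier Y'"
    and \<phi>: "alg_hom R X X' \<phi>" and \<psi>: "alg_hom R Y Y' \<psi>"
    and comp: "\<And>c. c \<in> C \<Longrightarrow> gen (tens R X' Y' C' f' g') (TL (\<phi> (f c))) = gen (tens R X' Y' C' f' g') (TR (\<psi> (g c)))"
  shows "alg_hom R (tens R X Y C f g) (tens R X' Y' C' f' g') (tensmap R (tens R X Y C f g) (tens R X' Y' C' f' g') X Y \<phi> \<psi>)"
    "\<And>x. x \<in> carrier X \<Longrightarrow> tensmap R (tens R X Y C f g) (tens R X' Y' C' f' g') X Y \<phi> \<psi> (gen (tens R X Y C f g) (TL x))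
        = gen (tens R X' Y' C' f' g') (TL (\<phi> x))"
    "\<And>y. y \<in> carrier Y \<Longrightarrow> tensmap R (tens R X Y C f g) (tens R X' Y' C' f' g') X Y \<phi> \<psi> (gen (tens R X Y C f g) (TR y))
        = gen (tens R X' Y' C' f' g') (TR (\<psi> y))"
proof -
  let ?P = "tens R X Y C f g" and ?P' = "tens R X' Y' C' f' g'"
  have h1: "alg_hom R X ?P' (\<lambda>x. gen ?P' (TL (\<phi> x)))" by (rule alg_hom_comp'[OF \<phi> tl_hom[where C=C' and f=f' and g=g', OF R X' Y' fg']])
  have h2: "alg_hom R Y ?P' (\<lambda>y. gen ?P' (TR (\<psi> y)))" by (rule alg_hom_comp'[OF \<psi> tr_hom[where C=C' and f=f' and g=g', OF R X' Y' fg']])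
  obtain F where F: "alg_hom R ?P ?P' F" "F \<in> extensional (carrier ?P)"
      "\<forall>x\<in>carrier X. F (gen ?P (TL x)) = gen ?P' (TL (\<phi> x))"
      "\<forall>y\<in>carrier Y. F (gen ?P (TR y)) = gen ?P' (TR (\<psi> y))"
    using tens_univ[where C=C and f=f and g=g, OF R X Y tens_is_alg[OF R] fg h1 h2 comp] by blast
  have "tensmap R ?P ?P' X Y \<phi> \<psi> = F"
    unfolding tensmap_def
  proof (rule the_map_eq[OF F(1,2)])
    show "(\<forall>x\<in>carrier X. F (gen ?P (TL x)) = gen ?P' (TL (\<phi> x))) \<and> (\<forall>y\<in>carrier Y. F (gen ?P (TR y)) = gen ?P' (TR (\<psi> y)))"
      using F(3,4) by blast
  next
    fix G assume G: "alg_hom R ?P ?P' G" "G \<in> extensional (carrier ?P)"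
      "(\<forall>x\<in>carrier X. G (gen ?P (TL x)) = gen ?P' (TL (\<phi> x))) \<and> (\<forall>y\<in>carrier Y. G (gen ?P (TR y)) = gen ?P' (TR (\<psi> y)))"
    show "\<forall>z\<in>carrier ?P. G z = F z"
    proof
      fix z assume z: "z \<in> carrier ?P"
      show "G z = F z"
        by (rule tens_hom_eq[OF R tens_is_alg[OF R] G(1) F(1) _ _ z]) (use G(3) F(3,4) in simp_all)
    qed
  qed
  then show "alg_hom R ?P ?P' (tensmap R ?P ?P' X Y \<phi> \<psi>)"
    "\<And>x. x \<in> carrier X \<Longrightarrow> tensmap R ?P ?P' X Y \<phi> \<psi> (gen ?P (TL x)) = gen ?P' (TL (\<phi> x))"
    "\<And>y. y \<in> carrier Y \<Longrightarrow> tensmap R ?P ?P' X Y \<phi> \<psi> (gen ?P (TR y)) = gen ?P' (TR (\<psi> y))"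
    using F by auto
qed

lemma etens_one_right:
  assumes R: "cring R" and X: "is_alg R X" and Y: "is_alg R Y"
    and fg: "\<And>c. c \<in> C \<Longrightarrow> f c \<in> carrier X \<and> g c \<in> carrier Y" and x: "x \<in> carrier X"
  shows "etens (tens R X Y C f g) x \<one>\<^bsub>Y\<^esub> = gen (tens R X Y C f g) (TL x)"
proof -
  interpret P: cring "tens R X Y C f g" using is_algD[OF tens_is_alg[OF R, of X Y C f g]] by simp
  show ?thesis using alg_hom_one[OF tr_hom[where C=C and f=f and g=g, OF R X Y fg]] x
    by (simp add: etens_def gen_tens_closed)
qed

lemma etens_one_left:
  assumes R: "cring R" and X: "is_alg R X" and Y: "is_alg R Y"
    and fg: "\<And>c. c \<in> C \<Longrightarrow> f c \<in> carrier X \<and> g c \<in> carrier Y" and y: "y \<in> carrier Y"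
  shows "etens (tens R X Y C f g) \<one>\<^bsub>X\<^esub> y = gen (tens R X Y C f g) (TR y)"
proof -
  interpret P: cring "tens R X Y C f g" using is_algD[OF tens_is_alg[OF R, of X Y C f g]] by simp
  show ?thesis using alg_hom_one[OF tl_hom[where C=C and f=f and g=g, OF R X Y fg]] y
    by (simp add: etens_def gen_tens_closed)
qed

lemma zmap_props:
  assumes R: "cring R" and B: "is_alg R B"
  shows "alg_hom R (Tan R B) B (zmap R B)"
    "\<And>b. b \<in> carrier B \<Longrightarrow> zmap R B (tp R B b) = b"
    "\<And>b. b \<in> carrier B \<Longrightarrow> zmap R B (td R B b) = \<zero>\<^bsub>B\<^esub>"
  using tmap_on_props[OF R B B alg_hom_id rderiv_zero_fun[OF B]] unfolding zmap_def by auto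

lemma lift_props:
  assumes R: "cring R" and B: "is_alg R B"
  shows "alg_hom R (Tan R (Tan R B)) (Tan R B) (lift R B)"
    "\<And>b. b \<in> carrier B \<Longrightarrow> lift R B (tp R (Tan R B) (tp R B b)) = tp R B b"
    "\<And>b. b \<in> carrier B \<Longrightarrow> lift R B (tp R (Tan R B) (td R B b)) = \<zero>\<^bsub>Tan R B\<^esub>"
    "\<And>b. b \<in> carrier B \<Longrightarrow> lift R B (td R (Tan R B) (tp R B b)) = \<zero>\<^bsub>Tan R B\<^esub>"
    "\<And>b. b \<in> carrier B \<Longrightarrow> lift R B (td R (Tan R B) (td R B b)) = td R B b"
proof -
  interpret T: cring "Tan R B" using Tan_cring[OF R] .
  have TB: "is_alg R (Tan R B)" by (rule Tan_is_alg[OF R])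
  have f1: "alg_hom R B (Tan R B) (tp R B)" by (rule tp_hom[OF R B])
  have f2: "rderiv R B (Tan R B) (tp R B) (\<lambda>b. \<zero>\<^bsub>Tan R B\<^esub>)"
    by (rule rderiv_zero_fun[OF TB]) (simp add: tp_closed)
  have f4c: "\<And>b. b \<in> carrier B \<Longrightarrow> td R B b \<in> carrier (Tan R B)" by (rule td_closed)
  have f4a: "\<And>b b'. b \<in> carrier B \<Longrightarrow> b' \<in> carrier B \<Longrightarrow> td R B (b \<oplus>\<^bsub>B\<^esub> b') = td R B b \<oplus>\<^bsub>Tan R B\<^esub> td R B b'"
    by (rule rderiv_add[OF td_deriv[OF R B]])
  have f4m: "td R B (b \<otimes>\<^bsub>B\<^esub> b') =
        tp R B b \<otimes>\<^bsub>Tan R B\<^esub> td R B b' \<oplus>\<^bsub>Tan R B\<^esub> \<zero>\<^bsub>Tan R B\<^esub> \<otimes>\<^bsub>Tan R B\<^esub> \<zero>\<^bsub>Tan R B\<^esub> \<oplus>\<^bsub>Tan R B\<^esub>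
        (tp R B b' \<otimes>\<^bsub>Tan R B\<^esub> td R B b \<oplus>\<^bsub>Tan R B\<^esub> \<zero>\<^bsub>Tan R B\<^esub> \<otimes>\<^bsub>Tan R B\<^esub> \<zero>\<^bsub>Tan R B\<^esub>)"
    if "b \<in> carrier B" "b' \<in> carrier B" for b b'
    using that by (simp add: rderiv_mult[OF td_deriv[OF R B]] tp_closed td_closed)
  have f4r: "\<And>r. r \<in> carrier R \<Longrightarrow> td R B (rmap B r) = \<zero>\<^bsub>Tan R B\<^esub>"
    by (rule rderiv_rmap[OF td_deriv[OF R B]])
  note ** = t2map_on_props[OF R B TB f1 f2 f2 f4c f4a f4m f4r]
  show "alg_hom R (Tan R (Tan R B)) (Tan R B) (lift R B)"
    "\<And>b. b \<in> carrier B \<Longrightarrow> lift R B (tp R (Tan R B) (tp R B b)) = tp R B b"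
    "\<And>b. b \<in> carrier B \<Longrightarrow> lift R B (tp R (Tan R B) (td R B b)) = \<zero>\<^bsub>Tan R B\<^esub>"
    "\<And>b. b \<in> carrier B \<Longrightarrow> lift R B (td R (Tan R B) (tp R B b)) = \<zero>\<^bsub>Tan R B\<^esub>"
    "\<And>b. b \<in> carrier B \<Longrightarrow> lift R B (td R (Tan R B) (td R B b)) = td R B b"
    using ** unfolding lift_def by auto
qed

lemma zmapT_props:
  assumes R: "cring R" and B: "is_alg R B"
  shows "alg_hom R (Tan R (Tan R B)) (Tan R B) (zmapT R B)"
    "\<And>b. b \<in> carrier B \<Longrightarrow> zmapT R B (tp R (Tan R B) (tp R B b)) = tp R B b"
    "\<And>b. b \<in> carrier B \<Longrightarrow> zmapT R B (tp R (Tan R B) (td R B b)) = td R B b"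
    "\<And>b. b \<in> carrier B \<Longrightarrow> zmapT R B (td R (Tan R B) (tp R B b)) = \<zero>\<^bsub>Tan R B\<^esub>"
    "\<And>b. b \<in> carrier B \<Longrightarrow> zmapT R B (td R (Tan R B) (td R B b)) = \<zero>\<^bsub>Tan R B\<^esub>"
proof -
  interpret T: cring "Tan R B" using Tan_cring[OF R] .
  have TB: "is_alg R (Tan R B)" by (rule Tan_is_alg[OF R])
  have f1: "alg_hom R B (Tan R B) (tp R B)" by (rule tp_hom[OF R B])
  have f2: "rderiv R B (Tan R B) (tp R B) (td R B)" by (rule td_deriv[OF R B])
  have f3: "rderiv R B (Tan R B) (tp R B) (\<lambda>b. \<zero>\<^bsub>Tan R B\<^esub>)"
    by (rule rderiv_zero_fun[OF TB]) (simp add: tp_closed)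
  have f4c: "\<And>b. b \<in> carrier B \<Longrightarrow> \<zero>\<^bsub>Tan R B\<^esub> \<in> carrier (Tan R B)" by simp
  have f4a: "\<And>b b'. b \<in> carrier B \<Longrightarrow> b' \<in> carrier B \<Longrightarrow> \<zero>\<^bsub>Tan R B\<^esub> = \<zero>\<^bsub>Tan R B\<^esub> \<oplus>\<^bsub>Tan R B\<^esub> \<zero>\<^bsub>Tan R B\<^esub>"
    by simp
  have f4m: "\<zero>\<^bsub>Tan R B\<^esub> =
        tp R B b \<otimes>\<^bsub>Tan R B\<^esub> \<zero>\<^bsub>Tan R B\<^esub> \<oplus>\<^bsub>Tan R B\<^esub> td R B b' \<otimes>\<^bsub>Tan R B\<^esub> \<zero>\<^bsub>Tan R B\<^esub> \<oplus>\<^bsub>Tan R B\<^esub>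
        (tp R B b' \<otimes>\<^bsub>Tan R B\<^esub> \<zero>\<^bsub>Tan R B\<^esub> \<oplus>\<^bsub>Tan R B\<^esub> td R B b \<otimes>\<^bsub>Tan R B\<^esub> \<zero>\<^bsub>Tan R B\<^esub>)"
    if "b \<in> carrier B" "b' \<in> carrier B" for b b'
    using that by (simp add: tp_closed td_closed)
  have f4r: "\<And>r. r \<in> carrier R \<Longrightarrow> \<zero>\<^bsub>Tan R B\<^esub> = \<zero>\<^bsub>Tan R B\<^esub>" by simp
  note ** = t2map_on_props[OF R B TB f1 f2 f3 f4c f4a f4m f4r]
  show "alg_hom R (Tan R (Tan R B)) (Tan R B) (zmapT R B)"
    "\<And>b. b \<in> carrier B \<Longrightarrow> zmapT R B (tp R (Tan R B) (tp R B b)) = tp R B b"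
    "\<And>b. b \<in> carrier B \<Longrightarrow> zmapT R B (tp R (Tan R B) (td R B b)) = td R B b"
    "\<And>b. b \<in> carrier B \<Longrightarrow> zmapT R B (td R (Tan R B) (tp R B b)) = \<zero>\<^bsub>Tan R B\<^esub>"
    "\<And>b. b \<in> carrier B \<Longrightarrow> zmapT R B (td R (Tan R B) (td R B b)) = \<zero>\<^bsub>Tan R B\<^esub>"
    using ** unfolding zmapT_def by auto
qed

lemma canflip_props:
  assumes R: "cring R" and B: "is_alg R B"
  shows "alg_hom R (Tan R (Tan R B)) (Tan R (Tan R B)) (canflip R B)"
    "\<And>b. b \<in> carrier B \<Longrightarrow> canflip R B (td R (Tan R B) (td R B b)) = td R (Tan R B) (td R B b)"
proof -
  let ?T = "Tan R B" and ?T2 = "Tan R (Tan R B)"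
  interpret T2: cring ?T2 using Tan_cring[OF R] .
  interpret T: cring ?T using Tan_cring[OF R] .
  have TB: "is_alg R ?T" by (rule Tan_is_alg[OF R])
  have f1: "alg_hom R B ?T2 (\<lambda>b. tp R ?T (tp R B b))"
    by (rule alg_hom_comp'[OF tp_hom[OF R B] tp_hom[OF R TB]])
  have f2: "rderiv R B ?T2 (\<lambda>b. tp R ?T (tp R B b)) (\<lambda>b. td R ?T (tp R B b))"
    by (rule rderiv_comp_hom[OF td_deriv[OF R TB] tp_hom[OF R B]])
  have f3: "rderiv R B ?T2 (\<lambda>b. tp R ?T (tp R B b)) (\<lambda>b. tp R ?T (td R B b))"
    by (rule hom_comp_rderiv[OF td_deriv[OF R B] tp_hom[OF R TB] TB Tan_is_alg[OF R] tp_closed])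
  have dd: "rderiv R ?T ?T2 (tp R ?T) (td R ?T)" by (rule td_deriv[OF R TB])
  have dB: "rderiv R B ?T (tp R B) (td R B)" by (rule td_deriv[OF R B])
  have cl: "\<And>b. b \<in> carrier B \<Longrightarrow> td R ?T (td R B b) \<in> carrier ?T2"
    by (simp add: td_closed)
  have a: "td R ?T (td R B (b \<oplus>\<^bsub>B\<^esub> b')) = td R ?T (td R B b) \<oplus>\<^bsub>?T2\<^esub> td R ?T (td R B b')"
    if "b \<in> carrier B" "b' \<in> carrier B" for b b'
    using that by (simp add: rderiv_add[OF dB] rderiv_add[OF dd] td_closed)
  have m: "td R ?T (td R B (b \<otimes>\<^bsub>B\<^esub> b')) =
     tp R ?T (tp R B b) \<otimes>\<^bsub>?T2\<^esub> td R ?T (td R B b') \<oplus>\<^bsub>?T2\<^esub> td R ?T (tp R B b') \<otimes>\<^bsub>?T2\<^esub> tp R ?T (td R B b)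
     \<oplus>\<^bsub>?T2\<^esub> (tp R ?T (tp R B b') \<otimes>\<^bsub>?T2\<^esub> td R ?T (td R B b) \<oplus>\<^bsub>?T2\<^esub> td R ?T (tp R B b) \<otimes>\<^bsub>?T2\<^esub> tp R ?T (td R B b'))"
    if b: "b \<in> carrier B" "b' \<in> carrier B" for b b'
  proof -
    have c: "tp R ?T (tp R B b) \<in> carrier ?T2" "tp R ?T (tp R B b') \<in> carrier ?T2"
      "tp R ?T (td R B b) \<in> carrier ?T2" "tp R ?T (td R B b') \<in> carrier ?T2"
      "td R ?T (tp R B b) \<in> carrier ?T2" "td R ?T (tp R B b') \<in> carrier ?T2"
      "td R ?T (td R B b) \<in> carrier ?T2" "td R ?T (td R B b') \<in> carrier ?T2"
      using b by (simp_all add: tp_closed td_closed)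
    show ?thesis
      using b c by (simp add: rderiv_mult[OF dB] rderiv_add[OF dd] rderiv_mult[OF dd] tp_closed td_closed
          T.m_closed T2.a_ac T2.m_ac)
  qed
  have r: "\<And>r. r \<in> carrier R \<Longrightarrow> td R ?T (td R B (rmap B r)) = \<zero>\<^bsub>?T2\<^esub>"
    by (simp add: rderiv_rmap[OF dB] rderiv_zero[OF R TB dd])
  note * = t2map_on_props[OF R B Tan_is_alg[OF R] f1 f2 f3 cl a m r]
  show "alg_hom R ?T2 ?T2 (canflip R B)"
    "\<And>b. b \<in> carrier B \<Longrightarrow> canflip R B (td R ?T (td R B b)) = td R ?T (td R B b)"
    using * unfolding canflip_def by auto
qed

locale hcs =
  fixes R :: "'r ring" and A :: "('a, 'r) ralg" and M :: "('a, 'm) module"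
  assumes R: "cring R" and A: "is_alg R A" and M: "module A M"
begin

abbreviation "TA \<equiv> Tan R A"
abbreviation "SS \<equiv> Sym R A M"
abbreviation "TS \<equiv> Tan R SS"
abbreviation "EE \<equiv> TE R A M"
abbreviation "FF \<equiv> TF R A M"
abbreviation "Tp \<equiv> Tmap R A TA (tp R A)"
abbreviation "Tq \<equiv> Tmap R A SS (sq R A M)"

lemma TA: "is_alg R TA" and TTA: "is_alg R (Tan R TA)" and SS: "is_alg R SS" and TS: "is_alg R TS"
  and TTS: "is_alg R (Tan R TS)"
  by (simp_all add: Tan_is_alg Sym_is_alg R)

lemma E_eq: "EE = tens R TA SS (carrier A) (tp R A) (sq R A M)" by (simp add: TE_def)
lemma F_eq: "FF = tens R (Tan R TA) TS (carrier TA) Tp Tq" by (simp add: TF_def)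

lemma EE: "is_alg R EE" and FF: "is_alg R FF" and TEE: "is_alg R (Tan R EE)"
  by (simp_all add: E_eq F_eq tens_is_alg Tan_is_alg R)

lemma fgE: "c \<in> carrier A \<Longrightarrow> tp R A c \<in> carrier TA \<and> sq R A M c \<in> carrier SS"
  by (simp add: tp_closed sq_closed)

lemma Tp: "alg_hom R TA (Tan R TA) Tp"
  "\<And>a. a \<in> carrier A \<Longrightarrow> Tp (tp R A a) = tp R TA (tp R A a)"
  "\<And>a. a \<in> carrier A \<Longrightarrow> Tp (td R A a) = td R TA (tp R A a)"
  using Tmap_props[OF R A TA tp_hom[OF R A]] by auto

lemma Tq: "alg_hom R TA TS Tq"
  "\<And>a. a \<in> carrier A \<Longrightarrow> Tq (tp R A a) = tp R SS (sq R A M a)"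
  "\<And>a. a \<in> carrier A \<Longrightarrow> Tq (td R A a) = td R SS (sq R A M a)"
  using Tmap_props[OF R A SS sq_hom[OF R A M]] by auto

lemma fgF: "c \<in> carrier TA \<Longrightarrow> Tp c \<in> carrier (Tan R TA) \<and> Tq c \<in> carrier TS"
  by (simp add: alg_hom_closed[OF Tp(1)] alg_hom_closed[OF Tq(1)])

abbreviation "L w \<equiv> gen EE (TL w)"
abbreviation "Rt v \<equiv> gen EE (TR v)"
abbreviation "LF w \<equiv> gen FF (TL w)"
abbreviation "RF v \<equiv> gen FF (TR v)"

lemma L_hom: "alg_hom R TA EE (\<lambda>w. L w)"
  using tl_hom[where C="carrier A" and f="tp R A" and g="sq R A M", OF R TA SS fgE] by (simp add: E_eq)
lemma Rt_hom: "alg_hom R SS EE (\<lambda>v. Rt v)"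
  using tr_hom[where C="carrier A" and f="tp R A" and g="sq R A M", OF R TA SS fgE] by (simp add: E_eq)
lemma L_Rt: "a \<in> carrier A \<Longrightarrow> L (tp R A a) = Rt (sq R A M a)"
  using tl_tr[where C="carrier A" and f="tp R A" and g="sq R A M", OF R TA SS fgE] by (simp add: E_eq)
lemma LF_hom: "alg_hom R (Tan R TA) FF (\<lambda>w. LF w)"
  using tl_hom[where C="carrier TA" and f="Tp" and g="Tq", OF R TTA TS fgF] by (simp add: F_eq)
lemma RF_hom: "alg_hom R TS FF (\<lambda>v. RF v)"
  using tr_hom[where C="carrier TA" and f="Tp" and g="Tq", OF R TTA TS fgF] by (simp add: F_eq)
lemma LF_RF: "c \<in> carrier TA \<Longrightarrow> LF (Tp c) = RF (Tq c)"
  using tl_tr[where C="carrier TA" and f="Tp" and g="Tq", OF R TTA TS fgF] by (simp add: F_eq)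

lemma L_closed: "w \<in> carrier TA \<Longrightarrow> L w \<in> carrier EE" using alg_hom_closed[OF L_hom] .
lemma Rt_closed: "v \<in> carrier SS \<Longrightarrow> Rt v \<in> carrier EE" using alg_hom_closed[OF Rt_hom] .

lemma etens_E: "w \<in> carrier TA \<Longrightarrow> v \<in> carrier SS \<Longrightarrow> etens EE w v = L w \<otimes>\<^bsub>EE\<^esub> Rt v"
  by (simp add: etens_def)
lemma etens_F: "etens FF w v = LF w \<otimes>\<^bsub>FF\<^esub> RF v"
  by (simp add: etens_def)

lemma etens_E1: "w \<in> carrier TA \<Longrightarrow> etens EE w \<one>\<^bsub>SS\<^esub> = L w"
  using etens_one_right[where C="carrier A" and f="tp R A" and g="sq R A M", OF R TA SS fgE] by (simp add: E_eq)
lemma etens_E2: "v \<in> carrier SS \<Longrightarrow> etens EE \<one>\<^bsub>TA\<^esub> v = Rt v"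
  using etens_one_left[where C="carrier A" and f="tp R A" and g="sq R A M", OF R TA SS fgE] by (simp add: E_eq)

lemma theta_props:
  "\<exists>g \<delta>. alg_hom R EE FF g \<and> rderiv R EE FF g \<delta>
     \<and> (\<forall>w\<in>carrier TA. g (L w) = LF (tp R TA w) \<and> \<delta> (L w) = LF (td R TA w))
     \<and> (\<forall>v\<in>carrier SS. g (Rt v) = RF (tp R SS v) \<and> \<delta> (Rt v) = RF (td R SS v))
     \<and> alg_hom R (Tan R EE) FF (theta R A M)
     \<and> (\<forall>z\<in>carrier EE. theta R A M (tp R EE z) = g z \<and> theta R A M (td R EE z) = \<delta> z)"
proof -
  interpret FF: cring FF using is_algD[OF FF] by simp
  interpret EE: cring EE using is_algD[OF EE] by simp
  have \<phi>: "alg_hom R TA FF (\<lambda>w. LF (tp R TA w))" by (rule alg_hom_comp'[OF tp_hom[OF R TA] LF_hom])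
  have \<psi>: "alg_hom R SS FF (\<lambda>v. RF (tp R SS v))" by (rule alg_hom_comp'[OF tp_hom[OF R SS] RF_hom])
  have comp: "LF (tp R TA (tp R A c)) = RF (tp R SS (sq R A M c))" if "c \<in> carrier A" for c
    using LF_RF[of "tp R A c"] that by (simp add: Tp Tq tp_closed)
  obtain g where g: "alg_hom R EE FF g" "\<forall>w\<in>carrier TA. g (L w) = LF (tp R TA w)"
    "\<forall>v\<in>carrier SS. g (Rt v) = RF (tp R SS v)"
    using tens_univ[where C="carrier A" and f="tp R A" and g="sq R A M", OF R TA SS FF fgE \<phi> \<psi> comp]
    by (auto simp: E_eq)
  have d1: "rderiv R TA FF (\<lambda>w. g (L w)) (\<lambda>w. LF (td R TA w))"
    by (rule rderiv_cong[OF hom_comp_rderiv[OF td_deriv[OF R TA] LF_hom TTA FF tp_closed]])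
       (use g(2) in auto)
  have d2: "rderiv R SS FF (\<lambda>v. g (Rt v)) (\<lambda>v. RF (td R SS v))"
    by (rule rderiv_cong[OF hom_comp_rderiv[OF td_deriv[OF R SS] RF_hom TS FF tp_closed]])
       (use g(3) in auto)
  have comp2: "LF (td R TA (tp R A c)) = RF (td R SS (sq R A M c))" if "c \<in> carrier A" for c
    using LF_RF[of "td R A c"] that by (simp add: Tp Tq td_closed)
  obtain \<delta> where d: "rderiv R EE FF g \<delta>" "\<forall>w\<in>carrier TA. \<delta> (L w) = LF (td R TA w)"
    "\<forall>v\<in>carrier SS. \<delta> (Rt v) = RF (td R SS v)"
    using tens_deriv[where C="carrier A" and f="tp R A" and g="sq R A M", OF R TA SS FF fgE
        g(1)[unfolded E_eq] d1[unfolded E_eq] d2[unfolded E_eq] comp2]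
    by (auto simp: E_eq)
  obtain f where f: "alg_hom R (Tan R EE) FF f" "f \<in> extensional (carrier (Tan R EE))"
    "\<forall>z\<in>carrier EE. f (tp R EE z) = g z \<and> f (td R EE z) = \<delta> z"
    using T_univ[OF R EE FF g(1) d(1)] by blast
  let ?P = "\<lambda>f. \<forall>w\<in>carrier TA. \<forall>v\<in>carrier SS.
        f (tp R EE (etens EE w v)) = etens FF (tp R TA w) (tp R SS v)
      \<and> f (td R EE (etens EE w v)) = etens FF (td R TA w) (tp R SS v) \<oplus>\<^bsub>FF\<^esub> etens FF (tp R TA w) (td R SS v)"
  have Pf: "?P f"
  proof (intro ballI conjI)
    fix w v assume w: "w \<in> carrier TA" and v: "v \<in> carrier SS"
    have c: "LF (tp R TA w) \<in> carrier FF" "LF (td R TA w) \<in> carrier FF"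
        "RF (tp R SS v) \<in> carrier FF" "RF (td R SS v) \<in> carrier FF"
      using w v by (simp_all add: alg_hom_closed[OF LF_hom] alg_hom_closed[OF RF_hom] tp_closed td_closed)
    have lr: "L w \<otimes>\<^bsub>EE\<^esub> Rt v \<in> carrier EE" using w v by (simp add: L_closed Rt_closed)
    have gl: "g (L w) = LF (tp R TA w)" "g (Rt v) = RF (tp R SS v)" using g w v by auto
    have dl: "\<delta> (L w) = LF (td R TA w)" "\<delta> (Rt v) = RF (td R SS v)" using d w v by auto
    show "f (tp R EE (etens EE w v)) = etens FF (tp R TA w) (tp R SS v)"
      using w v f(3) lr by (simp add: etens_E etens_F L_closed Rt_closed alg_hom_mult[OF g(1)] gl)
    show "f (td R EE (etens EE w v)) = etens FF (td R TA w) (tp R SS v) \<oplus>\<^bsub>FF\<^esub> etens FF (tp R TA w) (td R SS v)"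
      using w v f(3) lr c by (simp add: etens_E etens_F L_closed Rt_closed rderiv_mult[OF d(1)] gl dl FF.m_ac FF.a_ac)
  qed
  have "theta R A M = f"
    unfolding theta_def
  proof (rule the_map_eq[where P="?P", OF f(1,2) Pf])
    fix G assume G: "alg_hom R (Tan R EE) FF G" "G \<in> extensional (carrier (Tan R EE))" "?P G"
    show "\<forall>x\<in>carrier (Tan R EE). G x = f x"
    proof
      fix x assume x: "x \<in> carrier (Tan R EE)"
      show "G x = f x"
      proof (rule tan_pres_hom_eq[OF R FF _ G(1) f(1) _ x])
        show "EE = pres R (tsgens TA SS) (tens_rel R TA SS (carrier A) (tp R A) (sq R A M))"
          by (simp add: E_eq tens_eq)
      next
        fix z assume z: "z \<in> tsgens TA SS"
        show "G (tp R EE (gen EE z)) = f (tp R EE (gen EE z)) \<and> G (td R EE (gen EE z)) = f (td R EE (gen EE z))"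
        proof (cases z)
          case (TL w)
          then have w: "w \<in> carrier TA" using z by simp
          have "gen EE z = etens EE w \<one>\<^bsub>SS\<^esub>" using TL w by (simp add: etens_E1)
          then show ?thesis using G(3) Pf w is_algD(1)[OF SS] by (simp add: cring.cring_simprules)
        next
          case (TR v)
          then have v: "v \<in> carrier SS" using z by simp
          have "gen EE z = etens EE \<one>\<^bsub>TA\<^esub> v" using TR v by (simp add: etens_E2)
          then show ?thesis using G(3) Pf v is_algD(1)[OF TA] by (simp add: cring.cring_simprules)
        qed
      qed
    qed
  qed
  then show ?thesis using g d f by blast
qed

end

lemma add_span_closed:
  assumes "abelian_group P" "S \<subseteq> carrier P" "x \<in> add_span P S"
  shows "x \<in> carrier P"
proof -
  interpret P: abelian_group P by fact
  show ?thesis using assms(3)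
    by (induction rule: add_span.induct) (use assms(2) in auto)
qed

lemma add_span_map:
  assumes P: "abelian_group P" and Q: "abelian_group Q" and S: "S \<subseteq> carrier P" and x: "x \<in> add_span P S"
    and fa: "\<And>x y. x \<in> carrier P \<Longrightarrow> y \<in> carrier P \<Longrightarrow> f (x \<oplus>\<^bsub>P\<^esub> y) = f x \<oplus>\<^bsub>Q\<^esub> f y"
    and f0: "f \<zero>\<^bsub>P\<^esub> = \<zero>\<^bsub>Q\<^esub>"
    and fn: "\<And>x. x \<in> carrier P \<Longrightarrow> f (\<ominus>\<^bsub>P\<^esub> x) = \<ominus>\<^bsub>Q\<^esub> f x"
    and fs: "\<And>s. s \<in> S \<Longrightarrow> f s \<in> add_span Q T"
  shows "f x \<in> add_span Q T"
  using x
proof (induction rule: add_span.induct)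
  case zero then show ?case by (simp add: f0 add_span.zero)
next
  case (base s) then show ?case by (rule fs)
next
  case (add x y) then show ?case
    using add_span_closed[OF P S] by (simp add: fa add_span.add)
next
  case (neg x) then show ?case
    using add_span_closed[OF P S] by (simp add: fn add_span.neg)
qed

context hcs begin

lemma lam_props:
  "\<exists>l0 D2. alg_hom R SS SS l0 \<and> rderiv R SS SS l0 D2
     \<and> (\<forall>a\<in>carrier A. l0 (sq R A M a) = sq R A M a \<and> D2 (sq R A M a) = \<zero>\<^bsub>SS\<^esub>)
     \<and> (\<forall>m\<in>carrier M. l0 (sj R A M m) = \<zero>\<^bsub>SS\<^esub> \<and> D2 (sj R A M m) = sj R A M m)
     \<and> alg_hom R TS SS (lam R A M)
     \<and> (\<forall>v\<in>carrier SS. lam R A M (tp R SS v) = l0 v \<and> lam R A M (td R SS v) = D2 v)"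
proof -
  interpret S: cring SS using is_algD[OF SS] by simp
  interpret MM: module A M by (rule M)
  have "\<exists>f. alg_hom R SS SS f \<and> (\<forall>a\<in>carrier A. f (sq R A M a) = sq R A M a)
          \<and> (\<forall>m\<in>carrier M. f (sj R A M m) = \<zero>\<^bsub>SS\<^esub>)"
    by (rule Sym_univ[OF R A M SS sq_hom[OF R A M]]) (simp_all add: sq_closed)
  then obtain l0 where l: "alg_hom R SS SS l0" "\<forall>a\<in>carrier A. l0 (sq R A M a) = sq R A M a"
    "\<forall>m\<in>carrier M. l0 (sj R A M m) = \<zero>\<^bsub>SS\<^esub>" by blast
  have d0: "rderiv R A SS (\<lambda>a. l0 (sq R A M a)) (\<lambda>a. \<zero>\<^bsub>SS\<^esub>)"
    by (rule rderiv_zero_fun[OF SS]) (simp add: alg_hom_closed[OF l(1)] sq_closed)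
  have "\<exists>\<delta>. rderiv R SS SS l0 \<delta> \<and> (\<forall>a\<in>carrier A. \<delta> (sq R A M a) = \<zero>\<^bsub>SS\<^esub>)
          \<and> (\<forall>m\<in>carrier M. \<delta> (sj R A M m) = sj R A M m)"
    by (rule Sym_deriv[OF R A M SS l(1) d0])
       (use l in \<open>simp_all add: sj_closed sq_closed sj_add[OF R A M] sj_smult[OF R A M]\<close>)
  then obtain D2 where D2: "rderiv R SS SS l0 D2" "\<forall>a\<in>carrier A. D2 (sq R A M a) = \<zero>\<^bsub>SS\<^esub>"
    "\<forall>m\<in>carrier M. D2 (sj R A M m) = sj R A M m" by blast
  obtain f where f: "alg_hom R TS SS f" "f \<in> extensional (carrier TS)"
    "\<forall>v\<in>carrier SS. f (tp R SS v) = l0 v \<and> f (td R SS v) = D2 v"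
    using T_univ[OF R SS SS l(1) D2(1)] by blast
  let ?P = "\<lambda>f. (\<forall>a\<in>carrier A. f (tp R SS (sq R A M a)) = sq R A M a
                       \<and> f (td R SS (sq R A M a)) = \<zero>\<^bsub>SS\<^esub>)
        \<and> (\<forall>m\<in>carrier M. f (tp R SS (sj R A M m)) = \<zero>\<^bsub>SS\<^esub>
                       \<and> f (td R SS (sj R A M m)) = sj R A M m)"
  have Pf: "?P f" using f(3) l D2 by (simp add: sq_closed sj_closed)
  have "lam R A M = f"
    unfolding lam_def
  proof (rule the_map_eq[where P="?P", OF f(1,2) Pf])
    fix G assume G: "alg_hom R TS SS G" "G \<in> extensional (carrier TS)" "?P G"
    show "\<forall>x\<in>carrier TS. G x = f x"
    proof
      fix x assume x: "x \<in> carrier TS"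
      show "G x = f x"
      proof (rule sym_tan_hom_eq[OF R SS G(1) f(1) _ _ x])
        fix a assume a: "a \<in> carrier A"
        show "G (tp R SS (sq R A M a)) = f (tp R SS (sq R A M a)) \<and> G (td R SS (sq R A M a)) = f (td R SS (sq R A M a))"
          using G(3) Pf a by simp
      next
        fix m assume m: "m \<in> carrier M"
        show "G (tp R SS (sj R A M m)) = f (tp R SS (sj R A M m)) \<and> G (td R SS (sj R A M m)) = f (td R SS (sj R A M m))"
          using G(3) Pf m by simp
      qed
    qed
  qed
  then show ?thesis
    by (intro exI[of _ l0] exI[of _ D2] conjI l(1) D2(1)) (use l D2 f in simp_all)
qed

lemma zmapT_tp: "w \<in> carrier TA \<Longrightarrow> zmapT R A (tp R TA w) = w"
proof -
  note z = zmapT_props[OF R A]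
  have h: "alg_hom R TA TA (\<lambda>w. zmapT R A (tp R TA w))" by (rule alg_hom_comp'[OF tp_hom[OF R TA] z(1)])
  assume w: "w \<in> carrier TA"
  show ?thesis
    by (rule tan_hom_eq[OF R TA h alg_hom_id _ w]) (simp add: z)
qed

lemma zmapT_td: "w \<in> carrier TA \<Longrightarrow> zmapT R A (td R TA w) = \<zero>\<^bsub>TA\<^esub>"
proof -
  note z = zmapT_props[OF R A]
  have h: "alg_hom R TA TA (\<lambda>w. zmapT R A (tp R TA w))" by (rule alg_hom_comp'[OF tp_hom[OF R TA] z(1)])
  have d1: "rderiv R TA TA (\<lambda>w. zmapT R A (tp R TA w)) (\<lambda>w. zmapT R A (td R TA w))"
    by (rule hom_comp_rderiv[OF td_deriv[OF R TA] z(1) TTA TA tp_closed])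
  have d2: "rderiv R TA TA (\<lambda>w. zmapT R A (tp R TA w)) (\<lambda>w. \<zero>\<^bsub>TA\<^esub>)"
    by (rule rderiv_zero_fun[OF TA]) (simp add: alg_hom_closed[OF h])
  assume w: "w \<in> carrier TA"
  show ?thesis
    using tan_deriv_eq[OF R TA h d1 d2 _ w] by (simp add: z)
qed

definition "W10 = add_span TA {tp R A a \<otimes>\<^bsub>TA\<^esub> td R A a' | a a'. a \<in> carrier A \<and> a' \<in> carrier A}"
definition "V01 = add_span SS {sq R A M a \<otimes>\<^bsub>SS\<^esub> sj R A M m | a m. a \<in> carrier A \<and> m \<in> carrier M}"


lemma W10_sub: "{tp R A a \<otimes>\<^bsub>TA\<^esub> td R A a' | a a'. a \<in> carrier A \<and> a' \<in> carrier A} \<subseteq> carrier TA"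
  using is_algD(1)[OF TA] by (auto simp: tp_closed td_closed cring.cring_simprules)

lemma V01_sub: "{sq R A M a \<otimes>\<^bsub>SS\<^esub> sj R A M m | a m. a \<in> carrier A \<and> m \<in> carrier M} \<subseteq> carrier SS"
  using is_algD(1)[OF SS] by (auto simp: sq_closed sj_closed cring.cring_simprules)

lemma W10_closed: "u \<in> W10 \<Longrightarrow> u \<in> carrier TA"
  using add_span_closed[OF _ W10_sub] is_algD(1)[OF TA] by (auto simp: W10_def cring_def ring_def)

lemma V01_closed: "u \<in> V01 \<Longrightarrow> u \<in> carrier SS"
  using add_span_closed[OF _ V01_sub] is_algD(1)[OF SS] by (auto simp: V01_def cring_def ring_def)

lemma W10_zero: "\<zero>\<^bsub>TA\<^esub> \<in> W10" by (simp add: W10_def add_span.zero)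
lemma V01_zero: "\<zero>\<^bsub>SS\<^esub> \<in> V01" by (simp add: V01_def add_span.zero)
lemma W10_add: "u \<in> W10 \<Longrightarrow> u' \<in> W10 \<Longrightarrow> u \<oplus>\<^bsub>TA\<^esub> u' \<in> W10" by (simp add: W10_def add_span.add)
lemma V01_add: "u \<in> V01 \<Longrightarrow> u' \<in> V01 \<Longrightarrow> u \<oplus>\<^bsub>SS\<^esub> u' \<in> V01" by (simp add: V01_def add_span.add)
lemma W10_neg: "u \<in> W10 \<Longrightarrow> \<ominus>\<^bsub>TA\<^esub> u \<in> W10" by (simp add: W10_def add_span.neg)
lemma V01_neg: "u \<in> V01 \<Longrightarrow> \<ominus>\<^bsub>SS\<^esub> u \<in> V01" by (simp add: V01_def add_span.neg)

lemma W10_mult: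
  assumes c: "c \<in> carrier A" and u: "u \<in> W10"
  shows "tp R A c \<otimes>\<^bsub>TA\<^esub> u \<in> W10"
proof -
  interpret T: cring TA using is_algD[OF TA] by simp
  interpret AA: cring A using is_algD[OF A] by simp
  have tc: "tp R A c \<in> carrier TA" using c by (simp add: tp_closed)
  show ?thesis unfolding W10_def
  proof (rule add_span_map[OF T.abelian_group_axioms T.abelian_group_axioms W10_sub u[unfolded W10_def]])
    fix s assume "s \<in> {tp R A a \<otimes>\<^bsub>TA\<^esub> td R A a' | a a'. a \<in> carrier A \<and> a' \<in> carrier A}"
    then obtain a a' where s: "s = tp R A a \<otimes>\<^bsub>TA\<^esub> td R A a'" "a \<in> carrier A" "a' \<in> carrier A" by blast
    have "tp R A c \<otimes>\<^bsub>TA\<^esub> s = tp R A (c \<otimes>\<^bsub>A\<^esub> a) \<otimes>\<^bsub>TA\<^esub> td R A a'"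
      using s c by (simp add: alg_hom_mult[OF tp_hom[OF R A]] tp_closed td_closed T.m_assoc)
    then show "tp R A c \<otimes>\<^bsub>TA\<^esub> s \<in> add_span TA {tp R A a \<otimes>\<^bsub>TA\<^esub> td R A a' | a a'. a \<in> carrier A \<and> a' \<in> carrier A}"
      using s c by (auto intro!: add_span.base)
  qed (use tc in \<open>simp_all add: T.r_distr T.r_minus\<close>)
qed

lemma V01_mult:
  assumes c: "c \<in> carrier A" and u: "u \<in> V01"
  shows "sq R A M c \<otimes>\<^bsub>SS\<^esub> u \<in> V01"
proof -
  interpret T: cring SS using is_algD[OF SS] by simp
  interpret AA: cring A using is_algD[OF A] by simp
  have tc: "sq R A M c \<in> carrier SS" using c by (simp add: sq_closed)
  show ?thesis unfolding V01_def
  proof (rule add_span_map[OF T.abelian_group_axioms T.abelian_group_axioms V01_sub u[unfolded V01_def]])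
    fix s assume "s \<in> {sq R A M a \<otimes>\<^bsub>SS\<^esub> sj R A M m | a m. a \<in> carrier A \<and> m \<in> carrier M}"
    then obtain a m where s: "s = sq R A M a \<otimes>\<^bsub>SS\<^esub> sj R A M m" "a \<in> carrier A" "m \<in> carrier M" by blast
    have "sq R A M c \<otimes>\<^bsub>SS\<^esub> s = sq R A M (c \<otimes>\<^bsub>A\<^esub> a) \<otimes>\<^bsub>SS\<^esub> sj R A M m"
      using s c by (simp add: alg_hom_mult[OF sq_hom[OF R A M]] sq_closed sj_closed T.m_assoc)
    then show "sq R A M c \<otimes>\<^bsub>SS\<^esub> s \<in> add_span SS {sq R A M a \<otimes>\<^bsub>SS\<^esub> sj R A M m | a m. a \<in> carrier A \<and> m \<in> carrier M}"
      using s c by (auto intro!: add_span.base)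
  qed (use tc in \<open>simp_all add: T.r_distr T.r_minus\<close>)
qed


lemma lift_TA:
  assumes w: "w \<in> carrier TA"
  shows "lift R A (tp R TA w) \<in> tp R A ` carrier A \<and> lift R A (td R TA w) \<in> W10"
  using R w
proof (induction rule: Tan_induct)
  interpret T: cring TA using is_algD[OF TA] by simp
  interpret AA: cring A using is_algD[OF A] by simp
  note lp = lift_props[OF R A]
  note tph = tp_hom[OF R A]
  note TPh = tp_hom[OF R TA]
  note TDd = td_deriv[OF R TA]
  {
    case (tp a)
    then show ?case by (simp add: lp W10_zero)
  next
    case (td a)
    have "td R A a = tp R A \<one>\<^bsub>A\<^esub> \<otimes>\<^bsub>TA\<^esub> td R A a"
      using td by (simp add: alg_hom_one[OF tph] td_closed)
    then have "td R A a \<in> W10" unfolding W10_def using td by (auto intro!: add_span.base)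
    moreover have "\<zero>\<^bsub>TA\<^esub> \<in> tp R A ` carrier A"
      using alg_hom_zero[OF A TA tph] by (metis AA.zero_closed image_eqI)
    ultimately show ?case using td by (simp add: lp)
  next
    case (rmap r)
    have "lift R A (tp R TA (rmap TA r)) = tp R A (rmap A r)"
      using rmap by (simp add: alg_hom_rmap[OF TPh] alg_hom_rmap[OF lp(1)] alg_hom_rmap[OF tph])
    moreover have "lift R A (td R TA (rmap TA r)) = \<zero>\<^bsub>TA\<^esub>"
      using rmap by (simp add: rderiv_rmap[OF TDd] alg_hom_zero[OF TTA TA lp(1)])
    ultimately show ?case using rmap by (simp add: is_alg_rmap_closed[OF A] W10_zero)
  next
    case (add X Y)
    then obtain a b where ab: "a \<in> carrier A" "b \<in> carrier A" "lift R A (tp R TA X) = tp R A a" "lift R A (tp R TA Y) = tp R A b"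
      by blast
    have "lift R A (tp R TA (X \<oplus>\<^bsub>TA\<^esub> Y)) = tp R A (a \<oplus>\<^bsub>A\<^esub> b)"
      using add ab by (simp add: alg_hom_add[OF TPh] alg_hom_add[OF lp(1)] alg_hom_add[OF tph] tp_closed)
    moreover have "lift R A (td R TA (X \<oplus>\<^bsub>TA\<^esub> Y)) = lift R A (td R TA X) \<oplus>\<^bsub>TA\<^esub> lift R A (td R TA Y)"
      using add by (simp add: rderiv_add[OF TDd] alg_hom_add[OF lp(1)] td_closed)
    ultimately show ?case using add ab by (simp add: W10_add)
  next
    case (mult X Y)
    then obtain a b where ab: "a \<in> carrier A" "b \<in> carrier A" "lift R A (tp R TA X) = tp R A a" "lift R A (tp R TA Y) = tp R A b"
      by blast
    have "lift R A (tp R TA (X \<otimes>\<^bsub>TA\<^esub> Y)) = tp R A (a \<otimes>\<^bsub>A\<^esub> b)"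
      using mult ab by (simp add: alg_hom_mult[OF TPh] alg_hom_mult[OF lp(1)] alg_hom_mult[OF tph] tp_closed)
    moreover have "lift R A (td R TA (X \<otimes>\<^bsub>TA\<^esub> Y)) =
        tp R A a \<otimes>\<^bsub>TA\<^esub> lift R A (td R TA Y) \<oplus>\<^bsub>TA\<^esub> tp R A b \<otimes>\<^bsub>TA\<^esub> lift R A (td R TA X)"
      using mult ab is_algD(1)[OF TTA]
      by (simp add: rderiv_mult[OF TDd] alg_hom_add[OF lp(1)] alg_hom_mult[OF lp(1)] td_closed tp_closed
          cring.cring_simprules(5))
    ultimately show ?case using mult ab by (simp add: W10_add W10_mult)
  next
    case (neg X)
    then obtain a where a: "a \<in> carrier A" "lift R A (tp R TA X) = tp R A a" by blast
    have "lift R A (tp R TA (\<ominus>\<^bsub>TA\<^esub> X)) = tp R A (\<ominus>\<^bsub>A\<^esub> a)"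
      using neg a by (simp add: alg_hom_neg[OF TA TTA TPh] alg_hom_neg[OF TTA TA lp(1)] alg_hom_neg[OF A TA tph] tp_closed)
    moreover have "lift R A (td R TA (\<ominus>\<^bsub>TA\<^esub> X)) = \<ominus>\<^bsub>TA\<^esub> lift R A (td R TA X)"
      using neg by (simp add: rderiv_neg[OF R TA TTA TDd] alg_hom_neg[OF TTA TA lp(1)] td_closed)
    ultimately show ?case using neg a by (simp add: W10_neg)
  }
qed

lemma lam_SS:
  assumes l0: "alg_hom R SS SS l0" and D2: "rderiv R SS SS l0 D2"
    and va: "\<forall>a\<in>carrier A. l0 (sq R A M a) = sq R A M a \<and> D2 (sq R A M a) = \<zero>\<^bsub>SS\<^esub>"
    and vm: "\<forall>m\<in>carrier M. l0 (sj R A M m) = \<zero>\<^bsub>SS\<^esub> \<and> D2 (sj R A M m) = sj R A M m"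
    and v: "v \<in> carrier SS"
  shows "l0 v \<in> sq R A M ` carrier A \<and> D2 v \<in> V01"
  using R v
proof (induction rule: Sym_induct)
  interpret T: cring SS using is_algD[OF SS] by simp
  interpret AA: cring A using is_algD[OF A] by simp
  note sqh = sq_hom[OF R A M]
  {
    case (sq a)
    then show ?case using va by (simp add: V01_zero)
  next
    case (sj m)
    have "sj R A M m = sq R A M \<one>\<^bsub>A\<^esub> \<otimes>\<^bsub>SS\<^esub> sj R A M m"
      using sj by (simp add: alg_hom_one[OF sqh] sj_closed)
    then have "sj R A M m \<in> V01" unfolding V01_def using sj by (auto intro!: add_span.base)
    moreover have "\<zero>\<^bsub>SS\<^esub> \<in> sq R A M ` carrier A"
      using alg_hom_zero[OF A SS sqh] by (metis AA.zero_closed image_eqI)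
    ultimately show ?case using sj vm by simp
  next
    case (rmap r)
    have "l0 (rmap SS r) = sq R A M (rmap A r)"
      using rmap by (simp add: alg_hom_rmap[OF l0] alg_hom_rmap[OF sqh])
    then show ?case using rmap by (simp add: is_alg_rmap_closed[OF A] rderiv_rmap[OF D2] V01_zero)
  next
    case (add X Y)
    then obtain a b where ab: "a \<in> carrier A" "b \<in> carrier A" "l0 X = sq R A M a" "l0 Y = sq R A M b"
      by blast
    have "l0 (X \<oplus>\<^bsub>SS\<^esub> Y) = sq R A M (a \<oplus>\<^bsub>A\<^esub> b)"
      using add ab by (simp add: alg_hom_add[OF l0] alg_hom_add[OF sqh])
    then show ?case using add ab by (simp add: rderiv_add[OF D2] V01_add)
  next
    case (mult X Y)
    then obtain a b where ab: "a \<in> carrier A" "b \<in> carrier A" "l0 X = sq R A M a" "l0 Y = sq R A M b"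
      by blast
    have "l0 (X \<otimes>\<^bsub>SS\<^esub> Y) = sq R A M (a \<otimes>\<^bsub>A\<^esub> b)"
      using mult ab by (simp add: alg_hom_mult[OF l0] alg_hom_mult[OF sqh])
    then show ?case using mult ab by (simp add: rderiv_mult[OF D2] V01_add V01_mult)
  next
    case (neg X)
    then obtain a where a: "a \<in> carrier A" "l0 X = sq R A M a" by blast
    have "l0 (\<ominus>\<^bsub>SS\<^esub> X) = sq R A M (\<ominus>\<^bsub>A\<^esub> a)"
      using neg a by (simp add: alg_hom_neg[OF SS SS l0] alg_hom_neg[OF A SS sqh])
    then show ?case using neg a by (simp add: rderiv_neg[OF R SS SS D2] V01_neg)
  }
qed

end

context hcs begin

abbreviation "tm1 \<equiv> tensmap R FF EE (Tan R TA) TS (lift R A) (zmap R SS)"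
abbreviation "tm2 \<equiv> tensmap R FF EE (Tan R TA) TS (zmapT R A) (lam R A M)"

lemma tm1:
  "alg_hom R FF EE tm1"
  "\<And>x. x \<in> carrier (Tan R TA) \<Longrightarrow> tm1 (LF x) = L (lift R A x)"
  "\<And>y. y \<in> carrier TS \<Longrightarrow> tm1 (RF y) = Rt (zmap R SS y)"
proof -
  note lp = lift_props[OF R A] and zp = zmap_props[OF R SS]
  have h1: "alg_hom R TA EE (\<lambda>c. L (lift R A (Tp c)))"
    by (rule alg_hom_comp'[OF Tp(1) alg_hom_comp'[OF lp(1) L_hom]])
  have h2: "alg_hom R TA EE (\<lambda>c. Rt (zmap R SS (Tq c)))"
    by (rule alg_hom_comp'[OF Tq(1) alg_hom_comp'[OF zp(1) Rt_hom]])
  have comp: "L (lift R A (Tp c)) = Rt (zmap R SS (Tq c))" if c: "c \<in> carrier TA" for c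
    by (rule tan_hom_eq[OF R EE h1 h2 _ c])
       (simp add: Tp Tq lp zp L_Rt sq_closed alg_hom_zero[OF TA EE L_hom] alg_hom_zero[OF SS EE Rt_hom])
  note * = tensmap_props[where C="carrier TA" and f=Tp and g=Tq and C'="carrier A" and f'="tp R A"
      and g'="sq R A M", OF R TTA TS fgF TA SS fgE lp(1) zp(1)]
  show "alg_hom R FF EE tm1"
    "\<And>x. x \<in> carrier (Tan R TA) \<Longrightarrow> tm1 (LF x) = L (lift R A x)"
    "\<And>y. y \<in> carrier TS \<Longrightarrow> tm1 (RF y) = Rt (zmap R SS y)"
    using * comp unfolding TE_def TF_def by auto
qed

lemma tm2:
  "alg_hom R FF EE tm2"
  "\<And>x. x \<in> carrier (Tan R TA) \<Longrightarrow> tm2 (LF x) = L (zmapT R A x)"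
  "\<And>y. y \<in> carrier TS \<Longrightarrow> tm2 (RF y) = Rt (lam R A M y)"
proof -
  note zp = zmapT_props[OF R A]
  obtain l0 D2 where lp: "alg_hom R SS SS l0" "rderiv R SS SS l0 D2"
     "\<forall>a\<in>carrier A. l0 (sq R A M a) = sq R A M a \<and> D2 (sq R A M a) = \<zero>\<^bsub>SS\<^esub>"
     "\<forall>m\<in>carrier M. l0 (sj R A M m) = \<zero>\<^bsub>SS\<^esub> \<and> D2 (sj R A M m) = sj R A M m"
     "alg_hom R TS SS (lam R A M)"
     "\<forall>v\<in>carrier SS. lam R A M (tp R SS v) = l0 v \<and> lam R A M (td R SS v) = D2 v"
    using lam_props by blast
  have h1: "alg_hom R TA EE (\<lambda>c. L (zmapT R A (Tp c)))"
    by (rule alg_hom_comp'[OF Tp(1) alg_hom_comp'[OF zp(1) L_hom]])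
  have h2: "alg_hom R TA EE (\<lambda>c. Rt (lam R A M (Tq c)))"
    by (rule alg_hom_comp'[OF Tq(1) alg_hom_comp'[OF lp(5) Rt_hom]])
  have comp: "L (zmapT R A (Tp c)) = Rt (lam R A M (Tq c))" if c: "c \<in> carrier TA" for c
    by (rule tan_hom_eq[OF R EE h1 h2 _ c])
       (use lp(3,6) in \<open>simp add: Tp Tq zp L_Rt sq_closed alg_hom_zero[OF TA EE L_hom] alg_hom_zero[OF SS EE Rt_hom]\<close>)
  note * = tensmap_props[where C="carrier TA" and f=Tp and g=Tq and C'="carrier A" and f'="tp R A"
      and g'="sq R A M", OF R TTA TS fgF TA SS fgE zp(1) lp(5)]
  show "alg_hom R FF EE tm2"
    "\<And>x. x \<in> carrier (Tan R TA) \<Longrightarrow> tm2 (LF x) = L (zmapT R A x)"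
    "\<And>y. y \<in> carrier TS \<Longrightarrow> tm2 (RF y) = Rt (lam R A M y)"
    using * comp unfolding TE_def TF_def by auto
qed

lemma EE_pres: "EE = pres R (tsgens TA SS) (tens_rel R TA SS (carrier A) (tp R A) (sq R A M))"
  by (simp add: E_eq tens_eq)

lemma EE_induct[consumes 1, case_names L Rt rmap add mult neg]:
  assumes X: "X \<in> carrier EE"
    and l: "\<And>w. w \<in> carrier TA \<Longrightarrow> Q (L w)"
    and rt: "\<And>v. v \<in> carrier SS \<Longrightarrow> Q (Rt v)"
    and rm: "\<And>r. r \<in> carrier R \<Longrightarrow> Q (rmap EE r)"
    and add: "\<And>X Y. X \<in> carrier EE \<Longrightarrow> Y \<in> carrier EE \<Longrightarrow> Q X \<Longrightarrow> Q Y \<Longrightarrow> Q (X \<oplus>\<^bsub>EE\<^esub> Y)"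
    and mult: "\<And>X Y. X \<in> carrier EE \<Longrightarrow> Y \<in> carrier EE \<Longrightarrow> Q X \<Longrightarrow> Q Y \<Longrightarrow> Q (X \<otimes>\<^bsub>EE\<^esub> Y)"
    and neg: "\<And>X. X \<in> carrier EE \<Longrightarrow> Q X \<Longrightarrow> Q (\<ominus>\<^bsub>EE\<^esub> X)"
  shows "Q X"
proof -
  have X': "X \<in> carrier (pres R (tsgens TA SS) (tens_rel R TA SS (carrier A) (tp R A) (sq R A M)))"
    using X EE_pres by simp
  show ?thesis using R X'
  proof (induction rule: pres_induct)
    case (gen x) then show ?case using l rt EE_pres by (cases x) auto
  qed (use rm add mult neg EE_pres in auto)
qed

lemma J_eq: "jj_image R A M = add_span EE {L (td R A a) \<otimes>\<^bsub>EE\<^esub> Rt (sj R A M m) | a m. a \<in> carrier A \<and> m \<in> carrier M}"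
  by (simp add: jj_image_def etens_def)

lemma J_sub: "{L (td R A a) \<otimes>\<^bsub>EE\<^esub> Rt (sj R A M m) | a m. a \<in> carrier A \<and> m \<in> carrier M} \<subseteq> carrier EE"
  using is_algD(1)[OF EE] by (auto simp: L_closed Rt_closed td_closed sj_closed cring.cring_simprules)

lemma J_mult:
  assumes c: "c \<in> carrier A" and z: "z \<in> jj_image R A M"
  shows "L (tp R A c) \<otimes>\<^bsub>EE\<^esub> z \<in> jj_image R A M"
proof -
  interpret E: cring EE using is_algD[OF EE] by simp
  interpret MM: module A M by (rule M)
  have lc: "L (tp R A c) \<in> carrier EE" using c by (simp add: L_closed tp_closed)
  show ?thesis unfolding J_eq
  proof (rule add_span_map[OF E.abelian_group_axioms E.abelian_group_axioms J_sub z[unfolded J_eq]])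
    fix s assume "s \<in> {L (td R A a) \<otimes>\<^bsub>EE\<^esub> Rt (sj R A M m) | a m. a \<in> carrier A \<and> m \<in> carrier M}"
    then obtain a m where s: "s = L (td R A a) \<otimes>\<^bsub>EE\<^esub> Rt (sj R A M m)" "a \<in> carrier A" "m \<in> carrier M" by blast
    have c1: "L (td R A a) \<in> carrier EE" "Rt (sj R A M m) \<in> carrier EE" "Rt (sq R A M c) \<in> carrier EE"
      using s c by (simp_all add: L_closed Rt_closed td_closed sj_closed sq_closed)
    have "L (tp R A c) \<otimes>\<^bsub>EE\<^esub> s = L (td R A a) \<otimes>\<^bsub>EE\<^esub> (Rt (sq R A M c) \<otimes>\<^bsub>EE\<^esub> Rt (sj R A M m))"
      using s c c1 by (simp add: L_Rt E.m_ac)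
    also have "\<dots> = L (td R A a) \<otimes>\<^bsub>EE\<^esub> Rt (sj R A M (c \<odot>\<^bsub>M\<^esub> m))"
      using s c by (simp add: alg_hom_mult[OF Rt_hom] sq_closed sj_closed sj_smult[OF R A M])
    finally show "L (tp R A c) \<otimes>\<^bsub>EE\<^esub> s \<in> add_span EE {L (td R A a) \<otimes>\<^bsub>EE\<^esub> Rt (sj R A M m) | a m. a \<in> carrier A \<and> m \<in> carrier M}"
      using s c by (auto intro!: add_span.base)
  qed (use lc in \<open>simp_all add: E.r_distr E.r_minus\<close>)
qed

lemma KK:
  assumes u: "u \<in> V01" and w: "w \<in> W10"
  shows "Rt u \<otimes>\<^bsub>EE\<^esub> L w \<in> jj_image R A M"
proof -
  interpret E: cring EE using is_algD[OF EE] by simp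
  interpret S: cring SS using is_algD[OF SS] by simp
  interpret T: cring TA using is_algD[OF TA] by simp
  interpret AA: cring A using is_algD[OF A] by simp
  interpret MM: module A M by (rule M)
  have lw: "L w \<in> carrier EE" using w by (simp add: L_closed W10_closed)
  show ?thesis unfolding J_eq
  proof (rule add_span_map[where f="\<lambda>u. Rt u \<otimes>\<^bsub>EE\<^esub> L w", OF S.abelian_group_axioms E.abelian_group_axioms V01_sub u[unfolded V01_def]])
    fix s assume "s \<in> {sq R A M a \<otimes>\<^bsub>SS\<^esub> sj R A M m | a m. a \<in> carrier A \<and> m \<in> carrier M}"
    then obtain c m where s: "s = sq R A M c \<otimes>\<^bsub>SS\<^esub> sj R A M m" "c \<in> carrier A" "m \<in> carrier M" by blast
    have sc: "s \<in> carrier SS" using s by (simp add: sq_closed sj_closed)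
    show "Rt s \<otimes>\<^bsub>EE\<^esub> L w \<in> add_span EE {L (td R A a) \<otimes>\<^bsub>EE\<^esub> Rt (sj R A M m) | a m. a \<in> carrier A \<and> m \<in> carrier M}"
    proof (rule add_span_map[where f="\<lambda>w. Rt s \<otimes>\<^bsub>EE\<^esub> L w", OF T.abelian_group_axioms E.abelian_group_axioms W10_sub w[unfolded W10_def]])
      fix t assume "t \<in> {tp R A a \<otimes>\<^bsub>TA\<^esub> td R A a' | a a'. a \<in> carrier A \<and> a' \<in> carrier A}"
      then obtain a a' where t: "t = tp R A a \<otimes>\<^bsub>TA\<^esub> td R A a'" "a \<in> carrier A" "a' \<in> carrier A" by blast
      have cl: "Rt (sq R A M c) \<in> carrier EE" "Rt (sj R A M m) \<in> carrier EE" "Rt (sq R A M a) \<in> carrier EE"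
        "L (td R A a') \<in> carrier EE"
        using s t by (simp_all add: L_closed Rt_closed td_closed sj_closed sq_closed)
      have "Rt s \<otimes>\<^bsub>EE\<^esub> L t = L (td R A a') \<otimes>\<^bsub>EE\<^esub> (Rt (sq R A M c) \<otimes>\<^bsub>EE\<^esub> Rt (sq R A M a) \<otimes>\<^bsub>EE\<^esub> Rt (sj R A M m))"
        using s t cl by (simp add: alg_hom_mult[OF Rt_hom] alg_hom_mult[OF L_hom] sq_closed sj_closed tp_closed td_closed
            L_Rt E.m_ac)
      also have "\<dots> = L (td R A a') \<otimes>\<^bsub>EE\<^esub> Rt (sj R A M ((c \<otimes>\<^bsub>A\<^esub> a) \<odot>\<^bsub>M\<^esub> m))"
        using s t by (simp add: alg_hom_mult[OF Rt_hom] alg_hom_mult[OF sq_hom[OF R A M]] sq_closed sj_closed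
            sj_smult[OF R A M] S.m_closed)
      finally show "Rt s \<otimes>\<^bsub>EE\<^esub> L t \<in> add_span EE {L (td R A a) \<otimes>\<^bsub>EE\<^esub> Rt (sj R A M m) | a m. a \<in> carrier A \<and> m \<in> carrier M}"
        using s t by (auto intro!: add_span.base)
    qed (use sc in \<open>simp_all add: Rt_closed L_closed E.r_distr E.r_minus alg_hom_add[OF L_hom] alg_hom_neg[OF TA EE L_hom] alg_hom_zero[OF TA EE L_hom]\<close>)
  qed (use lw in \<open>simp_all add: Rt_closed E.l_distr E.l_minus alg_hom_add[OF Rt_hom] alg_hom_neg[OF SS EE Rt_hom] alg_hom_zero[OF SS EE Rt_hom]\<close>)
qed

end

context hcs begin

lemma J_add: "x \<in> jj_image R A M \<Longrightarrow> y \<in> jj_image R A M \<Longrightarrow> x \<oplus>\<^bsub>EE\<^esub> y \<in> jj_image R A M"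
  by (simp add: jj_image_def add_span.add)

lemma J_neg: "x \<in> jj_image R A M \<Longrightarrow> \<ominus>\<^bsub>EE\<^esub> x \<in> jj_image R A M"
  by (simp add: jj_image_def add_span.neg)

lemma main_inv:
  assumes X: "X \<in> carrier EE"
    and e1: "tm1 (theta R A M (td R EE X)) = X" and e2: "tm2 (theta R A M (td R EE X)) = X"
  shows "X \<in> jj_image R A M"
proof -
  interpret E: cring EE using is_algD[OF EE] by simp
  interpret S: cring SS using is_algD[OF SS] by simp
  interpret T: cring TA using is_algD[OF TA] by simp
  interpret AA: cring A using is_algD[OF A] by simp
  obtain g \<delta> where g: "alg_hom R EE FF g" and d: "rderiv R EE FF g \<delta>"
    and gL: "\<forall>w\<in>carrier TA. g (L w) = LF (tp R TA w) \<and> \<delta> (L w) = LF (td R TA w)"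
    and gR: "\<forall>v\<in>carrier SS. g (Rt v) = RF (tp R SS v) \<and> \<delta> (Rt v) = RF (td R SS v)"
    and th: "\<forall>z\<in>carrier EE. theta R A M (tp R EE z) = g z \<and> theta R A M (td R EE z) = \<delta> z"
    using theta_props by blast
  obtain l0 D2 where l0: "alg_hom R SS SS l0" and D2: "rderiv R SS SS l0 D2"
     and va: "\<forall>a\<in>carrier A. l0 (sq R A M a) = sq R A M a \<and> D2 (sq R A M a) = \<zero>\<^bsub>SS\<^esub>"
     and vm: "\<forall>m\<in>carrier M. l0 (sj R A M m) = \<zero>\<^bsub>SS\<^esub> \<and> D2 (sj R A M m) = sj R A M m"
     and lam: "\<forall>v\<in>carrier SS. lam R A M (tp R SS v) = l0 v \<and> lam R A M (td R SS v) = D2 v"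
    using lam_props by blast
  define P1 where "P1 z = tm1 (g z)" for z
  define F1 where "F1 z = tm1 (\<delta> z)" for z
  define P2 where "P2 z = tm2 (g z)" for z
  define F2 where "F2 z = tm2 (\<delta> z)" for z
  have P1h: "alg_hom R EE EE P1" unfolding P1_def by (rule alg_hom_comp'[OF g tm1(1)])
  have P2h: "alg_hom R EE EE P2" unfolding P2_def by (rule alg_hom_comp'[OF g tm2(1)])
  have F1d: "rderiv R EE EE P1 F1" unfolding P1_def F1_def
    by (rule hom_comp_rderiv[OF d tm1(1) FF EE alg_hom_closed[OF g]])
  have F2d: "rderiv R EE EE P2 F2" unfolding P2_def F2_def
    by (rule hom_comp_rderiv[OF d tm2(1) FF EE alg_hom_closed[OF g]])
  note lp = lift_props[OF R A] and zp = zmap_props[OF R SS]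
  have P1L: "P1 (L w) = L (lift R A (tp R TA w))" and F1L: "F1 (L w) = L (lift R A (td R TA w))"
    and P2L: "P2 (L w) = L w" and F2L: "F2 (L w) = \<zero>\<^bsub>EE\<^esub>"
    if w: "w \<in> carrier TA" for w
    using gL w by (simp_all add: P1_def F1_def P2_def F2_def tm1 tm2 tp_closed td_closed zmapT_tp zmapT_td
        alg_hom_zero[OF TA EE L_hom])
  have P1R: "P1 (Rt v) = Rt v" and F1R: "F1 (Rt v) = \<zero>\<^bsub>EE\<^esub>"
    and P2R: "P2 (Rt v) = Rt (l0 v)" and F2R: "F2 (Rt v) = Rt (D2 v)"
    if v: "v \<in> carrier SS" for v
    using gR lam v by (simp_all add: P1_def F1_def P2_def F2_def tm1 tm2 tp_closed td_closed zp
        alg_hom_zero[OF SS EE Rt_hom])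
  have P1c: "\<And>z. z \<in> carrier EE \<Longrightarrow> P1 z \<in> carrier EE" by (rule alg_hom_closed[OF P1h])
  have P2c: "\<And>z. z \<in> carrier EE \<Longrightarrow> P2 z \<in> carrier EE" by (rule alg_hom_closed[OF P2h])
  have F1c: "\<And>z. z \<in> carrier EE \<Longrightarrow> F1 z \<in> carrier EE" by (rule rderiv_closed[OF F1d])
  have F2c: "\<And>z. z \<in> carrier EE \<Longrightarrow> F2 z \<in> carrier EE" by (rule rderiv_closed[OF F2d])
  have F10: "F1 \<zero>\<^bsub>EE\<^esub> = \<zero>\<^bsub>EE\<^esub>" by (rule rderiv_zero[OF R EE F1d])
  have F20: "F2 \<zero>\<^bsub>EE\<^esub> = \<zero>\<^bsub>EE\<^esub>" by (rule rderiv_zero[OF R EE F2d])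
  have P10: "P1 \<zero>\<^bsub>EE\<^esub> = \<zero>\<^bsub>EE\<^esub>" by (rule alg_hom_zero[OF EE EE P1h])
  have L0: "L \<zero>\<^bsub>TA\<^esub> = \<zero>\<^bsub>EE\<^esub>" by (rule alg_hom_zero[OF TA EE L_hom])
  have R0: "Rt \<zero>\<^bsub>SS\<^esub> = \<zero>\<^bsub>EE\<^esub>" by (rule alg_hom_zero[OF SS EE Rt_hom])
  have J0: "\<zero>\<^bsub>EE\<^esub> \<in> jj_image R A M" by (simp add: jj_image_def add_span.zero)
  define Q where "Q Y \<longleftrightarrow> (\<exists>a\<in>carrier A. P1 (P2 Y) = L (tp R A a))
      \<and> (\<exists>u\<in>W10. F1 (P2 Y) = L u) \<and> (\<exists>u\<in>V01. P1 (F2 Y) = Rt u) \<and> F1 (F2 Y) \<in> jj_image R A M" for Y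
  have QY: "Q Y" if Y: "Y \<in> carrier EE" for Y
    using Y
  proof (induction rule: EE_induct)
    case (L w)
    obtain a where a: "a \<in> carrier A" "lift R A (tp R TA w) = tp R A a" using lift_TA[OF L] by blast
    have "lift R A (td R TA w) \<in> W10" using lift_TA[OF L] by blast
    then show ?case unfolding Q_def using L a
      by (auto simp: P1L F1L P2L F2L F10 P10 intro!: bexI[of _ "\<zero>\<^bsub>SS\<^esub>"] R0[symmetric] V01_zero J0)
  next
    case (Rt v)
    obtain a where a: "a \<in> carrier A" "l0 v = sq R A M a" using lam_SS[OF l0 D2 va vm Rt] by blast
    have u: "D2 v \<in> V01" using lam_SS[OF l0 D2 va vm Rt] by blast
    have pl: "P2 (Rt v) = L (tp R A a)" using Rt a by (simp add: P2R L_Rt)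
    show ?case unfolding Q_def using a u V01_closed[OF u]
      by (auto simp: pl P1L F1L tp_closed lp W10_zero L0 Rt F2R P1R F1R J0 intro!: bexI[of _ "\<zero>\<^bsub>TA\<^esub>"])
  next
    case (rmap r)
    have LT: "alg_hom R A EE (\<lambda>a. L (tp R A a))" by (rule alg_hom_comp'[OF tp_hom[OF R A] L_hom])
    have "P1 (P2 (rmap EE r)) = L (tp R A (rmap A r))"
      using rmap by (simp add: alg_hom_rmap[OF P1h] alg_hom_rmap[OF P2h] alg_hom_rmap[OF LT])
    moreover have "F1 (P2 (rmap EE r)) = \<zero>\<^bsub>EE\<^esub>" "F2 (rmap EE r) = \<zero>\<^bsub>EE\<^esub>"
      using rmap by (simp_all add: alg_hom_rmap[OF P2h] rderiv_rmap[OF F1d] rderiv_rmap[OF F2d])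
    ultimately show ?case unfolding Q_def using rmap
      by (auto simp: is_alg_rmap_closed[OF A] F10 P10 J0 intro!: bexI[of _ "\<zero>\<^bsub>SS\<^esub>"] bexI[of _ "\<zero>\<^bsub>TA\<^esub>"]
          R0[symmetric] L0[symmetric] V01_zero W10_zero)
  next
    case (add X Y)
    from add(3) obtain a u v j where X1: "a \<in> carrier A" "P1 (P2 X) = L (tp R A a)" "u \<in> W10" "F1 (P2 X) = L u"
      "v \<in> V01" "P1 (F2 X) = Rt v" "F1 (F2 X) \<in> jj_image R A M" unfolding Q_def by blast
    from add(4) obtain b u' v' where Y1: "b \<in> carrier A" "P1 (P2 Y) = L (tp R A b)" "u' \<in> W10" "F1 (P2 Y) = L u'"
      "v' \<in> V01" "P1 (F2 Y) = Rt v'" "F1 (F2 Y) \<in> jj_image R A M" unfolding Q_def by blast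
    have e1: "P1 (P2 (X \<oplus>\<^bsub>EE\<^esub> Y)) = L (tp R A (a \<oplus>\<^bsub>A\<^esub> b))"
      using add X1 Y1 by (simp add: alg_hom_add[OF P2h] alg_hom_add[OF P1h] P2c alg_hom_add[OF tp_hom[OF R A]]
          alg_hom_add[OF L_hom] tp_closed)
    have e2: "F1 (P2 (X \<oplus>\<^bsub>EE\<^esub> Y)) = L (u \<oplus>\<^bsub>TA\<^esub> u')"
      using add X1 Y1 by (simp add: alg_hom_add[OF P2h] rderiv_add[OF F1d] P2c alg_hom_add[OF L_hom] W10_closed)
    have e3: "P1 (F2 (X \<oplus>\<^bsub>EE\<^esub> Y)) = Rt (v \<oplus>\<^bsub>SS\<^esub> v')"
      using add X1 Y1 by (simp add: rderiv_add[OF F2d] alg_hom_add[OF P1h] F2c alg_hom_add[OF Rt_hom] V01_closed)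
    have e4: "F1 (F2 (X \<oplus>\<^bsub>EE\<^esub> Y)) = F1 (F2 X) \<oplus>\<^bsub>EE\<^esub> F1 (F2 Y)"
      using add by (simp add: rderiv_add[OF F2d] rderiv_add[OF F1d] F2c)
    show ?case unfolding Q_def using X1 Y1
      by (simp only: e1 e2 e3 e4) (auto intro!: W10_add V01_add J_add)
  next
    case (neg X)
    from neg(2) obtain a u v where X1: "a \<in> carrier A" "P1 (P2 X) = L (tp R A a)" "u \<in> W10" "F1 (P2 X) = L u"
      "v \<in> V01" "P1 (F2 X) = Rt v" "F1 (F2 X) \<in> jj_image R A M" unfolding Q_def by blast
    have e1: "P1 (P2 (\<ominus>\<^bsub>EE\<^esub> X)) = L (tp R A (\<ominus>\<^bsub>A\<^esub> a))"
      using neg X1 by (simp add: alg_hom_neg[OF EE EE P2h] alg_hom_neg[OF EE EE P1h] P2c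
          alg_hom_neg[OF A TA tp_hom[OF R A]] alg_hom_neg[OF TA EE L_hom] tp_closed)
    have e2: "F1 (P2 (\<ominus>\<^bsub>EE\<^esub> X)) = L (\<ominus>\<^bsub>TA\<^esub> u)"
      using neg X1 by (simp add: alg_hom_neg[OF EE EE P2h] rderiv_neg[OF R EE EE F1d] P2c
          alg_hom_neg[OF TA EE L_hom] W10_closed)
    have e3: "P1 (F2 (\<ominus>\<^bsub>EE\<^esub> X)) = Rt (\<ominus>\<^bsub>SS\<^esub> v)"
      using neg X1 by (simp add: rderiv_neg[OF R EE EE F2d] alg_hom_neg[OF EE EE P1h] F2c
          alg_hom_neg[OF SS EE Rt_hom] V01_closed)
    have e4: "F1 (F2 (\<ominus>\<^bsub>EE\<^esub> X)) = \<ominus>\<^bsub>EE\<^esub> F1 (F2 X)"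
      using neg by (simp add: rderiv_neg[OF R EE EE F2d] rderiv_neg[OF R EE EE F1d] F2c)
    show ?case unfolding Q_def using X1
      by (simp only: e1 e2 e3 e4) (auto intro!: W10_neg V01_neg J_neg)
  next
    case (mult X Y)
    from mult(3) obtain a u v where X1: "a \<in> carrier A" "P1 (P2 X) = L (tp R A a)" "u \<in> W10" "F1 (P2 X) = L u"
      "v \<in> V01" "P1 (F2 X) = Rt v" "F1 (F2 X) \<in> jj_image R A M" unfolding Q_def by blast
    from mult(4) obtain b u' v' where Y1: "b \<in> carrier A" "P1 (P2 Y) = L (tp R A b)" "u' \<in> W10" "F1 (P2 Y) = L u'"
      "v' \<in> V01" "P1 (F2 Y) = Rt v'" "F1 (F2 Y) \<in> jj_image R A M" unfolding Q_def by blast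
    have c: "P2 X \<in> carrier EE" "P2 Y \<in> carrier EE" "F2 X \<in> carrier EE" "F2 Y \<in> carrier EE"
      using mult by (simp_all add: P2c F2c)
    have cu: "u \<in> carrier TA" "u' \<in> carrier TA" "v \<in> carrier SS" "v' \<in> carrier SS"
      using X1 Y1 by (simp_all add: W10_closed V01_closed)
    have e1: "P1 (P2 (X \<otimes>\<^bsub>EE\<^esub> Y)) = L (tp R A (a \<otimes>\<^bsub>A\<^esub> b))"
      using mult X1 Y1 c by (simp add: alg_hom_mult[OF P2h] alg_hom_mult[OF P1h] alg_hom_mult[OF tp_hom[OF R A]]
          alg_hom_mult[OF L_hom] tp_closed)
    have e2: "F1 (P2 (X \<otimes>\<^bsub>EE\<^esub> Y)) = L (tp R A a \<otimes>\<^bsub>TA\<^esub> u' \<oplus>\<^bsub>TA\<^esub> tp R A b \<otimes>\<^bsub>TA\<^esub> u)"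
      using mult X1 Y1 c cu by (simp add: alg_hom_mult[OF P2h] rderiv_mult[OF F1d] alg_hom_mult[OF L_hom]
          alg_hom_add[OF L_hom] tp_closed)
    have e3: "P1 (F2 (X \<otimes>\<^bsub>EE\<^esub> Y)) = Rt (sq R A M a \<otimes>\<^bsub>SS\<^esub> v' \<oplus>\<^bsub>SS\<^esub> sq R A M b \<otimes>\<^bsub>SS\<^esub> v)"
      using mult X1 Y1 c cu by (simp add: rderiv_mult[OF F2d] alg_hom_mult[OF P1h] alg_hom_add[OF P1h] P1c F2c
          alg_hom_mult[OF Rt_hom] alg_hom_add[OF Rt_hom] sq_closed L_Rt)
    have e4: "F1 (F2 (X \<otimes>\<^bsub>EE\<^esub> Y)) =
        (L (tp R A a) \<otimes>\<^bsub>EE\<^esub> F1 (F2 Y) \<oplus>\<^bsub>EE\<^esub> Rt v' \<otimes>\<^bsub>EE\<^esub> L u)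
        \<oplus>\<^bsub>EE\<^esub> (L (tp R A b) \<otimes>\<^bsub>EE\<^esub> F1 (F2 X) \<oplus>\<^bsub>EE\<^esub> Rt v \<otimes>\<^bsub>EE\<^esub> L u')"
      using mult X1 Y1 c by (simp add: rderiv_mult[OF F2d] rderiv_add[OF F1d] rderiv_mult[OF F1d])
    have j: "F1 (F2 (X \<otimes>\<^bsub>EE\<^esub> Y)) \<in> jj_image R A M"
      unfolding e4 by (intro J_add J_mult KK X1 Y1)
    show ?case unfolding Q_def using X1 Y1
      by (simp only: e1 e2 e3 j) (auto intro!: W10_add V01_add W10_mult V01_mult)
  qed
  have "F1 (F2 X) = X"
  proof -
    have "F1 X = X" using e1 th X by (simp add: F1_def)
    moreover have "F2 X = X" using e2 th X by (simp add: F2_def)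
    ultimately show ?thesis by simp
  qed
  then show ?thesis using QY[OF X] unfolding Q_def by simp
qed

end

theorem mainTheorem6:
  fixes R :: "'r ring" and A :: "('a, 'r) ralg" and M :: "('a, 'm) module"
  assumes "cring R" and "is_alg R A" and "module A M"
    and "horizontal_connection R A M H"
  shows "\<forall>m\<in>carrier M. H (td R (Sym R A M) (sj R A M m)) \<in> jj_image R A M"
proof -
  interpret hcs R A M using assms(1-3) by (rule hcs.intro)
  have Hh: "alg_hom R TS EE H"
    and H3: "\<forall>x\<in>carrier (Tan R TS). tm1 (theta R A M (Tmap R TS EE H x)) = H (lift R SS x)"
    and H4: "\<forall>x\<in>carrier (Tan R TS). tm2 (theta R A M (Tmap R TS EE H x))
               = H (Tmap R TS SS (lam R A M) (canflip R SS x))"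
    using assms(4) unfolding horizontal_connection_def by auto
  obtain l0 D2 where lam: "alg_hom R TS SS (lam R A M)"
     "\<forall>m\<in>carrier M. l0 (sj R A M m) = \<zero>\<^bsub>SS\<^esub> \<and> D2 (sj R A M m) = sj R A M m"
     "\<forall>v\<in>carrier SS. lam R A M (tp R SS v) = l0 v \<and> lam R A M (td R SS v) = D2 v"
    using lam_props by blast
  show ?thesis
  proof
    fix m assume m: "m \<in> carrier M"
    have sjm: "sj R A M m \<in> carrier SS" using m by (rule sj_closed)
    have dm: "td R SS (sj R A M m) \<in> carrier TS" using sjm by (rule td_closed)
    define x where "x = td R TS (td R SS (sj R A M m))"
    have x: "x \<in> carrier (Tan R TS)" unfolding x_def using dm by (rule td_closed)
    define X where "X = H (td R SS (sj R A M m))"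
    have X: "X \<in> carrier EE" unfolding X_def using dm by (rule alg_hom_closed[OF Hh])
    have TH: "Tmap R TS EE H x = td R EE X"
      unfolding x_def X_def using Tmap_props(3)[OF R TS EE Hh dm] .
    have e1: "tm1 (theta R A M (td R EE X)) = X"
    proof -
      have "tm1 (theta R A M (Tmap R TS EE H x)) = H (lift R SS x)" using H3 x by blast
      then show ?thesis using TH lift_props(5)[OF R SS sjm] by (simp add: x_def X_def)
    qed
    have lt: "lam R A M (td R SS (sj R A M m)) = sj R A M m" using lam m sjm by simp
    have cf: "canflip R SS x = x" unfolding x_def by (rule canflip_props(2)[OF R SS sjm])
    have tl: "Tmap R TS SS (lam R A M) x = td R SS (sj R A M m)"
      unfolding x_def using Tmap_props(3)[OF R TS SS lam(1) dm] lt by simp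
    have e2: "tm2 (theta R A M (td R EE X)) = X"
    proof -
      have "tm2 (theta R A M (Tmap R TS EE H x)) = H (Tmap R TS SS (lam R A M) (canflip R SS x))"
        using H4 x by blast
      then show ?thesis using TH cf tl by (simp add: X_def)
    qed
    show "H (td R (Sym R A M) (sj R A M m)) \<in> jj_image R A M"
      using main_inv[OF X e1 e2] by (simp add: X_def)
  qed
qed

end
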